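(* Let $K$ be a field, and let $R \in \mathfrak R_K$ be of countable type, of Loewy length $\sigma + 1$, and of top layer dimension $n$, where $0 < n < \omega$. Then there is a $K$-algebra isomorphism $R \cong B_{\sigma,n}$.
   Context: Socle sequence of a ring $R$ (as a right module over itself): $S_0 = 0$, $S_{\alpha+1}/S_\alpha = \mathrm{Soc}(R/S_\alpha)$, and $S_\alpha = \bigcup_{\beta<\alpha} S_\beta$ for limit $\alpha$. $R$ is semiartinian if $S_\tau = R$ for some ordinal $\tau$; the least such $\tau$ is the Loewy length, which for $R \neq 0$ has the form $\sigma+1$. The layers are $L_\alpha = S_{\alpha+1}/S_\alpha$ for $\alpha \le \sigma$. For a field $K$ and a cardinal $\lambda$, $K^{(\lambda)}$ denotes the direct sum of $\lambda$ copies of $K$ with componentwise operations, regarded as a $K$-algebra without unit. $\mathfrak R_K$ is the class of all commutative von Neumann regular semiartinian $K$-algebras $R$ (of Loewy length $\sigma+1$) such that for each $\alpha \le \sigma$ there are a cardinal $\lambda_\alpha>0$ and a $K$-linear isomorphism of $K$-algebras without unit $L_\alpha \cong K^{(\lambda_\alpha)}$. Here $\lambda_\sigma$ is finite and is called the top layer dimension of $R$. $R \in \mathfrak R_K$ is of countable type if $\sigma$ is countable and all $\lambda_\alpha$ ($\alpha\le\sigma$) are countable. For a field $K$, an infinite cardinal (or infinite index set) $\kappa$ and a sequence $\mathcal R = (R_\alpha \mid \alpha<\kappa)$ of $K$-algebras, let $P = \prod_{\alpha<\kappa} R_\alpha$, $I = \bigoplus_{\alpha<\kappa} R_\alpha \subseteq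 P$, and let $R(\kappa,K,\mathcal R)$ denote the $K$-subalgebra $I \oplus 1_P\cdot K$ of $P$. $\boxplus$ denotes the ring direct product. The $K$-algebras $B_{\alpha,n}$ ($\alpha$ an ordinal, $0<n<\omega$) are defined recursively: $B_{0,1} = K$; for $\alpha = \beta+1$, $B_{\alpha,1} = R(\aleph_0,K,\mathcal R)$ where $\mathcal R$ is the constant sequence $R_m = B_{\beta,1}$ ($m<\aleph_0$); for limit $\alpha$, $B_{\alpha,1} = R(\alpha,K,(B_{\beta,1}\mid \beta<\alpha))$; and for $1<n<\omega$, $B_{\alpha,n} = B_{\alpha,1}\boxplus\cdots\boxplus B_{\alpha,1}$ ($n$ copies). *)

theory Defs
  imports "HOL-Algebra.Ideal" "HOL-Algebra.AbelCoset" "HOL-Library.Countable_Set"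
begin

definition K_algebra :: "('a, 'b) ring_scheme \<Rightarrow> ('k::field \<Rightarrow> 'a \<Rightarrow> 'a) \<Rightarrow> bool" where
  "K_algebra R sm \<longleftrightarrow> cring R \<and>
     (\<forall>c. \<forall>x\<in>carrier R. sm c x \<in> carrier R) \<and>
     (\<forall>c. \<forall>x\<in>carrier R. \<forall>y\<in>carrier R. sm c (x \<oplus>\<^bsub>R\<^esub> y) = sm c x \<oplus>\<^bsub>R\<^esub> sm c y) \<and>
     (\<forall>c d. \<forall>x\<in>carrier R. sm (c + d) x = sm c x \<oplus>\<^bsub>R\<^esub> sm d x) \<and>
     (\<forall>c d. \<forall>x\<in>carrier R. sm (c * d) x = sm c (sm d x)) \<and>
     (\<forall>x\<in>carrier R. sm 1 x = x) \<and>
     (\<forall>c. \<forall>x\<in>carrier R. \<forall>y\<in>carrier R. sm c (x \<otimes>\<^bsub>R\<^esub> y) = sm c x \<otimes>\<^bsub>R\<^esub> y)"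

definition von_Neumann_regular :: "('a, 'b) ring_scheme \<Rightarrow> bool" where
  "von_Neumann_regular R \<longleftrightarrow>
     (\<forall>a\<in>carrier R. \<exists>x\<in>carrier R. a = a \<otimes>\<^bsub>R\<^esub> x \<otimes>\<^bsub>R\<^esub> a)"

section \<open>Socle sequence, indexed by a well-order standing for the ordinals\<close>

text \<open>soc_over R S is the preimage in R of Soc(R/S): the sum of S and of all ideals I
  such that I/S is a simple submodule of the module R/S, i.e. S is properly contained
  in I and there is no ideal strictly between S and I.\<close>

definition minimal_over :: "('a, 'b) ring_scheme \<Rightarrow> 'a set \<Rightarrow> 'a set \<Rightarrow> bool" where
  "minimal_over R S I \<longleftrightarrow> ideal I R \<and> S \<subset> I \<and>
     (\<forall>J. ideal J R \<longrightarrow> S \<subseteq> J \<longrightarrow> J \<subseteq> I \<longrightarrow> J = S \<or> J = I)"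

definition soc_over :: "('a, 'b) ring_scheme \<Rightarrow> 'a set \<Rightarrow> 'a set" where
  "soc_over R S = genideal R (S \<union> \<Union> {I. minimal_over R S I})"

definition rless :: "'i rel \<Rightarrow> 'i \<Rightarrow> 'i \<Rightarrow> bool" where
  "rless r a b \<longleftrightarrow> (a, b) \<in> r \<and> a \<noteq> b"

definition is_zero_pt :: "'i rel \<Rightarrow> 'i \<Rightarrow> bool" where
  "is_zero_pt r a \<longleftrightarrow> a \<in> Field r \<and> \<not> (\<exists>b. rless r b a)"

definition is_succ_of :: "'i rel \<Rightarrow> 'i \<Rightarrow> 'i \<Rightarrow> bool" where
  "is_succ_of r b a \<longleftrightarrow> rless r b a \<and> \<not> (\<exists>c. rless r b c \<and> rless r c a)"

definition is_limit_pt :: "'i rel \<Rightarrow> 'i \<Rightarrow> bool" where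
  "is_limit_pt r a \<longleftrightarrow> a \<in> Field r \<and> \<not> is_zero_pt r a \<and> \<not> (\<exists>b. is_succ_of r b a)"

definition socle_seq :: "('a, 'b) ring_scheme \<Rightarrow> 'i rel \<Rightarrow> ('i \<Rightarrow> 'a set) \<Rightarrow> bool" where
  "socle_seq R r S \<longleftrightarrow>
     (\<forall>a. is_zero_pt r a \<longrightarrow> S a = {\<zero>\<^bsub>R\<^esub>}) \<and>
     (\<forall>a b. is_succ_of r b a \<longrightarrow> S a = soc_over R (S b)) \<and>
     (\<forall>a. is_limit_pt r a \<longrightarrow> S a = \<Union> {S b | b. rless r b a})"

definition fin_supp :: "'l set \<Rightarrow> ('l \<Rightarrow> 'k::zero) set" where
  "fin_supp L = {f. finite {i. f i \<noteq> 0} \<and> (\<forall>i. i \<notin> L \<longrightarrow> f i = 0)}"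

text \<open>The layer T/S (T = S_{alpha+1}, S = S_alpha) is K-linearly isomorphic, as a K-algebra
  without unit, to K^(L) with componentwise operations.\<close>
definition layer_iso :: "('a, 'b) ring_scheme \<Rightarrow> ('k::field \<Rightarrow> 'a \<Rightarrow> 'a) \<Rightarrow> 'a set \<Rightarrow> 'a set
    \<Rightarrow> 'l set \<Rightarrow> bool" where
  "layer_iso R sm S T L \<longleftrightarrow> (\<exists>\<phi>.
     bij_betw \<phi> {S +>\<^bsub>R\<^esub> x | x. x \<in> T} (fin_supp L) \<and>
     (\<forall>x\<in>T. \<forall>y\<in>T. \<phi> (S +>\<^bsub>R\<^esub> (x \<oplus>\<^bsub>R\<^esub> y)) = (\<lambda>i. \<phi> (S +>\<^bsub>R\<^esub> x) i + \<phi> (S +>\<^bsub>R\<^esub> y) i)) \<and>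
     (\<forall>x\<in>T. \<forall>y\<in>T. \<phi> (S +>\<^bsub>R\<^esub> (x \<otimes>\<^bsub>R\<^esub> y)) = (\<lambda>i. \<phi> (S +>\<^bsub>R\<^esub> x) i * \<phi> (S +>\<^bsub>R\<^esub> y) i)) \<and>
     (\<forall>c. \<forall>x\<in>T. \<phi> (S +>\<^bsub>R\<^esub> (sm c x)) = (\<lambda>i. c * \<phi> (S +>\<^bsub>R\<^esub> x) i)))"

text \<open>Every B_{alpha,1} is realised concretely as an algebra of K-valued functions on a set of
  "leaves" (paths), with pointwise operations: B_{0,1} = K lives on the single path [],
  a product prod_{j} R_j lives on the disjoint union of the leaf sets (path j # p),
  where j = Inr m (m < aleph_0) for successor steps and j = Inl beta (beta < alpha) for
  limit steps. Functions are required to vanish outside the leaf set.\<close>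

inductive Bleaf :: "'i rel \<Rightarrow> 'i \<Rightarrow> ('i + nat) list \<Rightarrow> bool" for r where
  leaf_zero: "is_zero_pt r a \<Longrightarrow> Bleaf r a []"
| leaf_succ: "is_succ_of r b a \<Longrightarrow> Bleaf r b p \<Longrightarrow> Bleaf r a (Inr m # p)"
| leaf_lim: "is_limit_pt r a \<Longrightarrow> rless r b a \<Longrightarrow> Bleaf r b p \<Longrightarrow> Bleaf r a (Inl b # p)"

definition Bone :: "'i rel \<Rightarrow> 'i \<Rightarrow> ('i + nat) list \<Rightarrow> 'k::field" where
  "Bone r a p = (if Bleaf r a p then 1 else 0)"

text \<open>At a successor a = b+1 this is
  R(aleph_0, K, (B_{b,1})_m) = (direct sum) + K 1_P: all components lie in B_{b,1} and all
  but finitely many components equal c * 1 for a single scalar c; similarly at limits.\<close>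
inductive Bcar :: "'i rel \<Rightarrow> 'i \<Rightarrow> (('i + nat) list \<Rightarrow> 'k::field) \<Rightarrow> bool" for r where
  car_zero: "is_zero_pt r a \<Longrightarrow> (\<forall>p. p \<noteq> [] \<longrightarrow> x p = 0) \<Longrightarrow> Bcar r a x"
| car_succ: "is_succ_of r b a \<Longrightarrow>
     (\<forall>p. (\<not> (\<exists>m q. p = Inr m # q)) \<longrightarrow> x p = 0) \<Longrightarrow>
     (\<forall>m. Bcar r b (\<lambda>q. x (Inr m # q))) \<Longrightarrow>
     (\<exists>c. finite {m. (\<lambda>q. x (Inr m # q)) \<noteq> (\<lambda>q. c * Bone r b q)}) \<Longrightarrow> Bcar r a x"
| car_lim: "is_limit_pt r a \<Longrightarrow>
     (\<forall>p. (\<not> (\<exists>b q. rless r b a \<and> p = Inl b # q)) \<longrightarrow> x p = 0) \<Longrightarrow>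
     (\<forall>b. rless r b a \<longrightarrow> Bcar r b (\<lambda>q. x (Inl b # q))) \<Longrightarrow>
     (\<exists>c. finite {b. rless r b a \<and> (\<lambda>q. x (Inl b # q)) \<noteq> (\<lambda>q. c * Bone r b q)}) \<Longrightarrow> Bcar r a x"

text \<open>B_{a,n}: the ring direct product of n copies of B_{a,1}, realised on index pairs (k, p), k < n.\<close>
definition Bn_car :: "'i rel \<Rightarrow> 'i \<Rightarrow> nat \<Rightarrow> (nat \<times> ('i + nat) list \<Rightarrow> 'k::field) set" where
  "Bn_car r a n = {y. (\<forall>k<n. Bcar r a (\<lambda>p. y (k, p))) \<and> (\<forall>k p. n \<le> k \<longrightarrow> y (k, p) = 0)}"

definition Bn_one :: "'i rel \<Rightarrow> 'i \<Rightarrow> nat \<Rightarrow> nat \<times> ('i + nat) list \<Rightarrow> 'k::field" where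
  "Bn_one r a n = (\<lambda>(k, p). if k < n then Bone r a p else 0)"

definition iso_to_Bn :: "('a, 'b) ring_scheme \<Rightarrow> ('k::field \<Rightarrow> 'a \<Rightarrow> 'a) \<Rightarrow> 'i rel \<Rightarrow> 'i \<Rightarrow> nat
    \<Rightarrow> bool" where
  "iso_to_Bn R sm r a n \<longleftrightarrow> (\<exists>\<phi> :: 'a \<Rightarrow> nat \<times> ('i + nat) list \<Rightarrow> 'k.
     bij_betw \<phi> (carrier R) (Bn_car r a n) \<and>
     (\<forall>x\<in>carrier R. \<forall>y\<in>carrier R. \<phi> (x \<oplus>\<^bsub>R\<^esub> y) = (\<lambda>i. \<phi> x i + \<phi> y i)) \<and>
     (\<forall>x\<in>carrier R. \<forall>y\<in>carrier R. \<phi> (x \<otimes>\<^bsub>R\<^esub> y) = (\<lambda>i. \<phi> x i * \<phi> y i)) \<and>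
     (\<forall>c. \<forall>x\<in>carrier R. \<phi> (sm c x) = (\<lambda>i. c * \<phi> x i)) \<and>
     \<phi> \<one>\<^bsub>R\<^esub> = Bn_one r a n)"

end

theory Submission
  imports Defs
begin


lemma (in ring) idealI2:
  assumes "I \<subseteq> carrier R" "\<zero> \<in> I" "\<And>x y. x\<in>I \<Longrightarrow> y\<in>I \<Longrightarrow> x \<oplus> y \<in> I"
    "\<And>x. x \<in> I \<Longrightarrow> \<ominus> x \<in> I" "\<And>x y. x \<in> I \<Longrightarrow> y \<in> carrier R \<Longrightarrow> x \<otimes> y \<in> I"
    "\<And>x y. x \<in> I \<Longrightarrow> y \<in> carrier R \<Longrightarrow> y \<otimes> x \<in> I"
  shows "ideal I R"
proof (rule idealI)
  show "ring R" by (rule ring_axioms)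
  show "subgroup I (add_monoid R)"
  proof (rule subgroup.intro)
    show "I \<subseteq> carrier (add_monoid R)" using assms(1) by simp
    show "\<And>x y. x \<in> I \<Longrightarrow> y \<in> I \<Longrightarrow> x \<otimes>\<^bsub>add_monoid R\<^esub> y \<in> I" using assms(3) by simp
    show "\<one>\<^bsub>add_monoid R\<^esub> \<in> I" using assms(2) by simp
    show "\<And>x. x \<in> I \<Longrightarrow> inv\<^bsub>add_monoid R\<^esub> x \<in> I" using assms(4) by (simp add: a_inv_def)
  qed
qed (use assms in auto)

locale SA = cring R for R (structure) +
  fixes sm :: "'k::field \<Rightarrow> 'a \<Rightarrow> 'a" and r :: "'i rel" and S :: "'i \<Rightarrow> 'a set" and \<sigma> :: 'i
  assumes alg: "K_algebra R sm" and vnr: "von_Neumann_regular R" and wo: "Well_order r"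
   and top: "\<sigma> \<in> Field r" "\<forall>a\<in>Field r. (a,\<sigma>) \<in> r" and soc: "socle_seq R r S"
   and topsoc: "soc_over R (S \<sigma>) = carrier R"
   and cnt: "countable (Field r)"
   and layers: "\<forall>a\<in>Field r. \<exists>L::nat set. L \<noteq> {} \<and> layer_iso R sm (S a) (soc_over R (S a)) L"
begin

abbreviation lt where "lt a b \<equiv> rless r a b"
abbreviation T where "T a \<equiv> soc_over R (S a)"

interpretation W: wo_rel r using wo by (simp add: wo_rel_def)

lemma lt_Field: "lt a b \<Longrightarrow> a \<in> Field r \<and> b \<in> Field r"
  by (auto simp: rless_def Field_def)

lemma lt_trans: "lt a b \<Longrightarrow> lt b c \<Longrightarrow> lt a c"
  unfolding rless_def using W.TRANS W.ANTISYM by (metis antisymD transD)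

lemma lt_asym: "lt a b \<Longrightarrow> \<not> lt b a"
  unfolding rless_def using W.ANTISYM by (metis antisymD)

lemma lt_irrefl: "\<not> lt a a"
  unfolding rless_def by simp

lemma lt_total: "a \<in> Field r \<Longrightarrow> b \<in> Field r \<Longrightarrow> lt a b \<or> a = b \<or> lt b a"
  unfolding rless_def using W.TOTALS by blast

lemma lt_induct: "(\<And>a. (\<And>b. lt b a \<Longrightarrow> P b) \<Longrightarrow> P a) \<Longrightarrow> P a"
  using W.well_order_induct[of P a] unfolding rless_def by blast

lemma le_sigma: "a \<in> Field r \<Longrightarrow> a = \<sigma> \<or> lt a \<sigma>"
  using top unfolding rless_def by blast

lemma not_lt_sigma: "\<not> lt \<sigma> a"
  using top lt_Field lt_asym le_sigma by blast

lemma zero_not_lt: "is_zero_pt r a \<Longrightarrow> \<not> lt b a"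
  by (simp add: is_zero_pt_def)

lemma succ_lt: "is_succ_of r b a \<Longrightarrow> lt b a"
  by (simp add: is_succ_of_def)

lemma succ_below: "is_succ_of r b a \<Longrightarrow> lt c a \<Longrightarrow> c = b \<or> lt c b"
  unfolding is_succ_of_def using lt_total lt_Field by blast

lemma succ_unique: assumes "is_succ_of r b a" "is_succ_of r b' a" shows "b = b'"
proof -
  have "b' = b \<or> lt b' b" using succ_below[OF assms(1) succ_lt[OF assms(2)]] .
  moreover have "b = b' \<or> lt b b'" using succ_below[OF assms(2) succ_lt[OF assms(1)]] .
  ultimately show ?thesis using lt_asym by blast
qed

lemma kinds: "a \<in> Field r \<Longrightarrow> is_zero_pt r a \<or> (\<exists>b. is_succ_of r b a) \<or> is_limit_pt r a"
  unfolding is_limit_pt_def by blast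

lemma zero_not_succ: "is_zero_pt r a \<Longrightarrow> \<not> is_succ_of r b a"
  using zero_not_lt succ_lt by blast

lemma limit_not_zero: "is_limit_pt r a \<Longrightarrow> \<not> is_zero_pt r a"
  by (simp add: is_limit_pt_def)

lemma limit_not_succ: "is_limit_pt r a \<Longrightarrow> \<not> is_succ_of r b a"
  by (simp add: is_limit_pt_def)

lemma limit_between: assumes "is_limit_pt r a" "lt b a" shows "\<exists>c. lt b c \<and> lt c a"
proof -
  let ?B = "{c \<in> Field r. lt b c}"
  have aB: "a \<in> ?B" using assms lt_Field by auto
  have sub: "?B \<subseteq> Field r" by auto
  define c where "c = W.minim ?B"
  have cB: "c \<in> ?B" unfolding c_def using W.minim_in[OF sub] aB by blast
  have ca: "(c, a) \<in> r" unfolding c_def using W.minim_least[OF sub aB] .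
  have "c \<noteq> a"
  proof
    assume "c = a"
    hence "is_succ_of r b a"
      unfolding is_succ_of_def using assms(2)
      by (metis (mono_tags, lifting) W.minim_least c_def lt_Field lt_asym mem_Collect_eq rless_def sub)
    thus False using assms(1) limit_not_succ by blast
  qed
  thus ?thesis using cB ca unfolding rless_def by blast
qed

lemma limit_has_below: "is_limit_pt r a \<Longrightarrow> \<exists>b. lt b a"
  unfolding is_limit_pt_def is_zero_pt_def by blast

lemma S_zero: "is_zero_pt r a \<Longrightarrow> S a = {\<zero>}"
  using soc unfolding socle_seq_def by blast
lemma S_succ: "is_succ_of r b a \<Longrightarrow> S a = T b"
  using soc unfolding socle_seq_def by blast
lemma S_limit: "is_limit_pt r a \<Longrightarrow> S a = \<Union> {S b | b. lt b a}"
  using soc unfolding socle_seq_def by blast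

lemma T_ideal_basic: assumes "ideal I R" shows "ideal (soc_over R I) R" "I \<subseteq> soc_over R I"
proof -
  have sub: "I \<union> \<Union> {J. minimal_over R I J} \<subseteq> carrier R"
    using assms by (auto simp: minimal_over_def dest: ideal.Icarr)
  show "ideal (soc_over R I) R" unfolding soc_over_def by (rule genideal_ideal[OF sub])
  show "I \<subseteq> soc_over R I" unfolding soc_over_def using genideal_self[OF sub] by blast
qed

lemma minimal_sub_T: assumes "ideal I R" "minimal_over R I J" shows "J \<subseteq> soc_over R I"
proof -
  have sub: "I \<union> \<Union> {J. minimal_over R I J} \<subseteq> carrier R"
    using assms by (auto simp: minimal_over_def dest: ideal.Icarr)
  show ?thesis unfolding soc_over_def using genideal_self[OF sub] assms(2) by blast
qed

lemma S_props: "a \<in> Field r \<longrightarrow> ideal (S a) R \<and> (\<forall>b. lt b a \<longrightarrow> T b \<subseteq> S a)"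
proof (induction a rule: lt_induct)
  case (1 a)
  show ?case
  proof
    assume aF: "a \<in> Field r"
    consider "is_zero_pt r a" | b where "is_succ_of r b a" | "is_limit_pt r a"
      using kinds[OF aF] by blast
    then show "ideal (S a) R \<and> (\<forall>b. lt b a \<longrightarrow> T b \<subseteq> S a)"
    proof cases
      case 1
      then show ?thesis using S_zero[OF 1] zeroideal zero_not_lt[OF 1] by simp
    next
      case (2 b)
      have lb: "lt b a" using 2 succ_lt by blast
      have ib: "ideal (S b) R" and IH: "\<forall>c. lt c b \<longrightarrow> T c \<subseteq> S b"
        using "1.IH"[OF lb] lt_Field[OF lb] by auto
      have "ideal (S a) R" using S_succ[OF 2] T_ideal_basic[OF ib] by simp
      moreover have "T c \<subseteq> S a" if "lt c a" for c
      proof -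
        from succ_below[OF 2 that] have "c = b \<or> lt c b" .
        moreover have "T b = S a" using S_succ[OF 2] by simp
        moreover have "T c \<subseteq> S b" if "lt c b" using IH that by blast
        ultimately show ?thesis using T_ideal_basic(2)[OF ib] by blast
      qed
      ultimately show ?thesis by blast
    next
      case 3
      have IH: "\<And>b. lt b a \<Longrightarrow> ideal (S b) R \<and> (\<forall>c. lt c b \<longrightarrow> T c \<subseteq> S b)"
      proof -
        fix b assume "lt b a"
        thus "ideal (S b) R \<and> (\<forall>c. lt c b \<longrightarrow> T c \<subseteq> S b)" using "1.IH"[of b] lt_Field[of b a] by simp
      qed
      have mono: "S b \<subseteq> S c" if "lt b c" "lt c a" for b c
      proof -
        have "ideal (S b) R" using IH[OF lt_trans[OF that]] by blast
        hence "S b \<subseteq> T b" using T_ideal_basic(2) by blast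
        moreover have "T b \<subseteq> S c" using IH[OF that(2)] that(1) by blast
        ultimately show ?thesis by blast
      qed
      have Sa: "S a = \<Union> {S b | b. lt b a}" using S_limit[OF 3] .
      obtain b0 where b0: "lt b0 a" using limit_has_below[OF 3] by blast
      have two: "\<exists>c. lt c a \<and> x \<in> S c \<and> y \<in> S c" if xa: "x \<in> S a" and ya: "y \<in> S a" for x y
      proof -
        obtain b where b: "lt b a" "x \<in> S b" using xa unfolding Sa by blast
        obtain c where c: "lt c a" "y \<in> S c" using ya unfolding Sa by blast
        have "b \<in> Field r" "c \<in> Field r" using b c lt_Field by auto
        then consider "lt b c" | "b = c" | "lt c b" using lt_total by blast
        thus ?thesis
        proof cases
          case 1 thus ?thesis using mono[OF 1 c(1)] b c by blast
        next
          case 2 thus ?thesis using b c by blast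
        next
          case 3 thus ?thesis using mono[OF 3 b(1)] b c by blast
        qed
      qed
      have inS: "x \<in> S a" if "lt b a" "x \<in> S b" for x b
        using that unfolding Sa by blast
      have ideal_b: "ideal (S b) R" if "lt b a" for b using IH[OF that] by blast
      have "ideal (S a) R"
      proof (rule idealI2)
        show "S a \<subseteq> carrier R"
        proof
          fix x assume xa: "x \<in> S a"
          obtain c where c: "lt c a" "x \<in> S c" using xa unfolding Sa by blast
          show "x \<in> carrier R" using ideal.Icarr[OF ideal_b[OF c(1)] c(2)] .
        qed
        show "\<zero> \<in> S a" using inS[OF b0] additive_subgroup.zero_closed[OF ideal.axioms(1)[OF ideal_b[OF b0]]] by blast
        show "x \<oplus> y \<in> S a" if xa: "x \<in> S a" and ya: "y \<in> S a" for x y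
        proof -
          obtain c where c: "lt c a" "x \<in> S c" "y \<in> S c" using two[OF xa ya] by blast
          show ?thesis using inS[OF c(1)] additive_subgroup.a_closed[OF ideal.axioms(1)[OF ideal_b[OF c(1)]] c(2,3)] by blast
        qed
        show "\<ominus> x \<in> S a" if xa: "x \<in> S a" for x
        proof -
          obtain c where c: "lt c a" "x \<in> S c" using xa unfolding Sa by blast
          show ?thesis using inS[OF c(1)] additive_subgroup.a_inv_closed[OF ideal.axioms(1)[OF ideal_b[OF c(1)]] c(2)] by blast
        qed
        show "x \<otimes> y \<in> S a" if xa: "x \<in> S a" and yc: "y \<in> carrier R" for x y
        proof -
          obtain c where c: "lt c a" "x \<in> S c" using xa unfolding Sa by blast
          show ?thesis using inS[OF c(1)] ideal.I_r_closed[OF ideal_b[OF c(1)] c(2) yc] by blast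
        qed
        show "y \<otimes> x \<in> S a" if xa: "x \<in> S a" and yc: "y \<in> carrier R" for x y
        proof -
          obtain c where c: "lt c a" "x \<in> S c" using xa unfolding Sa by blast
          show ?thesis using inS[OF c(1)] ideal.I_l_closed[OF ideal_b[OF c(1)] c(2) yc] by blast
        qed
      qed
      moreover have "T b \<subseteq> S a" if bl: "lt b a" for b
      proof -
        obtain c where c: "lt b c" "lt c a" using limit_between[OF 3 bl] by blast
        have "T b \<subseteq> S c" using IH[OF c(2)] c(1) by blast
        thus ?thesis using inS[OF c(2)] by blast
      qed
      ultimately show ?thesis by blast
    qed
  qed
qed

lemma S_ideal: "a \<in> Field r \<Longrightarrow> ideal (S a) R"
  using S_props by simp
lemma T_ideal: "a \<in> Field r \<Longrightarrow> ideal (T a) R"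
  by (rule T_ideal_basic(1)[OF S_ideal])
lemma S_sub_T: "a \<in> Field r \<Longrightarrow> S a \<subseteq> T a"
  by (rule T_ideal_basic(2)[OF S_ideal])
lemma T_sub_S: "lt b a \<Longrightarrow> T b \<subseteq> S a"
  using S_props lt_Field by simp
lemma S_mono: "lt b a \<Longrightarrow> S b \<subseteq> S a"
  using T_sub_S[of b a] S_sub_T[of b] lt_Field[of b a] by simp
lemma S_carr: "a \<in> Field r \<Longrightarrow> S a \<subseteq> carrier R"
  using ideal.Icarr[OF S_ideal] by auto
lemma T_carr: "a \<in> Field r \<Longrightarrow> T a \<subseteq> carrier R"
  using ideal.Icarr[OF T_ideal] by auto

lemma S_below: assumes "a \<in> Field r" "x \<in> S a" shows "x = \<zero> \<or> (\<exists>b. lt b a \<and> x \<in> T b)"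
proof -
  consider "is_zero_pt r a" | b where "is_succ_of r b a" | "is_limit_pt r a"
    using kinds[OF assms(1)] by blast
  thus ?thesis
  proof cases
    case 1 thus ?thesis using S_zero assms by auto
  next
    case (2 b) thus ?thesis using S_succ assms succ_lt by blast
  next
    case 3
    then obtain b where "lt b a" "x \<in> S b" using S_limit assms by auto
    thus ?thesis using S_sub_T[of b] lt_Field[of b a] by auto
  qed
qed

end


lemma (in ring) coset_eq_iff:
  assumes "ideal I R" "x \<in> carrier R" "y \<in> carrier R"
  shows "(I +> x = I +> y) \<longleftrightarrow> x \<ominus> y \<in> I"
proof -
  interpret I: ideal I R by (rule assms(1))
  show ?thesis
  proof
    assume "I +> x = I +> y"
    moreover have "x \<in> I +> x" using I.a_rcos_self[OF assms(2)] .
    ultimately have "x \<in> I +> y" by simp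
    thus "x \<ominus> y \<in> I" using I.a_rcos_module_minus[OF ring_axioms assms(3) assms(2)] by simp
  next
    assume "x \<ominus> y \<in> I"
    hence "x \<in> I +> y" using I.a_rcos_module_minus[OF ring_axioms assms(3) assms(2)] by simp
    thus "I +> x = I +> y" using I.a_repr_independence'[of x y] assms(3) by simp
  qed
qed

context SA begin

definition lay_ok :: "'i \<Rightarrow> nat set \<Rightarrow> bool" where
  "lay_ok a L \<longleftrightarrow> L \<noteq> {} \<and> layer_iso R sm (S a) (T a) L"

definition Lay :: "'i \<Rightarrow> nat set" where
  "Lay a = (SOME L. lay_ok a L)"

definition liso :: "'i \<Rightarrow> ('a set \<Rightarrow> nat \<Rightarrow> 'k) \<Rightarrow> bool" where
  "liso a \<phi> \<longleftrightarrow> bij_betw \<phi> {S a +> x | x. x \<in> T a} (fin_supp (Lay a)) \<and>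
     (\<forall>x\<in>T a. \<forall>y\<in>T a. \<phi> (S a +> (x \<oplus> y)) = (\<lambda>i. \<phi> (S a +> x) i + \<phi> (S a +> y) i)) \<and>
     (\<forall>x\<in>T a. \<forall>y\<in>T a. \<phi> (S a +> (x \<otimes> y)) = (\<lambda>i. \<phi> (S a +> x) i * \<phi> (S a +> y) i)) \<and>
     (\<forall>c. \<forall>x\<in>T a. \<phi> (S a +> (sm c x)) = (\<lambda>i. c * \<phi> (S a +> x) i))"

definition phi :: "'i \<Rightarrow> 'a set \<Rightarrow> nat \<Rightarrow> 'k" where
  "phi a = (SOME \<phi>. liso a \<phi>)"

definition Phi :: "'i \<Rightarrow> 'a \<Rightarrow> nat \<Rightarrow> 'k" where
  "Phi a x = phi a (S a +> x)"

lemma Lay_ok: assumes "a \<in> Field r" shows "lay_ok a (Lay a)"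
proof -
  have "\<exists>L. lay_ok a L" using layers assms unfolding lay_ok_def by blast
  thus ?thesis unfolding Lay_def by (rule someI_ex)
qed

lemma Lay_ne: "a \<in> Field r \<Longrightarrow> Lay a \<noteq> {}"
  using Lay_ok unfolding lay_ok_def by blast

lemma phi_liso: assumes "a \<in> Field r" shows "liso a (phi a)"
proof -
  have "layer_iso R sm (S a) (T a) (Lay a)" using Lay_ok[OF assms] unfolding lay_ok_def by blast
  hence ex: "\<exists>\<phi>. liso a \<phi>" unfolding layer_iso_def liso_def by blast
  show ?thesis unfolding phi_def by (rule someI_ex[OF ex])
qed

lemmas phi_props = phi_liso[unfolded liso_def]

lemma Phi_add: "a \<in> Field r \<Longrightarrow> x \<in> T a \<Longrightarrow> y \<in> T a \<Longrightarrow> Phi a (x \<oplus> y) = (\<lambda>i. Phi a x i + Phi a y i)"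
  using phi_props unfolding Phi_def by blast
lemma Phi_mult: "a \<in> Field r \<Longrightarrow> x \<in> T a \<Longrightarrow> y \<in> T a \<Longrightarrow> Phi a (x \<otimes> y) = (\<lambda>i. Phi a x i * Phi a y i)"
  using phi_props unfolding Phi_def by blast
lemma Phi_sm: "a \<in> Field r \<Longrightarrow> x \<in> T a \<Longrightarrow> Phi a (sm c x) = (\<lambda>i. c * Phi a x i)"
  using phi_props unfolding Phi_def by blast
lemma Phi_fs: assumes "a \<in> Field r" "x \<in> T a" shows "Phi a x \<in> fin_supp (Lay a)"
proof -
  have "bij_betw (phi a) {S a +> x | x. x \<in> T a} (fin_supp (Lay a))" using phi_props[OF assms(1)] by blast
  thus ?thesis unfolding Phi_def bij_betw_def using assms(2) by blast
qed
lemma Phi_surj: assumes "a \<in> Field r" "z \<in> fin_supp (Lay a)" shows "\<exists>x\<in>T a. Phi a x = z"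
proof -
  have "bij_betw (phi a) {S a +> x | x. x \<in> T a} (fin_supp (Lay a))" using phi_props[OF assms(1)] by blast
  hence "z \<in> phi a ` {S a +> x | x. x \<in> T a}" using assms(2) unfolding bij_betw_def by blast
  thus ?thesis unfolding Phi_def by blast
qed
lemma Phi_eq: assumes "a \<in> Field r" "x \<in> T a" "y \<in> T a" shows "Phi a x = Phi a y \<longleftrightarrow> x \<ominus> y \<in> S a"
proof -
  have "inj_on (phi a) {S a +> x | x. x \<in> T a}" using phi_props[OF assms(1)] unfolding bij_betw_def by blast
  moreover have "S a +> x \<in> {S a +> x | x. x \<in> T a}" using assms(2) by blast
  moreover have "S a +> y \<in> {S a +> x | x. x \<in> T a}" using assms(3) by blast
  ultimately have "Phi a x = Phi a y \<longleftrightarrow> S a +> x = S a +> y" unfolding Phi_def by (rule inj_on_eq_iff)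
  also have "\<dots> \<longleftrightarrow> x \<ominus> y \<in> S a"
    using coset_eq_iff[OF S_ideal[OF assms(1)] subsetD[OF T_carr[OF assms(1)] assms(2)] subsetD[OF T_carr[OF assms(1)] assms(3)]] .
  finally show ?thesis .
qed

lemma T_carrI: "a \<in> Field r \<Longrightarrow> x \<in> T a \<Longrightarrow> x \<in> carrier R"
  using T_carr by blast
lemma S_carrI: "a \<in> Field r \<Longrightarrow> x \<in> S a \<Longrightarrow> x \<in> carrier R"
  using S_carr by blast
lemma T_zero: "a \<in> Field r \<Longrightarrow> \<zero> \<in> T a"
  by (rule additive_subgroup.zero_closed[OF ideal.axioms(1)[OF T_ideal]])
lemma T_add: "a \<in> Field r \<Longrightarrow> x \<in> T a \<Longrightarrow> y \<in> T a \<Longrightarrow> x \<oplus> y \<in> T a"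
  by (rule additive_subgroup.a_closed[OF ideal.axioms(1)[OF T_ideal]])
lemma T_neg: "a \<in> Field r \<Longrightarrow> x \<in> T a \<Longrightarrow> \<ominus> x \<in> T a"
  by (rule additive_subgroup.a_inv_closed[OF ideal.axioms(1)[OF T_ideal]])
lemma T_minus: "a \<in> Field r \<Longrightarrow> x \<in> T a \<Longrightarrow> y \<in> T a \<Longrightarrow> x \<ominus> y \<in> T a"
  unfolding a_minus_def by (intro T_add T_neg)
lemma T_multr: "a \<in> Field r \<Longrightarrow> x \<in> T a \<Longrightarrow> y \<in> carrier R \<Longrightarrow> x \<otimes> y \<in> T a"
  by (rule ideal.I_r_closed[OF T_ideal])
lemma T_multl: "a \<in> Field r \<Longrightarrow> x \<in> T a \<Longrightarrow> y \<in> carrier R \<Longrightarrow> y \<otimes> x \<in> T a"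
  by (rule ideal.I_l_closed[OF T_ideal])
lemma S_zero_in: "a \<in> Field r \<Longrightarrow> \<zero> \<in> S a"
  by (rule additive_subgroup.zero_closed[OF ideal.axioms(1)[OF S_ideal]])
lemma S_add: "a \<in> Field r \<Longrightarrow> x \<in> S a \<Longrightarrow> y \<in> S a \<Longrightarrow> x \<oplus> y \<in> S a"
  by (rule additive_subgroup.a_closed[OF ideal.axioms(1)[OF S_ideal]])
lemma S_neg: "a \<in> Field r \<Longrightarrow> x \<in> S a \<Longrightarrow> \<ominus> x \<in> S a"
  by (rule additive_subgroup.a_inv_closed[OF ideal.axioms(1)[OF S_ideal]])
lemma S_minus: "a \<in> Field r \<Longrightarrow> x \<in> S a \<Longrightarrow> y \<in> S a \<Longrightarrow> x \<ominus> y \<in> S a"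
  unfolding a_minus_def by (intro S_add S_neg)
lemma S_multr: "a \<in> Field r \<Longrightarrow> x \<in> S a \<Longrightarrow> y \<in> carrier R \<Longrightarrow> x \<otimes> y \<in> S a"
  by (rule ideal.I_r_closed[OF S_ideal])
lemma S_multl: "a \<in> Field r \<Longrightarrow> x \<in> S a \<Longrightarrow> y \<in> carrier R \<Longrightarrow> y \<otimes> x \<in> S a"
  by (rule ideal.I_l_closed[OF S_ideal])

lemma Phi_zero: assumes "a \<in> Field r" shows "Phi a \<zero> = (\<lambda>i. 0)"
proof -
  have "Phi a \<zero> = (\<lambda>i. Phi a \<zero> i + Phi a \<zero> i)"
    using Phi_add[OF assms T_zero[OF assms] T_zero[OF assms]] by simp
  hence h: "Phi a \<zero> i + 0 = Phi a \<zero> i + Phi a \<zero> i" for i by (metis add.right_neutral)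
  show ?thesis
  proof
    fix i show "Phi a \<zero> i = 0" using add_left_imp_eq[OF h[of i]] by simp
  qed
qed

lemma Phi_zero_iff: assumes "a \<in> Field r" "x \<in> T a" shows "Phi a x = (\<lambda>i. 0) \<longleftrightarrow> x \<in> S a"
proof -
  have "x \<ominus> \<zero> = x" using T_carrI[OF assms] by (simp add: a_minus_def)
  thus ?thesis using Phi_eq[OF assms T_zero[OF assms(1)]] Phi_zero[OF assms(1)] by simp
qed

lemma fin_supp_outside: "z \<in> fin_supp L \<Longrightarrow> i \<notin> L \<Longrightarrow> z i = 0"
  unfolding fin_supp_def by blast
lemma fin_supp_finite: "z \<in> fin_supp L \<Longrightarrow> finite {i. z i \<noteq> 0}"
  unfolding fin_supp_def by blast

definition km :: "'k \<Rightarrow> 'a" where "km c = sm c \<one>"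

lemma alg_props:
  "\<And>c x. x\<in>carrier R \<Longrightarrow> sm c x \<in> carrier R"
  "\<And>c x y. x\<in>carrier R \<Longrightarrow> y\<in>carrier R \<Longrightarrow> sm c (x \<oplus> y) = sm c x \<oplus> sm c y"
  "\<And>c d x. x\<in>carrier R \<Longrightarrow> sm (c + d) x = sm c x \<oplus> sm d x"
  "\<And>c d x. x\<in>carrier R \<Longrightarrow> sm (c * d) x = sm c (sm d x)"
  "\<And>x. x\<in>carrier R \<Longrightarrow> sm 1 x = x"
  "\<And>c x y. x\<in>carrier R \<Longrightarrow> y\<in>carrier R \<Longrightarrow> sm c (x \<otimes> y) = sm c x \<otimes> y"
  using alg unfolding K_algebra_def by blast+

lemma km_closed[simp]: "km c \<in> carrier R"
  unfolding km_def using alg_props(1) by simp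

lemma sm_eq: "x \<in> carrier R \<Longrightarrow> sm c x = km c \<otimes> x"
  unfolding km_def using alg_props(6)[of \<one> x c] by simp

lemma km_add: "km (c + d) = km c \<oplus> km d"
  unfolding km_def using alg_props(3) by simp
lemma km_mult: "km (c * d) = km c \<otimes> km d"
  unfolding km_def using alg_props(4)[of \<one> c d] sm_eq[of "sm d \<one>" c] alg_props(1)
  by (simp add: km_def)
lemma km_one[simp]: "km 1 = \<one>"
  unfolding km_def using alg_props(5) by simp
lemma km_zero[simp]: "km 0 = \<zero>"
proof -
  have "km 0 = km 0 \<oplus> km 0" using km_add[of 0 0] by simp
  hence "km 0 \<oplus> km 0 \<ominus> km 0 = km 0 \<ominus> km 0" by simp
  moreover have "km 0 \<oplus> km 0 \<ominus> km 0 = km 0" using km_closed by algebra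
  moreover have "km 0 \<ominus> km 0 = \<zero>" using km_closed by algebra
  ultimately show ?thesis by simp
qed
lemma km_inv: "c \<noteq> 0 \<Longrightarrow> km (inverse c) \<otimes> km c = \<one>"
  using km_mult[of "inverse c" c] by simp
lemma km_neg: "km (- c) = \<ominus> km c"
proof -
  have "km (- c) \<oplus> km c = \<zero>" using km_add[of "-c" c] by simp
  thus ?thesis by (simp add: minus_equality)
qed
lemma km_minus: "km (c - d) = km c \<ominus> km d"
  using km_add[of c "-d"] km_neg[of d] by (simp add: a_minus_def)

lemma Phi_km: assumes "a \<in> Field r" "x \<in> T a" shows "Phi a (km c \<otimes> x) = (\<lambda>i. c * Phi a x i)"
  using Phi_sm[OF assms, of c] sm_eq[OF T_carrI[OF assms], of c] by simp

end


context SA begin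

definition idem :: "'a \<Rightarrow> bool" where "idem e \<longleftrightarrow> e \<in> carrier R \<and> e \<otimes> e = e"

definition ind :: "nat \<Rightarrow> nat \<Rightarrow> 'k" where "ind i = (\<lambda>j. if j = i then 1 else 0)"

definition supp :: "(nat \<Rightarrow> 'k) \<Rightarrow> nat set" where "supp f = {i. f i \<noteq> 0}"

definition top1 :: "'i \<Rightarrow> 'a \<Rightarrow> bool" where
  "top1 a g \<longleftrightarrow> a \<in> Field r \<and> idem g \<and> g \<in> T a \<and> card (supp (Phi a g)) = 1"

lemma ind_fs: "i \<in> L \<Longrightarrow> ind i \<in> fin_supp L"
proof -
  assume "i \<in> L"
  moreover have "{j. ind i j \<noteq> 0} \<subseteq> {i}" unfolding ind_def by auto
  ultimately show ?thesis unfolding fin_supp_def ind_def by (auto intro: finite_subset)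
qed

lemma supp_ind: "supp (ind i) = {i}"
  unfolding supp_def ind_def by auto

lemma vnr': "a \<in> carrier R \<Longrightarrow> \<exists>x\<in>carrier R. a = a \<otimes> x \<otimes> a"
  using vnr unfolding von_Neumann_regular_def by blast

lemma Phi_minus: assumes "a \<in> Field r" "x \<in> T a" "y \<in> T a"
  shows "Phi a (x \<ominus> y) = (\<lambda>i. Phi a x i - Phi a y i)"
proof -
  have xc: "x \<in> carrier R" and yc: "y \<in> carrier R" using T_carrI assms by auto
  have "x \<ominus> y = x \<oplus> km (-1) \<otimes> y" using xc yc km_neg[of 1] by (simp add: a_minus_def l_minus)
  moreover have "km (-1) \<otimes> y \<in> T a" using T_multl[OF assms(1,3)] by simp
  ultimately have "Phi a (x \<ominus> y) = (\<lambda>i. Phi a x i + Phi a (km (-1) \<otimes> y) i)"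
    using Phi_add[OF assms(1,2)] by simp
  also have "\<dots> = (\<lambda>i. Phi a x i - Phi a y i)" using Phi_km[OF assms(1,3), of "-1"] by simp
  finally show ?thesis .
qed

lemma Phi_absorb: assumes "a \<in> Field r" "e \<in> T a" "idem e" "y \<in> carrier R"
  shows "Phi a (e \<otimes> y) = (\<lambda>i. Phi a e i * Phi a (e \<otimes> y) i)"
proof -
  have ec: "e \<in> carrier R" using assms(3) unfolding idem_def by blast
  have ee: "e \<otimes> e = e" using assms(3) unfolding idem_def by blast
  have "e \<otimes> (e \<otimes> y) = (e \<otimes> e) \<otimes> y" using ec assms(4) by (simp add: m_assoc)
  also have "\<dots> = e \<otimes> y" using ee by simp
  finally have eq: "e \<otimes> y = e \<otimes> (e \<otimes> y)" by simp
  have eyT: "e \<otimes> y \<in> T a" using T_multr[OF assms(1,2,4)] .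
  have "Phi a (e \<otimes> y) = Phi a (e \<otimes> (e \<otimes> y))" using eq by (rule arg_cong)
  also have "\<dots> = (\<lambda>i. Phi a e i * Phi a (e \<otimes> y) i)" by (rule Phi_mult[OF assms(1,2) eyT])
  finally show ?thesis .
qed

lemma supp_absorb: assumes "a \<in> Field r" "e \<in> T a" "idem e" "y \<in> carrier R"
  shows "supp (Phi a (e \<otimes> y)) \<subseteq> supp (Phi a e)"
proof
  fix i assume "i \<in> supp (Phi a (e \<otimes> y))"
  thus "i \<in> supp (Phi a e)" using fun_cong[OF Phi_absorb[OF assms], of i] unfolding supp_def by auto
qed

lemma supp_finite: "a \<in> Field r \<Longrightarrow> x \<in> T a \<Longrightarrow> finite (supp (Phi a x))"
  unfolding supp_def using Phi_fs fin_supp_finite by blast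

lemma supp_Lay: assumes "a \<in> Field r" "x \<in> T a" shows "supp (Phi a x) \<subseteq> Lay a"
proof
  fix i assume "i \<in> supp (Phi a x)"
  hence "Phi a x i \<noteq> 0" by (simp add: supp_def)
  thus "i \<in> Lay a" using fin_supp_outside[OF Phi_fs[OF assms]] by blast
qed

lemma supp_empty_iff: "a \<in> Field r \<Longrightarrow> x \<in> T a \<Longrightarrow> supp (Phi a x) = {} \<longleftrightarrow> x \<in> S a"
  using Phi_zero_iff[of a x] unfolding supp_def by (auto simp: fun_eq_iff)

lemma lift_idem: assumes aF: "a \<in> Field r" and uT: "u \<in> T a" and ui: "(\<lambda>i. Phi a u i * Phi a u i) = Phi a u"
  shows "\<exists>f w. idem f \<and> f \<in> T a \<and> Phi a f = Phi a u \<and> w \<in> carrier R \<and> f = u \<otimes> w"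
proof -
  have uc: "u \<in> carrier R" using T_carrI[OF aF uT] .
  obtain w where wc: "w \<in> carrier R" and uwu: "u = u \<otimes> w \<otimes> u" using vnr'[OF uc] by blast
  define f where "f = u \<otimes> w"
  have fc: "f \<in> carrier R" unfolding f_def using uc wc by simp
  have ff: "f \<otimes> f = f"
  proof -
    have "f \<otimes> f = (u \<otimes> w \<otimes> u) \<otimes> w" unfolding f_def using uc wc by algebra
    thus ?thesis using uwu unfolding f_def by simp
  qed
  have fT: "f \<in> T a" unfolding f_def using T_multr[OF aF uT wc] .
  have uuT: "u \<otimes> u \<in> T a" using T_multr[OF aF uT uc] .
  have "Phi a (u \<otimes> u) = Phi a u" using Phi_mult[OF aF uT uT] ui by simp
  hence d1: "u \<otimes> u \<ominus> u \<in> S a" using Phi_eq[OF aF uuT uT] by simp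
  have "(u \<otimes> u \<ominus> u) \<otimes> w \<in> S a" using S_multr[OF aF d1 wc] .
  moreover have "(u \<otimes> u \<ominus> u) \<otimes> w = u \<otimes> f \<ominus> f" unfolding f_def using uc wc by algebra
  ultimately have "u \<otimes> f \<ominus> f \<in> S a" by simp
  moreover have ufT: "u \<otimes> f \<in> T a" using T_multr[OF aF uT fc] .
  ultimately have "Phi a (u \<otimes> f) = Phi a f" using Phi_eq[OF aF ufT fT] by simp
  hence e1: "Phi a f = (\<lambda>i. Phi a u i * Phi a f i)" using Phi_mult[OF aF uT fT] by simp
  have "f \<otimes> u = u" using uwu unfolding f_def by simp
  hence e2: "Phi a u = (\<lambda>i. Phi a f i * Phi a u i)" using Phi_mult[OF aF fT uT] by simp
  have "Phi a f = Phi a u"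
  proof
    fix i show "Phi a f i = Phi a u i" using fun_cong[OF e1, of i] fun_cong[OF e2, of i] by (simp add: mult.commute)
  qed
  thus ?thesis using ff fc fT wc unfolding idem_def f_def by blast
qed

lemma Phi_idem_vals: assumes "a \<in> Field r" "e \<in> T a" "idem e" shows "Phi a e i = 0 \<or> Phi a e i = 1"
proof -
  have "Phi a e = (\<lambda>i. Phi a e i * Phi a e i)"
    using Phi_mult[OF assms(1,2,2)] assms(3) unfolding idem_def by simp
  hence "Phi a e i * Phi a e i = Phi a e i" by metis
  thus ?thesis by (metis mult_cancel_left2 mult_zero_right)
qed

definition uu :: "'i \<Rightarrow> nat \<Rightarrow> 'a" where
  "uu a i = (SOME f. idem f \<and> f \<in> T a \<and> Phi a f = ind i)"

lemma uu: assumes "a \<in> Field r" "i \<in> Lay a" shows "idem (uu a i) \<and> uu a i \<in> T a \<and> Phi a (uu a i) = ind i"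
proof -
  obtain u where uT: "u \<in> T a" and pu: "Phi a u = ind i" using Phi_surj[OF assms(1) ind_fs[OF assms(2)]] by blast
  have ui: "(\<lambda>j. Phi a u j * Phi a u j) = Phi a u" unfolding pu ind_def by auto
  obtain f w where f: "idem f \<and> f \<in> T a \<and> Phi a f = Phi a u \<and> w \<in> carrier R \<and> f = u \<otimes> w"
    using lift_idem[OF assms(1) uT ui] by (elim exE)
  have f1: "idem f" and f2: "f \<in> T a" and f3: "Phi a f = Phi a u" using f by blast+
  have "idem f \<and> f \<in> T a \<and> Phi a f = ind i" using f1 f2 f3 pu by simp
  hence "\<exists>f. idem f \<and> f \<in> T a \<and> Phi a f = ind i" by (rule exI)
  thus ?thesis unfolding uu_def by (rule someI_ex)
qed

lemma uu_carr: "a \<in> Field r \<Longrightarrow> i \<in> Lay a \<Longrightarrow> uu a i \<in> carrier R"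
  using uu unfolding idem_def by blast

lemma supp_induct:
  assumes aF: "a \<in> Field r" and xT: "x \<in> T a"
    and base: "\<And>x. x \<in> S a \<Longrightarrow> P x"
    and step: "\<And>x i c. x \<in> T a \<Longrightarrow> P x \<Longrightarrow> i \<in> Lay a \<Longrightarrow> P (x \<oplus> km c \<otimes> uu a i)"
  shows "P x"
proof -
  have "\<forall>x. x \<in> T a \<longrightarrow> card (supp (Phi a x)) = n \<longrightarrow> P x" for n
  proof (induction n)
    case 0
    show ?case
    proof (intro allI impI)
      fix x assume xT: "x \<in> T a" and c: "card (supp (Phi a x)) = 0"
      hence "supp (Phi a x) = {}" using supp_finite[OF aF xT] by simp
      thus "P x" using supp_empty_iff[OF aF xT] base by blast
    qed
  next
    case (Suc n)
    show ?case
    proof (intro allI impI)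
      fix x assume xT: "x \<in> T a" and c: "card (supp (Phi a x)) = Suc n"
      then obtain i where i: "i \<in> supp (Phi a x)" by fastforce
      have iL: "i \<in> Lay a" using supp_Lay[OF aF xT] i by blast
      define c where "c = Phi a x i"
      have uT: "uu a i \<in> T a" and pu: "Phi a (uu a i) = ind i" using uu[OF aF iL] by auto
      have kuT: "km c \<otimes> uu a i \<in> T a" using T_multl[OF aF uT] by simp
      define x' where "x' = x \<ominus> km c \<otimes> uu a i"
      have x'T: "x' \<in> T a" unfolding x'_def using T_minus[OF aF xT kuT] .
      have "Phi a x' = (\<lambda>j. Phi a x j - c * ind i j)"
        unfolding x'_def using Phi_minus[OF aF xT kuT] Phi_km[OF aF uT] pu by simp
      hence "supp (Phi a x') = supp (Phi a x) - {i}"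
        unfolding supp_def ind_def c_def by auto
      hence "card (supp (Phi a x')) = n" using c i supp_finite[OF aF xT] by simp
      hence "P x'" using Suc.IH x'T by blast
      hence "P (x' \<oplus> km c \<otimes> uu a i)" using step[OF x'T _ iL] by blast
      moreover have "x' \<oplus> km c \<otimes> uu a i = x"
        unfolding x'_def using T_carrI[OF aF xT] T_carrI[OF aF uT] km_closed[of c] by algebra
      ultimately show "P x" by simp
    qed
  qed
  thus ?thesis using xT by blast
qed

lemma WR: "wo_rel r" using wo by (simp add: wo_rel_def)

lemma idem_carr: "idem e \<Longrightarrow> e \<in> carrier R" unfolding idem_def by blast
lemma idem_sq: "idem e \<Longrightarrow> e \<otimes> e = e" unfolding idem_def by blast

lemma idem_absorb: assumes "idem f" "X \<in> carrier R" shows "f \<otimes> (f \<otimes> X) = f \<otimes> X"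
proof -
  have fc: "f \<in> carrier R" using idem_carr[OF assms(1)] .
  have "f \<otimes> (f \<otimes> X) = (f \<otimes> f) \<otimes> X" using fc assms(2) by (simp add: m_assoc)
  also have "\<dots> = f \<otimes> X" using idem_sq[OF assms(1)] by simp
  finally show ?thesis .
qed

lemma semiart: assumes aF: "a \<in> Field r" and xc: "x \<in> carrier R" and xS: "x \<notin> S a"
  shows "\<exists>t\<in>carrier R. x \<otimes> t \<in> T a \<and> x \<otimes> t \<notin> S a"
proof -
  define D where "D = {d \<in> Field r. \<exists>t\<in>T d. x \<otimes> t \<notin> S a}"
  have "\<one> \<in> T \<sigma>" using topsoc by simp
  moreover have "x \<otimes> \<one> \<notin> S a" using xc xS by simp
  ultimately have sD: "\<sigma> \<in> D" unfolding D_def using top(1) by blast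
  have Dsub: "D \<subseteq> Field r" unfolding D_def by blast
  define \<delta> where "\<delta> = wo_rel.minim r D"
  have dD: "\<delta> \<in> D" unfolding \<delta>_def using wo_rel.minim_in[OF WR Dsub] sD by blast
  hence dF: "\<delta> \<in> Field r" unfolding D_def by blast
  have low: "x \<otimes> t \<in> S a" if bd: "lt b \<delta>" and tT: "t \<in> T b" for b t
  proof (rule ccontr)
    assume "x \<otimes> t \<notin> S a"
    hence "b \<in> D" unfolding D_def using lt_Field[OF bd] tT by blast
    hence "(\<delta>, b) \<in> r" unfolding \<delta>_def by (rule wo_rel.minim_least[OF WR Dsub])
    thus False using bd lt_asym unfolding rless_def by blast
  qed
  have lowS: "x \<otimes> s \<in> S a" if sS: "s \<in> S \<delta>" for s
  proof -
    from S_below[OF dF sS] show ?thesis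
    proof
      assume "s = \<zero>" thus ?thesis using xc S_zero_in[OF aF] by simp
    next
      assume "\<exists>b. lt b \<delta> \<and> s \<in> T b" thus ?thesis using low by blast
    qed
  qed
  have "\<exists>i\<in>Lay \<delta>. x \<otimes> uu \<delta> i \<notin> S a"
  proof (rule ccontr)
    assume "\<not> ?thesis"
    hence allu: "\<And>i. i \<in> Lay \<delta> \<Longrightarrow> x \<otimes> uu \<delta> i \<in> S a" by blast
    have "x \<otimes> t \<in> S a" if tT: "t \<in> T \<delta>" for t
      using dF tT
    proof (rule supp_induct)
      show "x \<otimes> s \<in> S a" if "s \<in> S \<delta>" for s using lowS that .
      fix t i c assume tT': "t \<in> T \<delta>" and IH: "x \<otimes> t \<in> S a" and iL: "i \<in> Lay \<delta>"
      have uc: "uu \<delta> i \<in> carrier R" using uu_carr[OF dF iL] .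
      have tc: "t \<in> carrier R" using T_carrI[OF dF tT'] .
      have "x \<otimes> (t \<oplus> km c \<otimes> uu \<delta> i) = x \<otimes> t \<oplus> km c \<otimes> (x \<otimes> uu \<delta> i)"
        using xc uc tc km_closed[of c] by algebra
      moreover have "km c \<otimes> (x \<otimes> uu \<delta> i) \<in> S a" using S_multl[OF aF allu[OF iL] km_closed] .
      ultimately show "x \<otimes> (t \<oplus> km c \<otimes> uu \<delta> i) \<in> S a" using S_add[OF aF IH] by simp
    qed
    thus False using dD unfolding D_def by blast
  qed
  then obtain i where iL: "i \<in> Lay \<delta>" and yS: "x \<otimes> uu \<delta> i \<notin> S a" by blast
  define u where "u = uu \<delta> i"
  have ui: "idem u" and uT: "u \<in> T \<delta>" and pu: "Phi \<delta> u = ind i" using uu[OF dF iL] unfolding u_def by auto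
  have uc: "u \<in> carrier R" using idem_carr[OF ui] .
  define y where "y = x \<otimes> u"
  have yc: "y \<in> carrier R" unfolding y_def using xc uc by simp
  have yS': "y \<notin> S a" using yS unfolding y_def u_def .
  have key: "\<exists>c. y \<otimes> q \<ominus> km c \<otimes> y \<in> S a" if qc: "q \<in> carrier R" for q
  proof -
    define c where "c = Phi \<delta> (u \<otimes> q) i"
    have uqT: "u \<otimes> q \<in> T \<delta>" using T_multr[OF dF uT qc] .
    have kuT: "km c \<otimes> u \<in> T \<delta>" using T_multl[OF dF uT km_closed] .
    have "Phi \<delta> (u \<otimes> q) = (\<lambda>j. ind i j * Phi \<delta> (u \<otimes> q) j)" using Phi_absorb[OF dF uT ui qc] pu by simp
    also have "\<dots> = (\<lambda>j. c * ind i j)" unfolding c_def ind_def by auto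
    also have "\<dots> = Phi \<delta> (km c \<otimes> u)" using Phi_km[OF dF uT] pu by simp
    finally have "u \<otimes> q \<ominus> km c \<otimes> u \<in> S \<delta>" using Phi_eq[OF dF uqT kuT] by simp
    hence "x \<otimes> (u \<otimes> q \<ominus> km c \<otimes> u) \<in> S a" using lowS by blast
    moreover have "x \<otimes> (u \<otimes> q \<ominus> km c \<otimes> u) = y \<otimes> q \<ominus> km c \<otimes> y"
      unfolding y_def using xc uc qc km_closed[of c] by algebra
    ultimately show ?thesis by auto
  qed
  define I where "I = {z \<in> carrier R. \<exists>c. z \<ominus> km c \<otimes> y \<in> S a}"
  have SI: "S a \<subseteq> I"
  proof
    fix z assume zS: "z \<in> S a"
    have zc: "z \<in> carrier R" using S_carrI[OF aF zS] .
    have "z \<ominus> km 0 \<otimes> y = z" using zc yc by simp algebra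
    thus "z \<in> I" unfolding I_def using zS zc by (metis (mono_tags, lifting) mem_Collect_eq)
  qed
  have yI: "y \<in> I"
  proof -
    have "y \<ominus> km 1 \<otimes> y = \<zero>" using yc by simp algebra
    thus ?thesis unfolding I_def using yc S_zero_in[OF aF] by (metis (mono_tags, lifting) mem_Collect_eq)
  qed
  have Iideal: "ideal I R"
  proof (rule idealI2)
    show "I \<subseteq> carrier R" unfolding I_def by blast
    show "\<zero> \<in> I" using SI S_zero_in[OF aF] by blast
    show "z1 \<oplus> z2 \<in> I" if z1: "z1 \<in> I" and z2: "z2 \<in> I" for z1 z2
    proof -
      obtain c1 where c1: "z1 \<in> carrier R" "z1 \<ominus> km c1 \<otimes> y \<in> S a" using z1 unfolding I_def by blast
      obtain c2 where c2: "z2 \<in> carrier R" "z2 \<ominus> km c2 \<otimes> y \<in> S a" using z2 unfolding I_def by blast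
      have "(z1 \<oplus> z2) \<ominus> km (c1 + c2) \<otimes> y = (z1 \<ominus> km c1 \<otimes> y) \<oplus> (z2 \<ominus> km c2 \<otimes> y)"
        unfolding km_add using c1(1) c2(1) yc km_closed[of c1] km_closed[of c2] by algebra
      hence "(z1 \<oplus> z2) \<ominus> km (c1 + c2) \<otimes> y \<in> S a" using S_add[OF aF c1(2) c2(2)] by simp
      thus ?thesis unfolding I_def using c1(1) c2(1) by blast
    qed
    show "\<ominus> z \<in> I" if z: "z \<in> I" for z
    proof -
      obtain c where c: "z \<in> carrier R" "z \<ominus> km c \<otimes> y \<in> S a" using z unfolding I_def by blast
      have "\<ominus> z \<ominus> km (- c) \<otimes> y = \<ominus> (z \<ominus> km c \<otimes> y)"
        unfolding km_neg using c(1) yc km_closed[of c] by algebra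
      hence "\<ominus> z \<ominus> km (- c) \<otimes> y \<in> S a" using S_neg[OF aF c(2)] by simp
      thus ?thesis unfolding I_def using c(1) by blast
    qed
    show "z \<otimes> q \<in> I" if z: "z \<in> I" and qc: "q \<in> carrier R" for z q
    proof -
      obtain c where c: "z \<in> carrier R" "z \<ominus> km c \<otimes> y \<in> S a" using z unfolding I_def by blast
      obtain d where d: "y \<otimes> q \<ominus> km d \<otimes> y \<in> S a" using key[OF qc] by blast
      have "z \<otimes> q \<ominus> km (c * d) \<otimes> y = (z \<ominus> km c \<otimes> y) \<otimes> q \<oplus> km c \<otimes> (y \<otimes> q \<ominus> km d \<otimes> y)"
        unfolding km_mult using c(1) yc qc km_closed[of c] km_closed[of d] by algebra
      moreover have "(z \<ominus> km c \<otimes> y) \<otimes> q \<in> S a" using S_multr[OF aF c(2) qc] .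
      moreover have "km c \<otimes> (y \<otimes> q \<ominus> km d \<otimes> y) \<in> S a" using S_multl[OF aF d km_closed] .
      ultimately have "z \<otimes> q \<ominus> km (c * d) \<otimes> y \<in> S a" using S_add[OF aF] by simp
      thus ?thesis unfolding I_def using c(1) qc by blast
    qed
    show "q \<otimes> z \<in> I" if z: "z \<in> I" and qc: "q \<in> carrier R" for z q
    proof -
      obtain c where c: "z \<in> carrier R" "z \<ominus> km c \<otimes> y \<in> S a" using z unfolding I_def by blast
      obtain d where d: "y \<otimes> q \<ominus> km d \<otimes> y \<in> S a" using key[OF qc] by blast
      have "q \<otimes> z \<ominus> km (c * d) \<otimes> y = (z \<ominus> km c \<otimes> y) \<otimes> q \<oplus> km c \<otimes> (y \<otimes> q \<ominus> km d \<otimes> y)"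
        unfolding km_mult using c(1) yc qc km_closed[of c] km_closed[of d] by algebra
      moreover have "(z \<ominus> km c \<otimes> y) \<otimes> q \<in> S a" using S_multr[OF aF c(2) qc] .
      moreover have "km c \<otimes> (y \<otimes> q \<ominus> km d \<otimes> y) \<in> S a" using S_multl[OF aF d km_closed] .
      ultimately have "q \<otimes> z \<ominus> km (c * d) \<otimes> y \<in> S a" using S_add[OF aF] by simp
      thus ?thesis unfolding I_def using c(1) qc by blast
    qed
  qed
  have "minimal_over R (S a) I"
    unfolding minimal_over_def
  proof (intro conjI allI impI)
    show "ideal I R" by (rule Iideal)
    show "S a \<subset> I" using SI yI yS' by blast
    fix J assume J: "ideal J R" and SJ: "S a \<subseteq> J" and JI: "J \<subseteq> I"
    show "J = S a \<or> J = I"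
    proof (cases "J \<subseteq> S a")
      case True thus ?thesis using SJ by blast
    next
      case False
      then obtain z where zJ: "z \<in> J" and zS: "z \<notin> S a" by blast
      obtain c where zc: "z \<in> carrier R" and c: "z \<ominus> km c \<otimes> y \<in> S a" using JI zJ unfolding I_def by blast
      have c0: "c \<noteq> 0"
      proof
        assume "c = 0"
        hence "z \<ominus> km c \<otimes> y = z" using zc yc by simp algebra
        thus False using c zS by simp
      qed
      have "z \<ominus> (z \<ominus> km c \<otimes> y) \<in> J"
        using additive_subgroup.a_closed[OF ideal.axioms(1)[OF J] zJ
          additive_subgroup.a_inv_closed[OF ideal.axioms(1)[OF J] subsetD[OF SJ c]]]
        unfolding a_minus_def .
      moreover have "z \<ominus> (z \<ominus> km c \<otimes> y) = km c \<otimes> y" using zc yc km_closed[of c] by algebra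
      ultimately have kyJ: "km c \<otimes> y \<in> J" by simp
      have "km (inverse c) \<otimes> (km c \<otimes> y) = (km (inverse c) \<otimes> km c) \<otimes> y"
        using yc by (simp add: m_assoc)
      also have "\<dots> = y" using km_inv[OF c0] yc by simp
      finally have yJ: "y \<in> J" using ideal.I_l_closed[OF J kyJ km_closed[of "inverse c"]] by simp
      have "I \<subseteq> J"
      proof
        fix w assume "w \<in> I"
        then obtain d where wc: "w \<in> carrier R" and d: "w \<ominus> km d \<otimes> y \<in> S a" unfolding I_def by blast
        have "(w \<ominus> km d \<otimes> y) \<oplus> km d \<otimes> y \<in> J"
          using additive_subgroup.a_closed[OF ideal.axioms(1)[OF J] subsetD[OF SJ d]
              ideal.I_l_closed[OF J yJ km_closed]] .
        moreover have "(w \<ominus> km d \<otimes> y) \<oplus> km d \<otimes> y = w" using wc yc km_closed[of d] by algebra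
        ultimately show "w \<in> J" by simp
      qed
      thus ?thesis using JI by blast
    qed
  qed
  hence "I \<subseteq> T a" by (rule minimal_sub_T[OF S_ideal[OF aF]])
  hence "y \<in> T a" using yI by blast
  thus ?thesis using yS' uc unfolding y_def by blast
qed

lemma top1_notS: assumes "top1 a g" shows "g \<notin> S a"
proof
  assume "g \<in> S a"
  hence "supp (Phi a g) = {}" using supp_empty_iff assms unfolding top1_def by blast
  thus False using assms unfolding top1_def by simp
qed

lemma top1_Phi: assumes "top1 a g" shows "\<exists>i\<in>Lay a. Phi a g = ind i"
proof -
  have aF: "a \<in> Field r" and gi: "idem g" and gT: "g \<in> T a" and c: "card (supp (Phi a g)) = 1"
    using assms unfolding top1_def by auto
  obtain i where si: "supp (Phi a g) = {i}" using card_1_singletonE[OF c] by blast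
  have iL: "i \<in> Lay a" using supp_Lay[OF aF gT] si by blast
  have "Phi a g = ind i"
  proof
    fix j show "Phi a g j = ind i j"
    proof (cases "j = i")
      case True
      hence "Phi a g j \<noteq> 0" using si unfolding supp_def by blast
      thus ?thesis using Phi_idem_vals[OF aF gT gi, of j] True unfolding ind_def by auto
    next
      case False
      hence "Phi a g j = 0" using si unfolding supp_def by blast
      thus ?thesis using False unfolding ind_def by auto
    qed
  qed
  thus ?thesis using iL by blast
qed

lemma top1_ind: assumes "a \<in> Field r" "idem g" "g \<in> T a" "Phi a g = ind i" shows "top1 a g"
  using assms supp_ind unfolding top1_def by simp

lemma atom: assumes aF: "a \<in> Field r" and f: "idem f" and fS: "f \<notin> S a"
  shows "\<exists>w. top1 a w \<and> f \<otimes> w = w"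
proof -
  have fc: "f \<in> carrier R" using idem_carr[OF f] .
  obtain t where tc: "t \<in> carrier R" and yT: "f \<otimes> t \<in> T a" and yS: "f \<otimes> t \<notin> S a"
    using semiart[OF aF fc fS] by blast
  define y where "y = f \<otimes> t"
  have yc: "y \<in> carrier R" unfolding y_def using fc tc by simp
  have "supp (Phi a y) \<noteq> {}" using supp_empty_iff[OF aF] yT yS unfolding y_def by blast
  then obtain i where i: "i \<in> supp (Phi a y)" by blast
  have iL: "i \<in> Lay a" using supp_Lay[OF aF] yT i unfolding y_def by blast
  define c where "c = Phi a y i"
  have c0: "c \<noteq> 0" using i unfolding c_def supp_def by simp
  have ui: "idem (uu a i)" and uT: "uu a i \<in> T a" and pu: "Phi a (uu a i) = ind i" using uu[OF aF iL] by auto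
  have uc: "uu a i \<in> carrier R" using idem_carr[OF ui] .
  define v where "v = km (inverse c) \<otimes> (y \<otimes> uu a i)"
  have yuT: "y \<otimes> uu a i \<in> T a" using T_multl[OF aF uT yc] .
  have vT: "v \<in> T a" unfolding v_def using T_multl[OF aF yuT km_closed] .
  have "Phi a v = (\<lambda>j. inverse c * (Phi a y j * ind i j))"
    unfolding v_def using Phi_km[OF aF yuT] Phi_mult[OF aF _ uT] yT pu unfolding y_def by simp
  also have "\<dots> = ind i" using c0 unfolding ind_def c_def by (auto simp: fun_eq_iff)
  finally have pv: "Phi a v = ind i" .
  have vi: "(\<lambda>j. Phi a v j * Phi a v j) = Phi a v" unfolding pv ind_def by auto
  obtain g w where g: "idem g \<and> g \<in> T a \<and> Phi a g = Phi a v \<and> w \<in> carrier R \<and> g = v \<otimes> w"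
    using lift_idem[OF aF vT vi] by (elim exE)
  have g1: "idem g" and g2: "g \<in> T a" and g3: "Phi a g = ind i" and wc: "w \<in> carrier R" and g5: "g = v \<otimes> w"
    using g pv by auto
  have "g = f \<otimes> (km (inverse c) \<otimes> (t \<otimes> uu a i) \<otimes> w)"
    unfolding g5 v_def y_def using fc tc uc wc km_closed[of "inverse c"] by algebra
  hence "f \<otimes> g = g" using idem_absorb[OF f] tc uc wc km_closed[of "inverse c"] by simp
  moreover have "top1 a g" using top1_ind[OF aF g1 g2 g3] .
  ultimately show ?thesis by blast
qed

inductive_set ispan :: "'a set \<Rightarrow> 'a set" for X where
  ispan_zero: "\<zero> \<in> ispan X"
| ispan_step: "x \<in> ispan X \<Longrightarrow> u \<in> X \<Longrightarrow> q \<in> carrier R \<Longrightarrow> x \<oplus> u \<otimes> q \<in> ispan X"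

lemma ispan_mono: "x \<in> ispan X \<Longrightarrow> X \<subseteq> Y \<Longrightarrow> x \<in> ispan Y"
  by (induction rule: ispan.induct) (auto intro: ispan.intros)

lemma ispan_carr: "x \<in> ispan X \<Longrightarrow> X \<subseteq> carrier R \<Longrightarrow> x \<in> carrier R"
  by (induction rule: ispan.induct) auto

definition Ugen :: "'i \<Rightarrow> 'a set" where
  "Ugen a = {uu b i | b i. (b = a \<or> lt b a) \<and> i \<in> Lay b}"
definition Ulow :: "'i \<Rightarrow> 'a set" where
  "Ulow a = {uu b i | b i. lt b a \<and> i \<in> Lay b}"

lemma gen_T: "a \<in> Field r \<longrightarrow> (\<forall>x. x \<in> T a \<longrightarrow> x \<in> ispan (Ugen a))"
proof (induction a rule: lt_induct)
  case (1 a)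
  show ?case
  proof (intro impI allI)
    fix x assume aF: "a \<in> Field r" and xT: "x \<in> T a"
    show "x \<in> ispan (Ugen a)"
      using aF xT
    proof (rule supp_induct)
      fix x assume xS: "x \<in> S a"
      from S_below[OF aF xS] show "x \<in> ispan (Ugen a)"
      proof
        assume "x = \<zero>" thus ?thesis by (simp add: ispan_zero)
      next
        assume "\<exists>b. lt b a \<and> x \<in> T b"
        then obtain b where ba: "lt b a" and xb: "x \<in> T b" by blast
        have "x \<in> ispan (Ugen b)" using "1.IH"[OF ba] lt_Field[OF ba] xb by blast
        moreover have "Ugen b \<subseteq> Ugen a" unfolding Ugen_def using ba lt_trans by blast
        ultimately show ?thesis by (rule ispan_mono)
      qed
    next
      fix x i c assume "x \<in> T a" and IH: "x \<in> ispan (Ugen a)" and iL: "i \<in> Lay a"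
      have "uu a i \<in> Ugen a" unfolding Ugen_def using iL by blast
      hence "x \<oplus> uu a i \<otimes> km c \<in> ispan (Ugen a)" using ispan_step[OF IH] km_closed by blast
      thus "x \<oplus> km c \<otimes> uu a i \<in> ispan (Ugen a)" using m_comm[OF km_closed uu_carr[OF aF iL]] by simp
    qed
  qed
qed

lemma gen_S: assumes aF: "a \<in> Field r" and xS: "x \<in> S a" shows "x \<in> ispan (Ulow a)"
proof -
  from S_below[OF aF xS] show ?thesis
  proof
    assume "x = \<zero>" thus ?thesis by (simp add: ispan_zero)
  next
    assume "\<exists>b. lt b a \<and> x \<in> T b"
    then obtain b where ba: "lt b a" and xb: "x \<in> T b" by blast
    have "x \<in> ispan (Ugen b)" using gen_T lt_Field[OF ba] xb by blast
    moreover have "Ugen b \<subseteq> Ulow a" unfolding Ugen_def Ulow_def using ba lt_trans by blast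
    ultimately show ?thesis by (rule ispan_mono)
  qed
qed

lemma Ulow_countable: "countable (Ulow a)"
proof -
  have "Ulow a \<subseteq> (\<lambda>(b, i). uu b i) ` (Field r \<times> (UNIV :: nat set))"
    unfolding Ulow_def using lt_Field by fastforce
  moreover have "countable (Field r \<times> (UNIV :: nat set))" using cnt by simp
  ultimately show ?thesis using countable_subset by blast
qed

lemma Ulow_props: assumes "u \<in> Ulow a" shows "\<exists>b i. lt b a \<and> i \<in> Lay b \<and> u = uu b i"
  using assms unfolding Ulow_def by blast

definition useq :: "'i \<Rightarrow> nat \<Rightarrow> 'a" where
  "useq a = from_nat_into (insert \<zero> (Ulow a))"

lemma useq_range: "range (useq a) = insert \<zero> (Ulow a)"
  unfolding useq_def by (rule range_from_nat_into) (auto simp: Ulow_countable)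

lemma ispan_fin: fixes c :: "nat \<Rightarrow> 'a" assumes "x \<in> ispan X" "X \<subseteq> range c" shows "\<exists>M. x \<in> ispan (c ` {..<M})"
  using assms
proof (induction rule: ispan.induct)
  case ispan_zero thus ?case using ispan.ispan_zero by blast
next
  case (ispan_step x u q)
  obtain M where M: "x \<in> ispan (c ` {..<M})" using ispan_step by blast
  obtain k where k: "u = c k" using ispan_step by blast
  have "x \<in> ispan (c ` {..<max M (Suc k)})" using ispan_mono[OF M] by (auto simp: image_subset_iff)
  moreover have "u \<in> c ` {..<max M (Suc k)}" using k by auto
  ultimately show ?case using ispan.ispan_step[OF _ _ ispan_step.hyps(3)] by blast
qed

end


context SA begin

lemma Bleaf_zero: "is_zero_pt r a \<Longrightarrow> Bleaf r a p \<longleftrightarrow> p = []"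
  by (auto elim: Bleaf.cases intro: Bleaf.intros dest: zero_not_succ limit_not_zero)

lemma Bleaf_succ: assumes "is_succ_of r b a"
  shows "Bleaf r a p \<longleftrightarrow> (\<exists>m q. p = Inr m # q \<and> Bleaf r b q)"
proof
  assume "Bleaf r a p"
  thus "\<exists>m q. p = Inr m # q \<and> Bleaf r b q"
  proof cases
    case leaf_zero thus ?thesis using zero_not_succ assms by blast
  next
    case (leaf_succ b' p' m) thus ?thesis using succ_unique[OF assms] by blast
  next
    case (leaf_lim b' p') thus ?thesis using limit_not_succ assms by blast
  qed
next
  assume "\<exists>m q. p = Inr m # q \<and> Bleaf r b q"
  thus "Bleaf r a p" using Bleaf.leaf_succ[OF assms] by blast
qed

lemma Bleaf_lim: assumes "is_limit_pt r a"
  shows "Bleaf r a p \<longleftrightarrow> (\<exists>b q. p = Inl b # q \<and> lt b a \<and> Bleaf r b q)"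
proof
  assume "Bleaf r a p"
  thus "\<exists>b q. p = Inl b # q \<and> lt b a \<and> Bleaf r b q"
  proof cases
    case leaf_zero thus ?thesis using limit_not_zero assms by blast
  next
    case (leaf_succ b' p' m) thus ?thesis using limit_not_succ assms by blast
  next
    case (leaf_lim b' p') thus ?thesis by blast
  qed
next
  assume "\<exists>b q. p = Inl b # q \<and> lt b a \<and> Bleaf r b q"
  thus "Bleaf r a p" using Bleaf.leaf_lim[OF assms] by blast
qed

lemma Bcar_zero_iff: assumes "is_zero_pt r a" shows "Bcar r a x \<longleftrightarrow> (\<forall>p. p \<noteq> [] \<longrightarrow> x p = 0)"
proof
  assume "Bcar r a x" thus "\<forall>p. p \<noteq> [] \<longrightarrow> x p = 0"
    by cases (use assms zero_not_succ limit_not_zero in blast)+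
next
  assume "\<forall>p. p \<noteq> [] \<longrightarrow> x p = 0" thus "Bcar r a x" using Bcar.car_zero[OF assms] by blast
qed

lemma Bcar_succ_iff: assumes "is_succ_of r b a"
  shows "Bcar r a x \<longleftrightarrow> (\<forall>p. (\<not> (\<exists>m q. p = Inr m # q)) \<longrightarrow> x p = 0) \<and>
     (\<forall>m. Bcar r b (\<lambda>q. x (Inr m # q))) \<and>
     (\<exists>c. finite {m. (\<lambda>q. x (Inr m # q)) \<noteq> (\<lambda>q. c * Bone r b q)})"
proof
  assume "Bcar r a x"
  thus "(\<forall>p. (\<not> (\<exists>m q. p = Inr m # q)) \<longrightarrow> x p = 0) \<and>
     (\<forall>m. Bcar r b (\<lambda>q. x (Inr m # q))) \<and>
     (\<exists>c. finite {m. (\<lambda>q. x (Inr m # q)) \<noteq> (\<lambda>q. c * Bone r b q)})"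
  proof cases
    case car_zero thus ?thesis using zero_not_succ assms by blast
  next
    case (car_succ b') thus ?thesis using succ_unique[OF assms] by blast
  next
    case car_lim thus ?thesis using limit_not_succ assms by blast
  qed
next
  assume "(\<forall>p. (\<not> (\<exists>m q. p = Inr m # q)) \<longrightarrow> x p = 0) \<and>
     (\<forall>m. Bcar r b (\<lambda>q. x (Inr m # q))) \<and>
     (\<exists>c. finite {m. (\<lambda>q. x (Inr m # q)) \<noteq> (\<lambda>q. c * Bone r b q)})"
  thus "Bcar r a x" using Bcar.car_succ[OF assms] by blast
qed

lemma Bcar_lim_iff: assumes "is_limit_pt r a"
  shows "Bcar r a x \<longleftrightarrow> (\<forall>p. (\<not> (\<exists>b q. lt b a \<and> p = Inl b # q)) \<longrightarrow> x p = 0) \<and>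
     (\<forall>b. lt b a \<longrightarrow> Bcar r b (\<lambda>q. x (Inl b # q))) \<and>
     (\<exists>c. finite {b. lt b a \<and> (\<lambda>q. x (Inl b # q)) \<noteq> (\<lambda>q. c * Bone r b q)})"
proof
  assume "Bcar r a x"
  thus "(\<forall>p. (\<not> (\<exists>b q. lt b a \<and> p = Inl b # q)) \<longrightarrow> x p = 0) \<and>
     (\<forall>b. lt b a \<longrightarrow> Bcar r b (\<lambda>q. x (Inl b # q))) \<and>
     (\<exists>c. finite {b. lt b a \<and> (\<lambda>q. x (Inl b # q)) \<noteq> (\<lambda>q. c * Bone r b q)})"
  proof cases
    case car_zero thus ?thesis using limit_not_zero assms by blast
  next
    case (car_succ b') thus ?thesis using limit_not_succ assms by blast
  next
    case car_lim thus ?thesis by blast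
  qed
next
  assume "(\<forall>p. (\<not> (\<exists>b q. lt b a \<and> p = Inl b # q)) \<longrightarrow> x p = 0) \<and>
     (\<forall>b. lt b a \<longrightarrow> Bcar r b (\<lambda>q. x (Inl b # q))) \<and>
     (\<exists>c. finite {b. lt b a \<and> (\<lambda>q. x (Inl b # q)) \<noteq> (\<lambda>q. c * Bone r b q)})"
  thus "Bcar r a x" using Bcar.car_lim[OF assms] by blast
qed

lemma Bone_zero: "is_zero_pt r a \<Longrightarrow> Bone r a p = (if p = [] then 1 else 0)"
  unfolding Bone_def using Bleaf_zero by simp

lemma Bone_succ_Inr: "is_succ_of r b a \<Longrightarrow> Bone r a (Inr m # q) = Bone r b q"
  unfolding Bone_def using Bleaf_succ by simp
lemma Bone_succ_other: "is_succ_of r b a \<Longrightarrow> \<not> (\<exists>m q. p = Inr m # q) \<Longrightarrow> Bone r a p = 0"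
  unfolding Bone_def using Bleaf_succ by auto
lemma Bone_lim_Inl: "is_limit_pt r a \<Longrightarrow> lt b a \<Longrightarrow> Bone r a (Inl b # q) = Bone r b q"
  unfolding Bone_def using Bleaf_lim by simp
lemma Bone_lim_other: "is_limit_pt r a \<Longrightarrow> \<not> (\<exists>b q. lt b a \<and> p = Inl b # q) \<Longrightarrow> Bone r a p = 0"
  unfolding Bone_def using Bleaf_lim by auto

definition corner :: "'a \<Rightarrow> 'a set" where
  "corner e = {x \<in> carrier R. e \<otimes> x = x}"

definition isoB :: "'a \<Rightarrow> 'i \<Rightarrow> ('a \<Rightarrow> ('i + nat) list \<Rightarrow> 'k) \<Rightarrow> bool" where
  "isoB e a \<psi> \<longleftrightarrow> bij_betw \<psi> (corner e) {z. Bcar r a z} \<and>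
     (\<forall>x\<in>corner e. \<forall>y\<in>corner e. \<psi> (x \<oplus> y) = (\<lambda>p. \<psi> x p + \<psi> y p)) \<and>
     (\<forall>x\<in>corner e. \<forall>y\<in>corner e. \<psi> (x \<otimes> y) = (\<lambda>p. \<psi> x p * \<psi> y p)) \<and>
     (\<forall>c. \<forall>x\<in>corner e. \<psi> (km c \<otimes> x) = (\<lambda>p. c * \<psi> x p)) \<and>
     \<psi> e = Bone r a"

definition PS :: "'j set \<Rightarrow> ('j \<Rightarrow> 'i) \<Rightarrow> ('j \<Rightarrow> ('i + nat) list \<Rightarrow> 'k) set" where
  "PS I h = {Z. (\<forall>j\<in>I. Bcar r (h j) (Z j)) \<and> (\<forall>j. j \<notin> I \<longrightarrow> Z j = (\<lambda>p. 0)) \<and>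
      (\<exists>c. finite {j\<in>I. Z j \<noteq> (\<lambda>q. c * Bone r (h j) q)})}"

definition isoP :: "'a \<Rightarrow> 'j set \<Rightarrow> ('j \<Rightarrow> 'i) \<Rightarrow> ('a \<Rightarrow> 'j \<Rightarrow> ('i + nat) list \<Rightarrow> 'k) \<Rightarrow> bool" where
  "isoP e I h \<Psi> \<longleftrightarrow> bij_betw \<Psi> (corner e) (PS I h) \<and>
     (\<forall>x\<in>corner e. \<forall>y\<in>corner e. \<Psi> (x \<oplus> y) = (\<lambda>j p. \<Psi> x j p + \<Psi> y j p)) \<and>
     (\<forall>x\<in>corner e. \<forall>y\<in>corner e. \<Psi> (x \<otimes> y) = (\<lambda>j p. \<Psi> x j p * \<Psi> y j p)) \<and>
     (\<forall>c. \<forall>x\<in>corner e. \<Psi> (km c \<otimes> x) = (\<lambda>j p. c * \<Psi> x j p)) \<and>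
     \<Psi> e = (\<lambda>j. if j \<in> I then Bone r (h j) else (\<lambda>p. 0))"

lemma corner_I: "x \<in> carrier R \<Longrightarrow> e \<otimes> x = x \<Longrightarrow> x \<in> corner e"
  unfolding corner_def by blast
lemma corner_D: "x \<in> corner e \<Longrightarrow> x \<in> carrier R \<and> e \<otimes> x = x"
  unfolding corner_def by blast
lemma corner_mult: "idem e \<Longrightarrow> x \<in> carrier R \<Longrightarrow> e \<otimes> x \<in> corner e"
  unfolding corner_def using idem_absorb idem_carr by auto

lemma orth_sum:
  fixes g :: "'j \<Rightarrow> 'a"
  assumes fin: "finite F" and FI: "F \<subseteq> I"
    and gi: "\<And>j. j \<in> I \<Longrightarrow> idem (g j)"
    and orth: "\<And>j j'. j \<in> I \<Longrightarrow> j' \<in> I \<Longrightarrow> j \<noteq> j' \<Longrightarrow> g j \<otimes> g j' = \<zero>"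
    and f: "\<And>j. j \<in> F \<Longrightarrow> f j \<in> carrier R \<and> g j \<otimes> f j = f j"
    and k: "k \<in> I"
  shows "g k \<otimes> finsum R f F = (if k \<in> F then f k else \<zero>)"
  using fin FI f
proof (induction F rule: finite_induct)
  case empty
  thus ?case using idem_carr[OF gi[OF k]] by simp
next
  case (insert j F)
  have fF: "f \<in> F \<rightarrow> carrier R" using insert.prems(2) by blast
  have fj: "f j \<in> carrier R" "g j \<otimes> f j = f j" using insert.prems(2) by auto
  have gkc: "g k \<in> carrier R" using idem_carr[OF gi[OF k]] .
  have gjc: "g j \<in> carrier R" using idem_carr[OF gi] insert.prems(1) by blast
  have IH: "g k \<otimes> finsum R f F = (if k \<in> F then f k else \<zero>)" using insert by blast
  have sc: "finsum R f F \<in> carrier R" using finsum_closed[OF fF] .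
  have "finsum R f (insert j F) = f j \<oplus> finsum R f F"
    using finsum_insert[OF insert.hyps(1,2) fF fj(1)] .
  hence "g k \<otimes> finsum R f (insert j F) = g k \<otimes> f j \<oplus> g k \<otimes> finsum R f F"
    using r_distr[OF fj(1) sc gkc] by simp
  moreover have "g k \<otimes> f j = (if k = j then f j else \<zero>)"
  proof (cases "k = j")
    case True thus ?thesis using fj(2) by simp
  next
    case False
    have "g k \<otimes> f j = (g k \<otimes> g j) \<otimes> f j" using fj(2) gkc gjc fj(1) by (metis m_assoc)
    also have "\<dots> = \<zero>" using orth[OF k _ False] insert.prems(1) fj(1) by simp
    finally show ?thesis using False by simp
  qed
  moreover have "k \<in> F \<Longrightarrow> f k \<in> carrier R" using insert.prems(2) by blast
  ultimately show ?case using IH insert.hyps(2) fj(1) by auto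
qed

lemma corner_decomp: assumes e: "top1 a e" and xc: "x \<in> corner e"
  shows "\<exists>c. x \<ominus> km c \<otimes> e \<in> S a"
proof -
  have aF: "a \<in> Field r" and ei: "idem e" and eT: "e \<in> T a" using e unfolding top1_def by auto
  obtain i where pe: "Phi a e = ind i" using top1_Phi[OF e] by blast
  have xcar: "x \<in> carrier R" and ex: "e \<otimes> x = x" using corner_D[OF xc] by auto
  have xT: "x \<in> T a" using T_multr[OF aF eT xcar] ex by simp
  define c where "c = Phi a x i"
  have "Phi a x = Phi a (e \<otimes> x)" using ex by simp
  also have "\<dots> = (\<lambda>j. Phi a e j * Phi a (e \<otimes> x) j)" using Phi_absorb[OF aF eT ei xcar] .
  also have "\<dots> = (\<lambda>j. c * ind i j)" using ex pe unfolding c_def ind_def by (auto simp: fun_eq_iff)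
  also have "\<dots> = Phi a (km c \<otimes> e)" using Phi_km[OF aF eT] pe by simp
  finally have "Phi a x = Phi a (km c \<otimes> e)" .
  hence "x \<ominus> km c \<otimes> e \<in> S a" using Phi_eq[OF aF xT T_multl[OF aF eT km_closed]] by simp
  thus ?thesis by blast
qed

lemma isoB_D: assumes "isoB e a \<psi>"
  shows "bij_betw \<psi> (corner e) {z. Bcar r a z}"
    "\<And>x y. x\<in>corner e \<Longrightarrow> y\<in>corner e \<Longrightarrow> \<psi> (x \<oplus> y) = (\<lambda>p. \<psi> x p + \<psi> y p)"
    "\<And>x y. x\<in>corner e \<Longrightarrow> y\<in>corner e \<Longrightarrow> \<psi> (x \<otimes> y) = (\<lambda>p. \<psi> x p * \<psi> y p)"
    "\<And>c x. x\<in>corner e \<Longrightarrow> \<psi> (km c \<otimes> x) = (\<lambda>p. c * \<psi> x p)"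
    "\<psi> e = Bone r a"
  using assms unfolding isoB_def by blast+

lemma assemble:
  fixes I :: "'j set" and g :: "'j \<Rightarrow> 'a" and h :: "'j \<Rightarrow> 'i"
    and \<psi> :: "'j \<Rightarrow> 'a \<Rightarrow> ('i + nat) list \<Rightarrow> 'k"
  assumes e: "top1 a e" and Iinf: "infinite I"
   and g: "\<And>j. j \<in> I \<Longrightarrow> idem (g j) \<and> e \<otimes> g j = g j \<and> g j \<noteq> \<zero>"
   and orth: "\<And>j j'. j \<in> I \<Longrightarrow> j' \<in> I \<Longrightarrow> j \<noteq> j' \<Longrightarrow> g j \<otimes> g j' = \<zero>"
   and iso: "\<And>j. j \<in> I \<Longrightarrow> isoB (g j) (h j) (\<psi> j)"
   and cover: "\<And>s. s \<in> S a \<Longrightarrow> e \<otimes> s = s \<Longrightarrow> \<exists>F. finite F \<and> F \<subseteq> I \<and> s \<otimes> finsum R g F = s"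
  shows "isoP e I h (\<lambda>x j. if j \<in> I then \<psi> j (g j \<otimes> x) else (\<lambda>p. 0))"
proof -
  define \<Psi> where "\<Psi> = (\<lambda>x j. if j \<in> I then \<psi> j (g j \<otimes> x) else (\<lambda>p. 0::'k))"
  have ei: "idem e" using e unfolding top1_def by blast
  have ec: "e \<in> carrier R" using idem_carr[OF ei] .
  have ee: "e \<otimes> e = e" using idem_sq[OF ei] .
  have gi: "\<And>j. j \<in> I \<Longrightarrow> idem (g j)" using g by blast
  have gc: "\<And>j. j \<in> I \<Longrightarrow> g j \<in> carrier R" using g idem_carr by blast
  have gg: "\<And>j. j \<in> I \<Longrightarrow> g j \<otimes> g j = g j" using g idem_sq by blast
  have eg: "\<And>j. j \<in> I \<Longrightarrow> e \<otimes> g j = g j" using g by blast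
  have ge: "\<And>j. j \<in> I \<Longrightarrow> g j \<otimes> e = g j" using eg gc ec m_comm by metis
  have g0: "\<And>j. j \<in> I \<Longrightarrow> g j \<noteq> \<zero>" using g by blast
  have gx: "\<And>j x. j \<in> I \<Longrightarrow> x \<in> carrier R \<Longrightarrow> g j \<otimes> x \<in> corner (g j)"
    using corner_mult gi by blast
  note isoD = isoB_D[OF iso]
  have gs_fin: "finsum R g F \<in> carrier R" if FI: "F \<subseteq> I" for F
  proof (rule finsum_closed)
    show "g \<in> F \<rightarrow> carrier R" using gc FI by blast
  qed
  have decomp: "\<exists>F. finite F \<and> F \<subseteq> I \<and> (\<forall>j\<in>I - F. g j \<otimes> x = km c \<otimes> g j)"
    if xc: "x \<in> corner e" and cS: "x \<ominus> km c \<otimes> e \<in> S a" for x c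
  proof -
    have xcar: "x \<in> carrier R" and ex: "e \<otimes> x = x" using corner_D[OF xc] by auto
    define s where "s = x \<ominus> km c \<otimes> e"
    have sc: "s \<in> carrier R" unfolding s_def using xcar ec by simp
    have "e \<otimes> s = e \<otimes> x \<ominus> km c \<otimes> (e \<otimes> e)" unfolding s_def using xcar ec km_closed[of c] by algebra
    hence es: "e \<otimes> s = s" unfolding s_def using ex ee by simp
    obtain F where F: "finite F" "F \<subseteq> I" and sG: "s \<otimes> finsum R g F = s" using cover[OF cS[folded s_def] es] by blast
    have "g j \<otimes> x = km c \<otimes> g j" if jI: "j \<in> I - F" for j
    proof -
      have jI': "j \<in> I" using jI by blast
      have Gc: "finsum R g F \<in> carrier R" using gs_fin[OF F(2)] .
      have fprem: "\<And>k. k \<in> F \<Longrightarrow> g k \<in> carrier R \<and> g k \<otimes> g k = g k" using gc gg F(2) by blast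
      have "g j \<otimes> finsum R g F = \<zero>"
        using orth_sum[OF F(1) F(2) gi orth fprem jI'] jI by simp
      hence "g j \<otimes> s = \<zero>"
      proof -
        assume h0: "g j \<otimes> finsum R g F = \<zero>"
        have "g j \<otimes> s = g j \<otimes> (s \<otimes> finsum R g F)" using sG by simp
        also have "\<dots> = s \<otimes> (g j \<otimes> finsum R g F)" using gc[OF jI'] sc Gc by algebra
        also have "\<dots> = \<zero>" using h0 sc by simp
        finally show ?thesis .
      qed
      moreover have "g j \<otimes> x = g j \<otimes> s \<oplus> km c \<otimes> (g j \<otimes> e)"
        unfolding s_def using gc[OF jI'] xcar ec km_closed[of c] by algebra
      ultimately show ?thesis using ge[OF jI'] gc[OF jI'] by simp
    qed
    thus ?thesis using F by blast
  qed
  have into: "\<Psi> x \<in> PS I h" if xc: "x \<in> corner e" for x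
  proof -
    have xcar: "x \<in> carrier R" using corner_D[OF xc] by auto
    obtain c where cS: "x \<ominus> km c \<otimes> e \<in> S a" using corner_decomp[OF e xc] by blast
    obtain F where F: "finite F" "F \<subseteq> I" and gF: "\<forall>j\<in>I - F. g j \<otimes> x = km c \<otimes> g j"
      using decomp[OF xc cS] by blast
    have "{j\<in>I. \<Psi> x j \<noteq> (\<lambda>q. c * Bone r (h j) q)} \<subseteq> F"
    proof
      fix j assume j: "j \<in> {j\<in>I. \<Psi> x j \<noteq> (\<lambda>q. c * Bone r (h j) q)}"
      show "j \<in> F"
      proof (rule ccontr)
        assume "j \<notin> F"
        hence "g j \<otimes> x = km c \<otimes> g j" using gF j by blast
        moreover have "g j \<in> corner (g j)" using corner_I[OF gc gg] j by blast
        ultimately have "\<Psi> x j = (\<lambda>q. c * Bone r (h j) q)"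
          unfolding \<Psi>_def using j isoD(4) isoD(5) by auto
        thus False using j by blast
      qed
    qed
    hence "finite {j\<in>I. \<Psi> x j \<noteq> (\<lambda>q. c * Bone r (h j) q)}" using F(1) finite_subset by blast
    moreover have "\<forall>j\<in>I. Bcar r (h j) (\<Psi> x j)"
      unfolding \<Psi>_def using bij_betw_apply[OF isoD(1) gx[OF _ xcar]] by auto
    moreover have "\<forall>j. j \<notin> I \<longrightarrow> \<Psi> x j = (\<lambda>p. 0)" unfolding \<Psi>_def by simp
    ultimately show ?thesis unfolding PS_def by blast
  qed
  have opadd: "\<Psi> (x \<oplus> y) = (\<lambda>j p. \<Psi> x j p + \<Psi> y j p)" if xc: "x \<in> corner e" and yc: "y \<in> corner e" for x y
  proof (rule ext)
    fix j
    have xcar: "x \<in> carrier R" and ycar: "y \<in> carrier R" using corner_D xc yc by auto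
    show "\<Psi> (x \<oplus> y) j = (\<lambda>p. \<Psi> x j p + \<Psi> y j p)"
    proof (cases "j \<in> I")
      case True
      have "g j \<otimes> (x \<oplus> y) = g j \<otimes> x \<oplus> g j \<otimes> y" using r_distr[OF xcar ycar gc[OF True]] .
      thus ?thesis unfolding \<Psi>_def using True isoD(2)[OF True gx[OF True xcar] gx[OF True ycar]] by simp
    qed (simp add: \<Psi>_def)
  qed
  have opmult: "\<Psi> (x \<otimes> y) = (\<lambda>j p. \<Psi> x j p * \<Psi> y j p)" if xc: "x \<in> corner e" and yc: "y \<in> corner e" for x y
  proof (rule ext)
    fix j
    have xcar: "x \<in> carrier R" and ycar: "y \<in> carrier R" using corner_D xc yc by auto
    show "\<Psi> (x \<otimes> y) j = (\<lambda>p. \<Psi> x j p * \<Psi> y j p)"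
    proof (cases "j \<in> I")
      case True
      have "(g j \<otimes> x) \<otimes> (g j \<otimes> y) = (g j \<otimes> g j) \<otimes> (x \<otimes> y)" using xcar ycar gc[OF True] by algebra
      hence "g j \<otimes> (x \<otimes> y) = (g j \<otimes> x) \<otimes> (g j \<otimes> y)" using gg[OF True] by simp
      thus ?thesis unfolding \<Psi>_def using True isoD(3)[OF True gx[OF True xcar] gx[OF True ycar]] by simp
    qed (simp add: \<Psi>_def)
  qed
  have opkm: "\<Psi> (km c \<otimes> x) = (\<lambda>j p. c * \<Psi> x j p)" if xc: "x \<in> corner e" for c x
  proof (rule ext)
    fix j
    have xcar: "x \<in> carrier R" using corner_D xc by auto
    show "\<Psi> (km c \<otimes> x) j = (\<lambda>p. c * \<Psi> x j p)"
    proof (cases "j \<in> I")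
      case True
      have "g j \<otimes> (km c \<otimes> x) = km c \<otimes> (g j \<otimes> x)" using xcar gc[OF True] km_closed[of c] by algebra
      thus ?thesis unfolding \<Psi>_def using True isoD(4)[OF True gx[OF True xcar]] by simp
    qed (simp add: \<Psi>_def)
  qed
  have opone: "\<Psi> e = (\<lambda>j. if j \<in> I then Bone r (h j) else (\<lambda>p. 0))"
    unfolding \<Psi>_def using ge isoD(5) by auto
  have inj: "inj_on \<Psi> (corner e)"
  proof (rule inj_onI)
    fix x y assume xc: "x \<in> corner e" and yc: "y \<in> corner e" and eq: "\<Psi> x = \<Psi> y"
    have xcar: "x \<in> carrier R" and ex: "e \<otimes> x = x" using corner_D[OF xc] by auto
    have ycar: "y \<in> carrier R" and ey: "e \<otimes> y = y" using corner_D[OF yc] by auto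
    have gxy: "g j \<otimes> x = g j \<otimes> y" if jI: "j \<in> I" for j
    proof -
      have "\<psi> j (g j \<otimes> x) = \<psi> j (g j \<otimes> y)" using fun_cong[OF eq, of j] jI unfolding \<Psi>_def by simp
      thus ?thesis using bij_betw_imp_inj_on[OF isoD(1)[OF jI]] gx[OF jI xcar] gx[OF jI ycar]
        by (simp add: inj_on_eq_iff)
    qed
    define z where "z = x \<ominus> y"
    have zcar: "z \<in> carrier R" unfolding z_def using xcar ycar by simp
    have "e \<otimes> z = e \<otimes> x \<ominus> e \<otimes> y" unfolding z_def using xcar ycar ec by algebra
    hence zc: "z \<in> corner e" using ex ey zcar unfolding z_def corner_def by simp
    have gz: "g j \<otimes> z = \<zero>" if jI: "j \<in> I" for j
    proof -
      have "g j \<otimes> z = g j \<otimes> x \<ominus> g j \<otimes> y" unfolding z_def using xcar ycar gc[OF jI] by algebra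
      thus ?thesis using gxy[OF jI] gc[OF jI] ycar by (simp add: a_minus_def r_neg)
    qed
    obtain c' where c': "z \<ominus> km c' \<otimes> e \<in> S a" using corner_decomp[OF e zc] by blast
    have zS: "z \<in> S a"
    proof -
      obtain F' where F': "finite F'" "F' \<subseteq> I" and gF': "\<forall>j\<in>I - F'. g j \<otimes> z = km c' \<otimes> g j"
        using decomp[OF zc c'] by blast
      have "infinite (I - F')" using Diff_infinite_finite[OF F'(1) Iinf] .
      hence "I - F' \<noteq> {}" by (metis finite.emptyI)
      then obtain j where jIF: "j \<in> I - F'" by blast
      have jI: "j \<in> I" using jIF by blast
      have kg: "km c' \<otimes> g j = \<zero>" using gF' jIF gz[OF jI] by simp
      have "c' = 0"
      proof (rule ccontr)
        assume "c' \<noteq> 0"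
        hence "g j = km (inverse c') \<otimes> (km c' \<otimes> g j)"
          using km_inv gc[OF jI] by (simp add: m_assoc[symmetric])
        thus False using kg g0[OF jI] by simp
      qed
      moreover have "z \<ominus> \<zero> \<otimes> e = z" using zcar ec by (simp add: a_minus_def)
      ultimately show ?thesis using c' by simp
    qed
    obtain G where G: "finite G" "G \<subseteq> I" and zG: "z \<otimes> finsum R g G = z"
      using cover[OF zS] zc unfolding corner_def by blast
    have Gc: "finsum R g G \<in> carrier R" using gs_fin[OF G(2)] .
    have "z = finsum R g G \<otimes> z" using zG m_comm[OF zcar Gc] by simp
    also have "\<dots> = finsum R (\<lambda>j. g j \<otimes> z) G"
      using finsum_ldistr[OF G(1) zcar] gc G(2) by (auto simp: Pi_def)
    also have "\<dots> = finsum R (\<lambda>j. \<zero>) G"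
      using G(2) gz by (intro finsum_cong') auto
    also have "\<dots> = \<zero>" using finsum_zero G(1) by simp
    finally have "z = \<zero>" .
    thus "x = y" unfolding z_def using xcar ycar by (metis minus_equality r_neg r_zero add.inv_closed a_minus_def add.m_closed a_assoc l_neg)
  qed
  have surj: "PS I h \<subseteq> \<Psi> ` corner e"
  proof
    fix Z assume Z: "Z \<in> PS I h"
    obtain c where Efin: "finite {j\<in>I. Z j \<noteq> (\<lambda>q. c * Bone r (h j) q)}" using Z unfolding PS_def by blast
    define E where "E = {j\<in>I. Z j \<noteq> (\<lambda>q. c * Bone r (h j) q)}"
    have EI: "E \<subseteq> I" unfolding E_def by blast
    have ZB: "\<And>j. j \<in> I \<Longrightarrow> Bcar r (h j) (Z j)" using Z unfolding PS_def by blast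
    have Z0: "\<And>j. j \<notin> I \<Longrightarrow> Z j = (\<lambda>p. 0)" using Z unfolding PS_def by blast
    define yv where "yv j = inv_into (corner (g j)) (\<psi> j) (Z j)" for j
    have yv: "yv j \<in> corner (g j) \<and> \<psi> j (yv j) = Z j" if jI: "j \<in> I" for j
    proof -
      have "Z j \<in> {z. Bcar r (h j) z}" using ZB[OF jI] by simp
      thus ?thesis unfolding yv_def using isoD(1)[OF jI]
        by (metis bij_betw_imp_surj_on inv_into_into bij_betw_inv_into_right)
    qed
    define f where "f j = yv j \<ominus> km c \<otimes> g j" for j
    have f: "f j \<in> carrier R \<and> g j \<otimes> f j = f j" if jI: "j \<in> I" for j
    proof -
      have yc: "yv j \<in> carrier R" and gy: "g j \<otimes> yv j = yv j" using corner_D yv[OF jI] by auto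
      have "g j \<otimes> f j = g j \<otimes> yv j \<ominus> km c \<otimes> (g j \<otimes> g j)"
        unfolding f_def using yc gc[OF jI] km_closed[of c] by algebra
      thus ?thesis using gy gg[OF jI] yc gc[OF jI] unfolding f_def by simp
    qed
    have fE: "f \<in> E \<rightarrow> carrier R" using f EI by blast
    define x where "x = km c \<otimes> e \<oplus> finsum R f E"
    have sc: "finsum R f E \<in> carrier R" using finsum_closed[OF fE] .
    have xcar: "x \<in> carrier R" unfolding x_def using sc ec by simp
    have "e \<otimes> finsum R f E = finsum R (\<lambda>j. e \<otimes> f j) E"
      using finsum_rdistr[OF Efin[folded E_def] ec fE] .
    also have "\<dots> = finsum R f E"
    proof (intro finsum_cong')
      show "f \<in> E \<rightarrow> carrier R" by (rule fE)
      fix j assume jE: "j \<in> E"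
      hence jI: "j \<in> I" using EI by blast
      have "e \<otimes> f j = e \<otimes> (g j \<otimes> f j)" using f[OF jI] by simp
      also have "\<dots> = (e \<otimes> g j) \<otimes> f j" using ec gc[OF jI] f[OF jI] by (simp add: m_assoc)
      also have "\<dots> = f j" using eg[OF jI] f[OF jI] by simp
      finally show "e \<otimes> f j = f j" .
    qed simp
    finally have ef: "e \<otimes> finsum R f E = finsum R f E" .
    have "e \<otimes> x = km c \<otimes> (e \<otimes> e) \<oplus> e \<otimes> finsum R f E" unfolding x_def using ec sc km_closed[of c] by algebra
    hence xc: "x \<in> corner e" using ee ef xcar unfolding x_def corner_def by simp
    have "\<Psi> x = Z"
    proof (rule ext)
      fix j
      show "\<Psi> x j = Z j"
      proof (cases "j \<in> I")
        case False thus ?thesis unfolding \<Psi>_def using Z0 by simp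
      next
        case True
        have fprem: "\<And>k. k \<in> E \<Longrightarrow> f k \<in> carrier R \<and> g k \<otimes> f k = f k" using f EI by blast
        have gsum: "g j \<otimes> finsum R f E = (if j \<in> E then f j else \<zero>)"
          using orth_sum[OF Efin[folded E_def] EI gi orth fprem True] .
        have "g j \<otimes> x = km c \<otimes> (g j \<otimes> e) \<oplus> g j \<otimes> finsum R f E"
          unfolding x_def using ec sc gc[OF True] km_closed[of c] by algebra
        hence gx': "g j \<otimes> x = km c \<otimes> g j \<oplus> (if j \<in> E then f j else \<zero>)" using ge[OF True] gsum by simp
        show ?thesis
        proof (cases "j \<in> E")
          case jE: True
          have yc: "yv j \<in> carrier R" using corner_D yv[OF True] by auto
          have "km c \<otimes> g j \<oplus> f j = yv j" unfolding f_def using yc gc[OF True] km_closed[of c] by algebra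
          hence "g j \<otimes> x = yv j" using gx' jE by simp
          thus ?thesis unfolding \<Psi>_def using True yv[OF True] by simp
        next
          case jE: False
          have "g j \<otimes> x = km c \<otimes> g j" using gx' jE gc[OF True] by simp
          moreover have "g j \<in> corner (g j)" using corner_I[OF gc gg] True by blast
          ultimately have "\<Psi> x j = (\<lambda>q. c * Bone r (h j) q)"
            unfolding \<Psi>_def using True isoD(4)[OF True] isoD(5)[OF True] by simp
          thus ?thesis using jE True unfolding E_def by simp
        qed
      qed
    qed
    thus "Z \<in> \<Psi> ` corner e" using xc by blast
  qed
  have "bij_betw \<Psi> (corner e) (PS I h)"
    unfolding bij_betw_def using inj into surj by blast
  thus ?thesis unfolding isoP_def \<Psi>_def[symmetric] using opadd opmult opkm opone by blast
qed

end


context SA begin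

definition encS :: "(nat \<Rightarrow> ('i + nat) list \<Rightarrow> 'k) \<Rightarrow> ('i + nat) list \<Rightarrow> 'k" where
  "encS Z p = (case p of [] \<Rightarrow> 0 | t # q \<Rightarrow> (case t of Inl _ \<Rightarrow> 0 | Inr m \<Rightarrow> Z m q))"

definition encL :: "('i \<Rightarrow> ('i + nat) list \<Rightarrow> 'k) \<Rightarrow> ('i + nat) list \<Rightarrow> 'k" where
  "encL Z p = (case p of [] \<Rightarrow> 0 | t # q \<Rightarrow> (case t of Inl b \<Rightarrow> Z b q | Inr _ \<Rightarrow> 0))"

lemma encS_Inr[simp]: "encS Z (Inr m # q) = Z m q" unfolding encS_def by simp
lemma encS_other: "\<not> (\<exists>m q. p = Inr m # q) \<Longrightarrow> encS Z p = 0"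
  unfolding encS_def by (cases p) (auto split: sum.split)
lemma encL_Inl[simp]: "encL Z (Inl b # q) = Z b q" unfolding encL_def by simp
lemma encL_other: "\<not> (\<exists>b q. p = Inl b # q) \<Longrightarrow> encL Z p = 0"
  unfolding encL_def by (cases p) (auto split: sum.split)

lemma encS_bij: assumes ba: "is_succ_of r b a"
  shows "bij_betw encS (PS (UNIV :: nat set) (\<lambda>_. b)) {z. Bcar r a z}"
proof -
  have inj: "inj_on encS (PS (UNIV :: nat set) (\<lambda>_. b))"
  proof (rule inj_onI)
    fix Z Z' :: "nat \<Rightarrow> ('i + nat) list \<Rightarrow> 'k" assume "encS Z = encS Z'"
    hence "\<And>m q. Z m q = Z' m q" by (metis encS_Inr)
    thus "Z = Z'" by (intro ext)
  qed
  have into: "encS Z \<in> {z. Bcar r a z}" if Z: "Z \<in> PS (UNIV :: nat set) (\<lambda>_. b)" for Z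
  proof -
    have Zb: "\<forall>m. Bcar r b (Z m)" and Zf: "\<exists>c. finite {m. Z m \<noteq> (\<lambda>q. c * Bone r b q)}"
      using Z unfolding PS_def by auto
    have e1: "(\<lambda>q. encS Z (Inr m # q)) = Z m" for m by (simp add: fun_eq_iff)
    have v: "\<forall>p. (\<not> (\<exists>m q. p = Inr m # q)) \<longrightarrow> encS Z p = 0" using encS_other by blast
    show ?thesis unfolding mem_Collect_eq Bcar_succ_iff[OF ba] e1 using v Zb Zf by blast
  qed
  have onto: "{z. Bcar r a z} \<subseteq> encS ` PS (UNIV :: nat set) (\<lambda>_. b)"
  proof
    fix z :: "('i + nat) list \<Rightarrow> 'k" assume "z \<in> {z. Bcar r a z}"
    hence z: "(\<forall>p. (\<not> (\<exists>m q. p = Inr m # q)) \<longrightarrow> z p = 0) \<and>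
     (\<forall>m. Bcar r b (\<lambda>q. z (Inr m # q))) \<and>
     (\<exists>c. finite {m. (\<lambda>q. z (Inr m # q)) \<noteq> (\<lambda>q. c * Bone r b q)})" using Bcar_succ_iff[OF ba, of z] by blast
    define Z where "Z = (\<lambda>m q. z (Inr m # q))"
    have "Z \<in> PS (UNIV :: nat set) (\<lambda>_. b)" unfolding PS_def Z_def using z by simp
    moreover have "encS Z = z"
    proof
      fix p show "encS Z p = z p"
      proof (cases "\<exists>m q. p = Inr m # q")
        case True thus ?thesis unfolding Z_def by auto
      next
        case False thus ?thesis using z encS_other by simp
      qed
    qed
    ultimately show "z \<in> encS ` PS (UNIV :: nat set) (\<lambda>_. b)" by blast
  qed
  show ?thesis unfolding bij_betw_def using inj into onto by blast
qed

lemma encL_bij: assumes al: "is_limit_pt r a"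
  shows "bij_betw encL (PS {b. lt b a} id) {z. Bcar r a z}"
proof -
  have inj: "inj_on encL (PS {b. lt b a} id)"
  proof (rule inj_onI)
    fix Z Z' :: "'i \<Rightarrow> ('i + nat) list \<Rightarrow> 'k" assume "encL Z = encL Z'"
    hence "\<And>m q. Z m q = Z' m q" by (metis encL_Inl)
    thus "Z = Z'" by (intro ext)
  qed
  have into: "encL Z \<in> {z. Bcar r a z}" if Z: "Z \<in> PS {b. lt b a} id" for Z
  proof -
    have "\<forall>b. lt b a \<longrightarrow> Bcar r b (Z b)" and "\<exists>c. finite {b. lt b a \<and> Z b \<noteq> (\<lambda>q. c * Bone r b q)}"
      and Z0: "\<forall>b. \<not> lt b a \<longrightarrow> Z b = (\<lambda>p. 0)"
      using Z unfolding PS_def by auto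
    moreover have e1: "(\<lambda>q. encL Z (Inl b # q)) = Z b" for b by (simp add: fun_eq_iff)
    moreover have "\<forall>p::('i + nat) list. (\<not> (\<exists>b q. lt b a \<and> p = Inl b # q)) \<longrightarrow> encL Z p = 0"
    proof (intro allI impI)
      fix p :: "('i + nat) list" assume np: "\<not> (\<exists>b q. lt b a \<and> p = Inl b # q)"
      show "encL Z p = 0"
      proof (cases "\<exists>b q. p = Inl b # q")
        case True
        then obtain b q where p: "p = Inl b # q" by blast
        hence "\<not> lt b a" using np by blast
        thus ?thesis using Z0 p by simp
      next
        case False thus ?thesis using encL_other by simp
      qed
    qed
    ultimately show ?thesis unfolding mem_Collect_eq Bcar_lim_iff[OF al] e1 by blast
  qed
  have onto: "{z. Bcar r a z} \<subseteq> encL ` PS {b. lt b a} id"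
  proof
    fix z :: "('i + nat) list \<Rightarrow> 'k" assume "z \<in> {z. Bcar r a z}"
    hence z: "(\<forall>p. (\<not> (\<exists>b q. lt b a \<and> p = Inl b # q)) \<longrightarrow> z p = 0) \<and>
     (\<forall>b. lt b a \<longrightarrow> Bcar r b (\<lambda>q. z (Inl b # q))) \<and>
     (\<exists>c. finite {b. lt b a \<and> (\<lambda>q. z (Inl b # q)) \<noteq> (\<lambda>q. c * Bone r b q)})" using Bcar_lim_iff[OF al, of z] by blast
    define Z where "Z = (\<lambda>b q. if lt b a then z (Inl b # q) else 0)"
    have "Z \<in> PS {b. lt b a} id" unfolding PS_def Z_def using z by (simp cong: conj_cong)
    moreover have "encL Z = z"
    proof
      fix p show "encL Z p = z p"
      proof (cases "\<exists>b q. p = Inl b # q")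
        case True
        then obtain b q where p: "p = Inl b # q" by blast
        show ?thesis
        proof (cases "lt b a")
          case True thus ?thesis unfolding Z_def p by simp
        next
          case False
          have "\<not> (\<exists>b' q'. lt b' a \<and> p = Inl b' # q')" using False p by blast
          hence "z p = 0" using z by blast
          thus ?thesis unfolding Z_def p using False by simp
        qed
      next
        case False thus ?thesis using z encL_other by auto
      qed
    qed
    ultimately show "z \<in> encL ` PS {b. lt b a} id" by blast
  qed
  show ?thesis unfolding bij_betw_def using inj into onto by blast
qed

lemma isoP_succ: assumes ba: "is_succ_of r b a" and P: "isoP e (UNIV :: nat set) (\<lambda>_. b) \<Psi>"
  shows "isoB e a (\<lambda>x. encS (\<Psi> x))"
proof -
  have bij: "bij_betw \<Psi> (corner e) (PS (UNIV :: nat set) (\<lambda>_. b))" using P unfolding isoP_def by blast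
  have "bij_betw (encS \<circ> \<Psi>) (corner e) {z. Bcar r a z}" using bij_betw_trans[OF bij encS_bij[OF ba]] .
  hence b1: "bij_betw (\<lambda>x. encS (\<Psi> x)) (corner e) {z. Bcar r a z}" by (simp add: comp_def)
  have encS_add: "encS (\<lambda>j p. Z j p + Z' j p) = (\<lambda>p. encS Z p + encS Z' p)" for Z Z'
    unfolding encS_def by (auto split: list.split sum.split)
  have encS_mult: "encS (\<lambda>j p. Z j p * Z' j p) = (\<lambda>p. encS Z p * encS Z' p)" for Z Z'
    unfolding encS_def by (auto split: list.split sum.split)
  have encS_km: "encS (\<lambda>j p. c * Z j p) = (\<lambda>p. c * encS Z p)" for Z c
    unfolding encS_def by (auto split: list.split sum.split)
  have "encS (\<lambda>j. Bone r b) = Bone r a"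
  proof
    fix p show "encS (\<lambda>j. Bone r b) p = Bone r a p"
    proof (cases "\<exists>m q. p = Inr m # q")
      case True
      then obtain m q where p: "p = Inr m # q" by blast
      show ?thesis unfolding p encS_Inr Bone_succ_Inr[OF ba] ..
    next
      case False thus ?thesis using Bone_succ_other[OF ba] encS_other by simp
    qed
  qed
  thus ?thesis using P b1 encS_add encS_mult encS_km unfolding isoP_def isoB_def by simp
qed

lemma isoP_lim: assumes al: "is_limit_pt r a" and P: "isoP e {b. lt b a} id \<Psi>"
  shows "isoB e a (\<lambda>x. encL (\<Psi> x))"
proof -
  have bij: "bij_betw \<Psi> (corner e) (PS {b. lt b a} id)" using P unfolding isoP_def by blast
  have "bij_betw (encL \<circ> \<Psi>) (corner e) {z. Bcar r a z}" using bij_betw_trans[OF bij encL_bij[OF al]] .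
  hence b1: "bij_betw (\<lambda>x. encL (\<Psi> x)) (corner e) {z. Bcar r a z}" by (simp add: comp_def)
  have encL_add: "encL (\<lambda>j p. Z j p + Z' j p) = (\<lambda>p. encL Z p + encL Z' p)" for Z Z'
    unfolding encL_def by (auto split: list.split sum.split)
  have encL_mult: "encL (\<lambda>j p. Z j p * Z' j p) = (\<lambda>p. encL Z p * encL Z' p)" for Z Z'
    unfolding encL_def by (auto split: list.split sum.split)
  have encL_km: "encL (\<lambda>j p. c * Z j p) = (\<lambda>p. c * encL Z p)" for Z c
    unfolding encL_def by (auto split: list.split sum.split)
  have "encL (\<lambda>j. if j \<in> {b. lt b a} then Bone r (id j) else (\<lambda>p. 0)) = Bone r a"
  proof
    fix p show "encL (\<lambda>j. if j \<in> {b. lt b a} then Bone r (id j) else (\<lambda>p. 0)) p = Bone r a p"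
    proof (cases "\<exists>b q. p = Inl b # q")
      case True
      then obtain b q where p: "p = Inl b # q" by blast
      show ?thesis
      proof (cases "lt b a")
        case True thus ?thesis unfolding p encL_Inl Bone_lim_Inl[OF al True] by simp
      next
        case False
        have "Bone r a p = (0::'k)" using Bone_lim_other[OF al] False p by blast
        thus ?thesis unfolding p encL_Inl using False by simp
      qed
    next
      case False
      have "Bone r a p = (0::'k)" using Bone_lim_other[OF al] False by blast
      thus ?thesis using encL_other False by simp
    qed
  qed
  thus ?thesis using P b1 encL_add encL_mult encL_km unfolding isoP_def isoB_def by simp
qed

lemma base_iso: assumes az: "is_zero_pt r a" and e: "top1 a e" shows "\<exists>\<psi>. isoB e a \<psi>"
proof -
  have aF: "a \<in> Field r" and ei: "idem e" and eT: "e \<in> T a" using e unfolding top1_def by auto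
  obtain i where iL: "i \<in> Lay a" and pe: "Phi a e = ind i" using top1_Phi[OF e] by blast
  have ec: "e \<in> carrier R" using idem_carr[OF ei] .
  have cT: "x \<in> T a" if xc: "x \<in> corner e" for x
    using corner_D[OF xc] T_multr[OF aF eT] by metis
  have rep: "x = km (Phi a x i) \<otimes> e" if xc: "x \<in> corner e" for x
  proof -
    obtain c where "x \<ominus> km c \<otimes> e \<in> S a" using corner_decomp[OF e xc] by blast
    hence "x \<ominus> km c \<otimes> e = \<zero>" using S_zero[OF az] by simp
    hence xe: "x = km c \<otimes> e" using corner_D[OF xc] ec
      by (metis a_minus_def add.inv_closed km_closed m_closed minus_equality add.inv_eq_1_iff minus_minus)
    have "Phi a x i = c" using xe Phi_km[OF aF eT, of c] pe unfolding ind_def by simp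
    thus ?thesis using xe by simp
  qed
  define \<psi> where "\<psi> x = (\<lambda>p::('i + nat) list. if p = [] then Phi a x i else 0)" for x
  have inj: "inj_on \<psi> (corner e)"
  proof (rule inj_onI)
    fix x y assume xc: "x \<in> corner e" and yc: "y \<in> corner e" and "\<psi> x = \<psi> y"
    hence "Phi a x i = Phi a y i" unfolding \<psi>_def by (metis (mono_tags))
    thus "x = y" using rep[OF xc] rep[OF yc] by simp
  qed
  have into: "\<psi> x \<in> {z. Bcar r a z}" for x unfolding mem_Collect_eq Bcar_zero_iff[OF az] \<psi>_def by simp
  have onto: "{z. Bcar r a z} \<subseteq> \<psi> ` corner e"
  proof
    fix z :: "('i + nat) list \<Rightarrow> 'k" assume "z \<in> {z. Bcar r a z}"
    hence z0: "\<forall>p. p \<noteq> [] \<longrightarrow> z p = 0" using Bcar_zero_iff[OF az, of z] by simp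
    define x where "x = km (z []) \<otimes> e"
    have "e \<otimes> (km (z []) \<otimes> e) = km (z []) \<otimes> (e \<otimes> e)" using ec km_closed by algebra
    hence xc: "x \<in> corner e" unfolding x_def using ec idem_sq[OF ei]
      by (intro corner_I) simp_all
    have "Phi a x i = z []" unfolding x_def using Phi_km[OF aF eT] pe unfolding ind_def by simp
    hence "\<psi> x = z" unfolding \<psi>_def using z0 by (auto simp: fun_eq_iff)
    thus "z \<in> \<psi> ` corner e" using xc by blast
  qed
  have bij: "bij_betw \<psi> (corner e) {z. Bcar r a z}" unfolding bij_betw_def using inj into onto by blast
  have "isoB e a \<psi>" unfolding isoB_def
  proof (intro conjI ballI allI)
    show "bij_betw \<psi> (corner e) {z. Bcar r a z}" by (rule bij)
    fix x y assume xc: "x \<in> corner e" and yc: "y \<in> corner e"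
    show "\<psi> (x \<oplus> y) = (\<lambda>p. \<psi> x p + \<psi> y p)" unfolding \<psi>_def using Phi_add[OF aF cT[OF xc] cT[OF yc]] by auto
    show "\<psi> (x \<otimes> y) = (\<lambda>p. \<psi> x p * \<psi> y p)" unfolding \<psi>_def using Phi_mult[OF aF cT[OF xc] cT[OF yc]] by auto
  next
    fix c x assume xc: "x \<in> corner e"
    show "\<psi> (km c \<otimes> x) = (\<lambda>p. c * \<psi> x p)" unfolding \<psi>_def using Phi_km[OF aF cT[OF xc]] by auto
  next
    have bz: "Bone r a p = (if p = [] then (1::'k) else 0)" for p by (rule Bone_zero[OF az])
    have "Bone r a = (\<lambda>p. if p = [] then (1::'k) else 0)" using bz by (simp add: fun_eq_iff)
    thus "\<psi> e = Bone r a" unfolding \<psi>_def using pe unfolding ind_def by (auto simp: fun_eq_iff)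
  qed
  thus ?thesis by blast
qed

end


context SA begin

lemma idem_zero: "idem \<zero>" unfolding idem_def by simp

lemma idem_mult: assumes "idem x" "idem y" shows "idem (x \<otimes> y)"
proof -
  have xc: "x \<in> carrier R" and yc: "y \<in> carrier R" using assms idem_carr by auto
  have "(x \<otimes> y) \<otimes> (x \<otimes> y) = (x \<otimes> x) \<otimes> (y \<otimes> y)" using xc yc by algebra
  thus ?thesis using idem_sq assms xc yc unfolding idem_def by simp
qed

lemma idem_add: assumes "idem x" "idem y" "x \<otimes> y = \<zero>" shows "idem (x \<oplus> y)"
proof -
  have xc: "x \<in> carrier R" and yc: "y \<in> carrier R" using assms idem_carr by auto
  have "(x \<oplus> y) \<otimes> (x \<oplus> y) = x \<otimes> x \<oplus> (x \<otimes> y \<oplus> x \<otimes> y) \<oplus> y \<otimes> y" using xc yc by algebra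
  thus ?thesis using idem_sq assms xc yc unfolding idem_def by simp
qed

lemma idem_minus: assumes e: "idem e" and G: "idem G" and eG: "e \<otimes> G = G"
  shows "idem (e \<ominus> G)" "(e \<ominus> G) \<otimes> G = \<zero>" "e \<otimes> (e \<ominus> G) = e \<ominus> G"
proof -
  have ec: "e \<in> carrier R" and Gc: "G \<in> carrier R" using e G idem_carr by auto
  have ee: "e \<otimes> e = e" and GG: "G \<otimes> G = G" using e G idem_sq by auto
  have "(e \<ominus> G) \<otimes> (e \<ominus> G) = e \<otimes> e \<ominus> (e \<otimes> G \<oplus> e \<otimes> G) \<oplus> G \<otimes> G" using ec Gc by algebra
  also have "\<dots> = e \<ominus> (G \<oplus> G) \<oplus> G" using ee GG eG by simp
  also have "\<dots> = e \<ominus> G" using ec Gc by algebra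
  finally show "idem (e \<ominus> G)" unfolding idem_def using ec Gc by simp
  have "(e \<ominus> G) \<otimes> G = e \<otimes> G \<ominus> G \<otimes> G" using ec Gc by algebra
  thus "(e \<ominus> G) \<otimes> G = \<zero>" using eG GG Gc by (simp add: a_minus_def r_neg)
  have "e \<otimes> (e \<ominus> G) = e \<otimes> e \<ominus> e \<otimes> G" using ec Gc by algebra
  thus "e \<otimes> (e \<ominus> G) = e \<ominus> G" using ee eG by simp
qed

lemma combine: assumes bF: "b \<in> Field r" and f: "idem f" and d: "idem d" and fd: "f \<otimes> d = d"
    and dS: "d \<in> S b" and w: "top1 b w" and fw: "(f \<ominus> d) \<otimes> w = w"
  shows "top1 b (d \<oplus> w)" "f \<otimes> (d \<oplus> w) = d \<oplus> w" "(d \<oplus> w) \<otimes> d = d"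
proof -
  have fc: "f \<in> carrier R" and dc: "d \<in> carrier R" using f d idem_carr by auto
  have wi: "idem w" and wT: "w \<in> T b" using w unfolding top1_def by auto
  have wc: "w \<in> carrier R" using idem_carr[OF wi] .
  have fdi: "idem (f \<ominus> d)" and fdd: "(f \<ominus> d) \<otimes> d = \<zero>" and ffd: "f \<otimes> (f \<ominus> d) = f \<ominus> d"
    using idem_minus[OF f d fd] by auto
  have "d \<otimes> w = ((f \<ominus> d) \<otimes> d) \<otimes> w"
  proof -
    have "d \<otimes> w = d \<otimes> ((f \<ominus> d) \<otimes> w)" using fw by simp
    also have "\<dots> = ((f \<ominus> d) \<otimes> d) \<otimes> w" using fc dc wc by algebra
    finally show ?thesis .
  qed
  hence dw: "d \<otimes> w = \<zero>" using fdd wc by simp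
  have dwi: "idem (d \<oplus> w)" using idem_add[OF d wi dw] .
  have dT: "d \<in> T b" using S_sub_T[OF bF] dS by blast
  have dwT: "d \<oplus> w \<in> T b" using T_add[OF bF dT wT] .
  have "Phi b d = (\<lambda>i. 0)" using Phi_zero_iff[OF bF dT] dS by simp
  hence "Phi b (d \<oplus> w) = Phi b w" using Phi_add[OF bF dT wT] by simp
  thus "top1 b (d \<oplus> w)" using w dwi dwT unfolding top1_def by simp
  have "f \<otimes> w = (f \<otimes> (f \<ominus> d)) \<otimes> w"
  proof -
    have "f \<otimes> w = f \<otimes> ((f \<ominus> d) \<otimes> w)" using fw by simp
    also have "\<dots> = (f \<otimes> (f \<ominus> d)) \<otimes> w" using fc dc wc by algebra
    finally show ?thesis .
  qed
  hence "f \<otimes> w = w" using ffd fw by simp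
  thus "f \<otimes> (d \<oplus> w) = d \<oplus> w" using fd r_distr[OF dc wc fc] by simp
  have "(d \<oplus> w) \<otimes> d = d \<otimes> d \<oplus> d \<otimes> w" using dc wc by algebra
  thus "(d \<oplus> w) \<otimes> d = d" using dw idem_sq[OF d] dc by simp
qed

definition Inv :: "'a \<Rightarrow> 'i \<Rightarrow> 'j set \<Rightarrow> ('j \<Rightarrow> 'i) \<Rightarrow> 'j set \<Rightarrow> ('j \<Rightarrow> 'a) \<Rightarrow> 'a \<Rightarrow> bool" where
  "Inv e \<alpha> I h F gf G \<longleftrightarrow> finite F \<and> F \<subseteq> I \<and> G = finsum R gf F \<and> idem G \<and> e \<otimes> G = G \<and> G \<in> S \<alpha> \<and>
     (\<forall>j\<in>F. top1 (h j) (gf j) \<and> gf j \<otimes> G = gf j \<and> e \<otimes> gf j = gf j) \<and>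
     (\<forall>j\<in>F. \<forall>j'\<in>F. j \<noteq> j' \<longrightarrow> gf j \<otimes> gf j' = \<zero>)"

lemma Inv_init: assumes "idem e" "\<alpha> \<in> Field r" shows "Inv e \<alpha> I h {} gf \<zero>"
  unfolding Inv_def using idem_zero assms S_zero_in idem_carr by auto

lemma Inv_assign: assumes inv: "Inv e \<alpha> I h F gf G" and ei: "idem e" and aF: "\<alpha> \<in> Field r"
    and jF: "j \<notin> F" and jI: "j \<in> I" and v: "top1 (h j) v" and ev: "(e \<ominus> G) \<otimes> v = v" and vS: "v \<in> S \<alpha>"
  shows "Inv e \<alpha> I h (insert j F) (gf(j := v)) (G \<oplus> v)"
    and "\<And>X. X \<in> carrier R \<Longrightarrow> X \<otimes> G = X \<Longrightarrow> X \<otimes> (G \<oplus> v) = X"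
proof -
  have fin: "finite F" and FI: "F \<subseteq> I" and Gs: "G = finsum R gf F" and Gi: "idem G" and eG: "e \<otimes> G = G"
    and GS: "G \<in> S \<alpha>" and old: "\<forall>j\<in>F. top1 (h j) (gf j) \<and> gf j \<otimes> G = gf j \<and> e \<otimes> gf j = gf j"
    and orth: "\<forall>j\<in>F. \<forall>j'\<in>F. j \<noteq> j' \<longrightarrow> gf j \<otimes> gf j' = \<zero>"
    using inv unfolding Inv_def by auto
  have ec: "e \<in> carrier R" and Gc: "G \<in> carrier R" using ei Gi idem_carr by auto
  have vi: "idem v" using v unfolding top1_def by blast
  have vc: "v \<in> carrier R" using idem_carr[OF vi] .
  have f0i: "idem (e \<ominus> G)" and f0G: "(e \<ominus> G) \<otimes> G = \<zero>" and ef0: "e \<otimes> (e \<ominus> G) = e \<ominus> G"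
    using idem_minus[OF ei Gi eG] by auto
  have "v \<otimes> G = ((e \<ominus> G) \<otimes> G) \<otimes> v"
  proof -
    have "v \<otimes> G = ((e \<ominus> G) \<otimes> v) \<otimes> G" using ev by simp
    also have "\<dots> = ((e \<ominus> G) \<otimes> G) \<otimes> v" using ec Gc vc by algebra
    finally show ?thesis .
  qed
  hence vG: "v \<otimes> G = \<zero>" using f0G vc by simp
  have Gv: "G \<otimes> v = \<zero>" using vG m_comm[OF vc Gc] by simp
  have ev': "e \<otimes> v = v"
  proof -
    have "e \<otimes> v = e \<otimes> ((e \<ominus> G) \<otimes> v)" using ev by simp
    also have "\<dots> = (e \<otimes> (e \<ominus> G)) \<otimes> v" using ec Gc vc by algebra
    finally show ?thesis using ef0 ev by simp
  qed
  show Xlem: "X \<otimes> (G \<oplus> v) = X" if Xc: "X \<in> carrier R" and XG: "X \<otimes> G = X" for X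
  proof -
    have xv: "X \<otimes> v = (X \<otimes> G) \<otimes> v" using XG by simp
    have "X \<otimes> (G \<oplus> v) = X \<otimes> G \<oplus> X \<otimes> v" using Xc Gc vc by algebra
    also have "\<dots> = X \<oplus> X \<otimes> (G \<otimes> v)"
    proof -
      have "X \<otimes> v = X \<otimes> (G \<otimes> v)" using xv m_assoc[OF Xc Gc vc] by simp
      thus ?thesis using XG by simp
    qed
    also have "\<dots> = X" using Gv Xc by simp
    finally show ?thesis .
  qed
  have gfc: "gf \<in> F \<rightarrow> carrier R" using old idem_carr unfolding top1_def by blast
  have "finsum R (gf(j := v)) (insert j F) = (gf(j := v)) j \<oplus> finsum R (gf(j := v)) F"
    using finsum_insert[OF fin jF] gfc jF vc by (auto simp: Pi_def)
  also have "finsum R (gf(j := v)) F = finsum R gf F"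
    using jF gfc by (intro finsum_cong') auto
  finally have e1: "finsum R (gf(j := v)) (insert j F) = v \<oplus> finsum R gf F" by (simp only: fun_upd_same)
  have fs: "G \<oplus> v = finsum R (gf(j := v)) (insert j F)" unfolding e1 using Gs a_comm[OF Gc vc] by simp
  have newi: "idem (G \<oplus> v)" using idem_add[OF Gi vi Gv] .
  have neweG: "e \<otimes> (G \<oplus> v) = G \<oplus> v" using eG ev' r_distr[OF Gc vc ec] by simp
  have newS: "G \<oplus> v \<in> S \<alpha>" using S_add[OF aF GS vS] .
  have vv: "v \<otimes> (G \<oplus> v) = v" using vG idem_sq[OF vi] r_distr[OF Gc vc vc] vc by simp
  have newold: "\<forall>k\<in>insert j F. top1 (h k) ((gf(j := v)) k) \<and> (gf(j := v)) k \<otimes> (G \<oplus> v) = (gf(j := v)) k \<and> e \<otimes> (gf(j := v)) k = (gf(j := v)) k"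
  proof
    fix k assume k: "k \<in> insert j F"
    show "top1 (h k) ((gf(j := v)) k) \<and> (gf(j := v)) k \<otimes> (G \<oplus> v) = (gf(j := v)) k \<and> e \<otimes> (gf(j := v)) k = (gf(j := v)) k"
    proof (cases "k = j")
      case True thus ?thesis using v vv ev' by simp
    next
      case False
      hence kF: "k \<in> F" using k by blast
      have "gf k \<in> carrier R" using gfc kF by blast
      thus ?thesis using False old kF Xlem by simp
    qed
  qed
  have neworth: "\<forall>k\<in>insert j F. \<forall>k'\<in>insert j F. k \<noteq> k' \<longrightarrow> (gf(j := v)) k \<otimes> (gf(j := v)) k' = \<zero>"
  proof (intro ballI impI)
    fix k k' assume k: "k \<in> insert j F" and k': "k' \<in> insert j F" and kk: "k \<noteq> k'"
    have vg: "v \<otimes> gf l = \<zero>" if lF: "l \<in> F" for l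
    proof -
      have gl: "gf l \<otimes> G = gf l" and glc: "gf l \<in> carrier R" using old lF gfc by auto
      have "v \<otimes> gf l = v \<otimes> (gf l \<otimes> G)" using gl by simp
      also have "\<dots> = gf l \<otimes> (v \<otimes> G)" using vc glc Gc by algebra
      finally show ?thesis using vG glc by simp
    qed
    show "(gf(j := v)) k \<otimes> (gf(j := v)) k' = \<zero>"
    proof (cases "k = j")
      case True
      hence "k' \<in> F" "k' \<noteq> j" using k' kk by auto
      thus ?thesis using True vg by simp
    next
      case False
      hence kF: "k \<in> F" using k by blast
      show ?thesis
      proof (cases "k' = j")
        case True
        have "gf k \<in> carrier R" using gfc kF by blast
        thus ?thesis using True False vg[OF kF] m_comm[OF vc] by simp
      next
        case False2: False
        hence "k' \<in> F" using k' by blast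
        thus ?thesis using orth kF kk False False2 by simp
      qed
    qed
  qed
  show "Inv e \<alpha> I h (insert j F) (gf(j := v)) (G \<oplus> v)"
    unfolding Inv_def using fin FI jI fs newi neweG newS newold neworth by auto
qed

lemma cover_step: assumes inv: "Inv e \<alpha> I h F gf G" and ei: "idem e" and cc: "c \<in> carrier R"
    and vc: "v \<in> carrier R" and ev: "(e \<ominus> G) \<otimes> v = v" and vd: "v \<otimes> (c \<otimes> (e \<ominus> G)) = c \<otimes> (e \<ominus> G)"
  shows "c \<otimes> e \<otimes> (G \<oplus> v) = c \<otimes> e"
proof -
  have Gi: "idem G" and eG: "e \<otimes> G = G" using inv unfolding Inv_def by auto
  have ec: "e \<in> carrier R" and Gc: "G \<in> carrier R" using ei Gi idem_carr by auto
  have ef0: "e \<otimes> (e \<ominus> G) = e \<ominus> G" using idem_minus[OF ei Gi eG] by auto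
  have "c \<otimes> e \<otimes> v = c \<otimes> (e \<otimes> (e \<ominus> G)) \<otimes> v"
  proof -
    have "c \<otimes> e \<otimes> v = c \<otimes> e \<otimes> ((e \<ominus> G) \<otimes> v)" using ev by simp
    also have "\<dots> = c \<otimes> (e \<otimes> (e \<ominus> G)) \<otimes> v" using cc ec Gc vc by algebra
    finally show ?thesis .
  qed
  also have "\<dots> = v \<otimes> (c \<otimes> (e \<ominus> G))" using ef0 cc ec Gc vc by (simp add: m_ac)
  also have "\<dots> = c \<otimes> (e \<ominus> G)" using vd .
  finally have cev: "c \<otimes> e \<otimes> v = c \<otimes> (e \<ominus> G)" .
  have "c \<otimes> e \<otimes> (G \<oplus> v) = c \<otimes> e \<otimes> G \<oplus> c \<otimes> e \<otimes> v" using cc ec Gc vc by algebra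
  also have "\<dots> = c \<otimes> (e \<otimes> G) \<oplus> c \<otimes> (e \<ominus> G)" using cev cc ec Gc by (simp add: m_assoc)
  also have "\<dots> = c \<otimes> G \<oplus> c \<otimes> (e \<ominus> G)" using eG by simp
  also have "\<dots> = c \<otimes> e" using cc ec Gc by algebra
  finally show ?thesis .
qed

lemma useq_carr: assumes "\<alpha> \<in> Field r" shows "useq \<alpha> k \<in> carrier R"
proof -
  have "useq \<alpha> k \<in> insert \<zero> (Ulow \<alpha>)" using useq_range[of \<alpha>] by blast
  moreover have "Ulow \<alpha> \<subseteq> carrier R" unfolding Ulow_def using uu_carr lt_Field by blast
  ultimately show ?thesis using zero_closed by (metis insertE subsetD)
qed

lemma finish:
  fixes I :: "'j set" and h :: "'j \<Rightarrow> 'i" and FF :: "nat \<Rightarrow> 'j set" and gg :: "nat \<Rightarrow> 'j \<Rightarrow> 'a"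
    and GG :: "nat \<Rightarrow> 'a"
  assumes e: "top1 \<alpha> e" and Iinf: "infinite I"
    and inv: "\<And>m. Inv e \<alpha> I h (FF m) (gg m) (GG m)"
    and mono: "\<And>m. FF m \<subseteq> FF (Suc m)"
    and stab: "\<And>m j. j \<in> FF m \<Longrightarrow> gg (Suc m) j = gg m j"
    and exh: "\<And>j. j \<in> I \<Longrightarrow> \<exists>m. j \<in> FF m"
    and cov: "\<And>m k. k < m \<Longrightarrow> useq \<alpha> k \<otimes> e \<otimes> GG m = useq \<alpha> k \<otimes> e"
    and IH: "\<And>j g. j \<in> I \<Longrightarrow> top1 (h j) g \<Longrightarrow> \<exists>\<psi>. isoB g (h j) \<psi>"
  shows "\<exists>\<Psi>. isoP e I h \<Psi>"
proof -
  have aF: "\<alpha> \<in> Field r" and ei: "idem e" using e unfolding top1_def by auto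
  have ec: "e \<in> carrier R" using idem_carr[OF ei] .
  have monoN: "FF m \<subseteq> FF m'" if "m \<le> m'" for m m'
    using that by (induction rule: dec_induct) (use mono in blast)+
  have stabN: "gg m' j = gg m j" if "j \<in> FF m" "m \<le> m'" for m m' j
    using that(2,1)
  proof (induction rule: dec_induct)
    case base thus ?case by simp
  next
    case (step n) thus ?case using stab monoN by (metis subsetD)
  qed
  define mj where "mj j = (SOME m. j \<in> FF m)" for j
  define gfin where "gfin j = gg (mj j) j" for j
  have mjF: "j \<in> FF (mj j)" if jI: "j \<in> I" for j
  proof -
    have "\<exists>m. j \<in> FF m" using exh[OF jI] .
    hence "(\<lambda>m. j \<in> FF m) (SOME m. j \<in> FF m)" by (rule someI_ex[of "\<lambda>m. j \<in> FF m"])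
    hence "j \<in> FF (SOME m. j \<in> FF m)" by (simp only:)
    thus ?thesis by (simp only: mj_def)
  qed
  have gfin_eq: "gfin j = gg M j" if jI: "j \<in> I" and jM: "j \<in> FF M" for j M
  proof -
    have "gg (max (mj j) M) j = gg (mj j) j" by (rule stabN[OF mjF[OF jI] max.cobounded1])
    moreover have "gg (max (mj j) M) j = gg M j" by (rule stabN[OF jM max.cobounded2])
    ultimately show ?thesis unfolding gfin_def by simp
  qed
  have gprops: "top1 (h j) (gfin j) \<and> e \<otimes> gfin j = gfin j" if jI: "j \<in> I" for j
    using inv[of "mj j"] mjF[OF jI] unfolding Inv_def gfin_def by blast
  have g: "idem (gfin j) \<and> e \<otimes> gfin j = gfin j \<and> gfin j \<noteq> \<zero>" if jI: "j \<in> I" for j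
  proof -
    have t: "top1 (h j) (gfin j)" using gprops[OF jI] by blast
    have "h j \<in> Field r" using t unfolding top1_def by blast
    hence "gfin j \<noteq> \<zero>" using top1_notS[OF t] S_zero_in by metis
    thus ?thesis using gprops[OF jI] t unfolding top1_def by blast
  qed
  have orth: "gfin j \<otimes> gfin j' = \<zero>" if jI: "j \<in> I" and j'I: "j' \<in> I" and jj: "j \<noteq> j'" for j j'
  proof -
    define M where "M = max (mj j) (mj j')"
    have jM: "j \<in> FF M" using monoN[of "mj j" M] mjF[OF jI] unfolding M_def by auto
    have j'M: "j' \<in> FF M" using monoN[of "mj j'" M] mjF[OF j'I] unfolding M_def by auto
    have "gg M j \<otimes> gg M j' = \<zero>" using inv[of M] jM j'M jj unfolding Inv_def by blast
    thus ?thesis using gfin_eq[OF jI jM] gfin_eq[OF j'I j'M] by simp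
  qed
  define \<psi> where "\<psi> j = (SOME \<psi>. isoB (gfin j) (h j) \<psi>)" for j
  have iso: "isoB (gfin j) (h j) (\<psi> j)" if jI: "j \<in> I" for j
  proof -
    have "\<exists>\<psi>. isoB (gfin j) (h j) \<psi>" using IH[OF jI gprops[OF jI, THEN conjunct1]] .
    hence "(\<lambda>\<psi>. isoB (gfin j) (h j) \<psi>) (SOME \<psi>. isoB (gfin j) (h j) \<psi>)" by (rule someI_ex[of "\<lambda>\<psi>. isoB (gfin j) (h j) \<psi>"])
    hence "isoB (gfin j) (h j) (SOME \<psi>. isoB (gfin j) (h j) \<psi>)" by (simp only:)
    thus ?thesis by (simp only: \<psi>_def)
  qed
  have cover: "\<exists>F. finite F \<and> F \<subseteq> I \<and> s \<otimes> finsum R gfin F = s" if sS: "s \<in> S \<alpha>" and es: "e \<otimes> s = s" for s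
  proof -
    have sc: "s \<in> carrier R" using S_carrI[OF aF sS] .
    have "s \<in> ispan (Ulow \<alpha>)" using gen_S[OF aF sS] .
    moreover have "Ulow \<alpha> \<subseteq> range (useq \<alpha>)" using useq_range[of \<alpha>] by blast
    ultimately obtain M where sM: "s \<in> ispan (useq \<alpha> ` {..<M})" using ispan_fin by blast
    have Gc: "GG M \<in> carrier R" using inv[of M] idem_carr unfolding Inv_def by blast
    have key: "x \<otimes> e \<otimes> GG M = x \<otimes> e" if "x \<in> ispan (useq \<alpha> ` {..<M})" for x
      using that
    proof (induction rule: ispan.induct)
      case ispan_zero thus ?case using ec Gc by simp
    next
      case (ispan_step x u q)
      obtain k where k: "k < M" "u = useq \<alpha> k" using ispan_step.hyps(2) by blast
      have uc: "u \<in> carrier R" using useq_carr[OF aF] k by simp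
      have xc: "x \<in> carrier R" using ispan_carr[OF ispan_step.hyps(1)] useq_carr[OF aF] by blast
      have ue: "u \<otimes> e \<otimes> GG M = u \<otimes> e" using cov[OF k(1)] k(2) by simp
      have "(x \<oplus> u \<otimes> q) \<otimes> e \<otimes> GG M = x \<otimes> e \<otimes> GG M \<oplus> (u \<otimes> e \<otimes> GG M) \<otimes> q"
        using xc uc ec Gc ispan_step.hyps(3) by algebra
      also have "\<dots> = x \<otimes> e \<oplus> (u \<otimes> e) \<otimes> q" using ispan_step.IH ue by simp
      also have "\<dots> = (x \<oplus> u \<otimes> q) \<otimes> e" using xc uc ec ispan_step.hyps(3) by algebra
      finally show ?case .
    qed
    have "s \<otimes> GG M = (e \<otimes> s) \<otimes> GG M" using es by simp
    also have "\<dots> = s \<otimes> e \<otimes> GG M" using m_comm[OF ec sc] by simp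
    also have "\<dots> = s \<otimes> e" using key[OF sM] .
    also have "\<dots> = s" using es m_comm[OF ec sc] by simp
    finally have sG: "s \<otimes> GG M = s" .
    have fin: "finite (FF M)" and FI: "FF M \<subseteq> I" and Gs: "GG M = finsum R (gg M) (FF M)"
      using inv[of M] unfolding Inv_def by auto
    have "finsum R (gg M) (FF M) = finsum R gfin (FF M)"
    proof (intro finsum_cong')
      show "gfin \<in> FF M \<rightarrow> carrier R" using g FI idem_carr by blast
      fix j assume "j \<in> FF M" thus "gg M j = gfin j" using gfin_eq FI by auto
    qed simp
    thus ?thesis using sG Gs fin FI by auto
  qed
  have "isoP e I h (\<lambda>x j. if j \<in> I then \<psi> j (gfin j \<otimes> x) else (\<lambda>p. 0))"
    by (rule assemble[OF e Iinf g orth iso cover])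
  thus ?thesis by blast
qed

end


context SA begin

definition atomf :: "'i \<Rightarrow> 'a \<Rightarrow> 'a" where "atomf b f = (SOME w. top1 b w \<and> f \<otimes> w = w)"

lemma atomf: assumes "b \<in> Field r" "idem f" "f \<notin> S b" shows "top1 b (atomf b f) \<and> f \<otimes> atomf b f = atomf b f"
proof -
  have "\<exists>w. top1 b w \<and> f \<otimes> w = w" using atom[OF assms] .
  hence "(\<lambda>w. top1 b w \<and> f \<otimes> w = w) (SOME w. top1 b w \<and> f \<otimes> w = w)" by (rule someI_ex[of "\<lambda>w. top1 b w \<and> f \<otimes> w = w"])
  hence "top1 b (SOME w. top1 b w \<and> f \<otimes> w = w) \<and> f \<otimes> (SOME w. top1 b w \<and> f \<otimes> w = w) = (SOME w. top1 b w \<and> f \<otimes> w = w)" by (simp only:)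
  thus ?thesis by (simp only: atomf_def)
qed

lemma useq_props: assumes "\<alpha> \<in> Field r"
  shows "idem (useq \<alpha> k) \<and> (useq \<alpha> k = \<zero> \<or> (\<exists>b i. lt b \<alpha> \<and> i \<in> Lay b \<and> useq \<alpha> k = uu b i))"
proof -
  have "useq \<alpha> k \<in> insert \<zero> (Ulow \<alpha>)" using useq_range[of \<alpha>] by blast
  thus ?thesis
  proof
    assume "useq \<alpha> k = \<zero>" thus ?thesis using idem_zero by simp
  next
    assume "useq \<alpha> k \<in> Ulow \<alpha>"
    then obtain b i where "lt b \<alpha>" "i \<in> Lay b" "useq \<alpha> k = uu b i" using Ulow_props by blast
    moreover have "idem (uu b i)" using uu[OF lt_Field[OF \<open>lt b \<alpha>\<close>, THEN conjunct1] \<open>i \<in> Lay b\<close>] by blast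
    ultimately show ?thesis by auto
  qed
qed

lemma minus_notS: assumes aF: "\<alpha> \<in> Field r" and eS: "e \<notin> S \<alpha>" and ec: "e \<in> carrier R" and yS: "y \<in> S \<alpha>"
  shows "e \<ominus> y \<notin> S \<alpha>"
proof
  assume "e \<ominus> y \<in> S \<alpha>"
  hence "(e \<ominus> y) \<oplus> y \<in> S \<alpha>" using S_add[OF aF _ yS] by blast
  moreover have "(e \<ominus> y) \<oplus> y = e" using ec S_carrI[OF aF yS] by algebra
  ultimately show False using eS by simp
qed

lemma succ_case: assumes ba: "is_succ_of r \<beta> \<alpha>" and e: "top1 \<alpha> e"
    and IH: "\<And>g. top1 \<beta> g \<Longrightarrow> \<exists>\<psi>. isoB g \<beta> \<psi>"
  shows "\<exists>\<psi>. isoB e \<alpha> \<psi>"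
proof -
  have aF: "\<alpha> \<in> Field r" and ei: "idem e" and eT: "e \<in> T \<alpha>" using e unfolding top1_def by auto
  have bF: "\<beta> \<in> Field r" using lt_Field[OF succ_lt[OF ba]] by blast
  have ec: "e \<in> carrier R" using idem_carr[OF ei] .
  have SaT: "S \<alpha> = T \<beta>" using S_succ[OF ba] .
  have eS: "e \<notin> S \<alpha>" using top1_notS[OF e] .
  define vstep where "vstep m G = (let d = useq \<alpha> m \<otimes> (e \<ominus> G) in
      if d \<in> S \<beta> then d \<oplus> atomf \<beta> (e \<ominus> G \<ominus> d) else d)" for m G
  have vprops: "top1 \<beta> (vstep m G) \<and> (e \<ominus> G) \<otimes> vstep m G = vstep m G \<and>
      vstep m G \<otimes> (useq \<alpha> m \<otimes> (e \<ominus> G)) = useq \<alpha> m \<otimes> (e \<ominus> G) \<and> vstep m G \<in> S \<alpha>"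
    if Gi: "idem G" and eG: "e \<otimes> G = G" and GS: "G \<in> S \<alpha>" for m G
  proof -
    have Gc: "G \<in> carrier R" using idem_carr[OF Gi] .
    define f0 where "f0 = e \<ominus> G"
    have f0i: "idem f0" unfolding f0_def using idem_minus[OF ei Gi eG] by blast
    have f0c: "f0 \<in> carrier R" using idem_carr[OF f0i] .
    define c where "c = useq \<alpha> m"
    have ci: "idem c" and cc: "c \<in> carrier R" using useq_props[OF aF] idem_carr unfolding c_def by auto
    have cT: "c \<in> T \<beta>" and csupp: "card (supp (Phi \<beta> c)) \<le> 1"
    proof -
      have "c = \<zero> \<or> (\<exists>b i. lt b \<alpha> \<and> i \<in> Lay b \<and> c = uu b i)" using useq_props[OF aF] unfolding c_def by blast
      hence "c \<in> T \<beta> \<and> card (supp (Phi \<beta> c)) \<le> 1"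
      proof
        assume c0: "c = \<zero>"
        have "supp (Phi \<beta> c) = {}" using supp_empty_iff[OF bF T_zero[OF bF]] S_zero_in[OF bF] c0 by simp
        thus ?thesis using c0 T_zero[OF bF] by simp
      next
        assume "\<exists>b i. lt b \<alpha> \<and> i \<in> Lay b \<and> c = uu b i"
        then obtain b i where b: "lt b \<alpha>" and iL: "i \<in> Lay b" and cu: "c = uu b i" by blast
        have bF': "b \<in> Field r" using lt_Field[OF b] by blast
        have ub: "uu b i \<in> T b" and pu: "Phi b (uu b i) = ind i" using uu[OF bF' iL] by auto
        from succ_below[OF ba b] show ?thesis
        proof
          assume "b = \<beta>"
          thus ?thesis using ub pu cu supp_ind by simp
        next
          assume bb: "lt b \<beta>"
          have cS: "c \<in> S \<beta>" using T_sub_S[OF bb] ub cu by blast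
          hence cT': "c \<in> T \<beta>" using S_sub_T[OF bF] by blast
          have "supp (Phi \<beta> c) = {}" using supp_empty_iff[OF bF cT'] cS by simp
          thus ?thesis using cT' by simp
        qed
      qed
      thus "c \<in> T \<beta>" "card (supp (Phi \<beta> c)) \<le> 1" by auto
    qed
    define d where "d = c \<otimes> f0"
    have di: "idem d" unfolding d_def using idem_mult[OF ci f0i] .
    have dc: "d \<in> carrier R" using idem_carr[OF di] .
    have dT: "d \<in> T \<beta>" unfolding d_def using T_multr[OF bF cT f0c] .
    have f0d: "f0 \<otimes> d = d"
    proof -
      have "f0 \<otimes> d = c \<otimes> (f0 \<otimes> f0)" unfolding d_def using cc f0c by algebra
      thus ?thesis using idem_sq[OF f0i] unfolding d_def by simp
    qed
    have dsupp: "card (supp (Phi \<beta> d)) \<le> 1"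
    proof -
      have "supp (Phi \<beta> d) \<subseteq> supp (Phi \<beta> c)" unfolding d_def by (rule supp_absorb[OF bF cT ci f0c])
      hence "card (supp (Phi \<beta> d)) \<le> card (supp (Phi \<beta> c))" using supp_finite[OF bF cT] card_mono by blast
      thus ?thesis using csupp by simp
    qed
    show ?thesis
    proof (cases "d \<in> S \<beta>")
      case True
      have v: "vstep m G = d \<oplus> atomf \<beta> (f0 \<ominus> d)" unfolding vstep_def d_def f0_def c_def using True[unfolded d_def f0_def c_def] by (simp add: Let_def)
      have f1i: "idem (f0 \<ominus> d)" using idem_minus[OF f0i di f0d] by blast
      have f1S: "f0 \<ominus> d \<notin> S \<beta>"
      proof
        assume "f0 \<ominus> d \<in> S \<beta>"
        hence "f0 \<ominus> d \<in> S \<alpha>" using S_mono[OF succ_lt[OF ba]] by blast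
        moreover have "f0 \<ominus> d = e \<ominus> (G \<oplus> d)" unfolding f0_def using ec Gc dc by algebra
        moreover have "G \<oplus> d \<in> S \<alpha>" using S_add[OF aF GS] dT SaT by blast
        ultimately show False using minus_notS[OF aF eS ec] by metis
      qed
      have w: "top1 \<beta> (atomf \<beta> (f0 \<ominus> d)) \<and> (f0 \<ominus> d) \<otimes> atomf \<beta> (f0 \<ominus> d) = atomf \<beta> (f0 \<ominus> d)"
        using atomf[OF bF f1i f1S] .
      have cb: "top1 \<beta> (d \<oplus> atomf \<beta> (f0 \<ominus> d))" "f0 \<otimes> (d \<oplus> atomf \<beta> (f0 \<ominus> d)) = d \<oplus> atomf \<beta> (f0 \<ominus> d)"
          "(d \<oplus> atomf \<beta> (f0 \<ominus> d)) \<otimes> d = d"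
        using combine[OF bF f0i di f0d True] w by blast+
      have "d \<oplus> atomf \<beta> (f0 \<ominus> d) \<in> S \<alpha>" using cb(1) SaT unfolding top1_def by blast
      thus ?thesis using cb v unfolding f0_def d_def c_def by simp
    next
      case False
      have v: "vstep m G = d" unfolding vstep_def d_def f0_def c_def using False[unfolded d_def f0_def c_def] by (simp add: Let_def)
      have "supp (Phi \<beta> d) \<noteq> {}" using supp_empty_iff[OF bF dT] False by blast
      hence "card (supp (Phi \<beta> d)) > 0" using supp_finite[OF bF dT] by (simp add: card_gt_0_iff)
      hence "card (supp (Phi \<beta> d)) = 1" using dsupp by linarith
      hence t: "top1 \<beta> d" unfolding top1_def using bF di dT by blast
      have "d \<otimes> d = d" using idem_sq[OF di] .
      thus ?thesis using t v f0d dT SaT unfolding f0_def d_def c_def by simp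
    qed
  qed
  define GG where "GG = rec_nat \<zero> (\<lambda>m G. G \<oplus> vstep m G)"
  have GG0: "GG 0 = \<zero>" unfolding GG_def by simp
  have GGS: "GG (Suc m) = GG m \<oplus> vstep m (GG m)" for m unfolding GG_def by simp
  define gf where "gf k = vstep k (GG k)" for k
  have inv: "Inv e \<alpha> (UNIV :: nat set) (\<lambda>_. \<beta>) {..<m} gf (GG m)" for m
  proof (induction m)
    case 0 thus ?case using Inv_init[OF ei aF] GG0 by simp
  next
    case (Suc m)
    have Gi: "idem (GG m)" and eG: "e \<otimes> GG m = GG m" and GS: "GG m \<in> S \<alpha>" using Suc unfolding Inv_def by auto
    note vp = vprops[OF Gi eG GS, of m]
    have "Inv e \<alpha> UNIV (\<lambda>_. \<beta>) (insert m {..<m}) (gf(m := vstep m (GG m))) (GG m \<oplus> vstep m (GG m))"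
      using Inv_assign(1)[OF Suc ei aF _ _ _ _ _, of m "vstep m (GG m)"] vp by simp
    moreover have "gf(m := vstep m (GG m)) = gf" unfolding gf_def by auto
    moreover have "insert m {..<m} = {..<Suc m}" by auto
    ultimately show ?case using GGS by simp
  qed
  have cov: "useq \<alpha> k \<otimes> e \<otimes> GG m = useq \<alpha> k \<otimes> e" if "k < m" for k m
    using that
  proof (induction m arbitrary: k)
    case 0 thus ?case by simp
  next
    case (Suc m)
    have Gi: "idem (GG m)" and eG: "e \<otimes> GG m = GG m" and GS: "GG m \<in> S \<alpha>" using inv[of m] unfolding Inv_def by auto
    note vp = vprops[OF Gi eG GS, of m]
    have uc: "useq \<alpha> k \<in> carrier R" using useq_carr[OF aF] .
    show ?case
    proof (cases "k < m")
      case True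
      have "useq \<alpha> k \<otimes> e \<otimes> GG m = useq \<alpha> k \<otimes> e" using Suc.IH[OF True] .
      hence "useq \<alpha> k \<otimes> e \<otimes> (GG m \<oplus> vstep m (GG m)) = useq \<alpha> k \<otimes> e"
        using Inv_assign(2)[OF inv[of m] ei aF _ _ _ _ _, of m "vstep m (GG m)" "useq \<alpha> k \<otimes> e"] vp uc ec by simp
      thus ?thesis using GGS by simp
    next
      case False
      hence km: "k = m" using Suc.prems by simp
      have "useq \<alpha> m \<otimes> e \<otimes> (GG m \<oplus> vstep m (GG m)) = useq \<alpha> m \<otimes> e"
        using cover_step[OF inv[of m] ei useq_carr[OF aF] _ _ _, of "vstep m (GG m)"] vp idem_carr unfolding top1_def by blast
      thus ?thesis using GGS km by simp
    qed
  qed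
  have "\<exists>\<Psi>. isoP e (UNIV :: nat set) (\<lambda>_. \<beta>) \<Psi>"
  proof (rule finish[OF e])
    show "infinite (UNIV :: nat set)" by simp
    show "Inv e \<alpha> UNIV (\<lambda>_. \<beta>) {..<m} ((\<lambda>_. gf) m) (GG m)" for m using inv by simp
    show "{..<m} \<subseteq> {..<Suc m}" for m by auto
    show "(\<lambda>_. gf) (Suc m) j = (\<lambda>_. gf) m j" for m j by simp
    show "\<exists>m. j \<in> {..<m}" for j :: nat by (rule exI[of _ "Suc j"]) simp
    show "useq \<alpha> k \<otimes> e \<otimes> GG m = useq \<alpha> k \<otimes> e" if "k < m" for k m using cov that .
    show "\<exists>\<psi>. isoB g \<beta> \<psi>" if "top1 \<beta> g" for g using IH that .
  qed
  then obtain \<Psi> where "isoP e (UNIV :: nat set) (\<lambda>_. \<beta>) \<Psi>" by blast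
  thus ?thesis using isoP_succ[OF ba] by blast
qed

lemma above_infinite: assumes al: "is_limit_pt r \<alpha>" and b': "lt b' \<alpha>" shows "infinite {b. lt b' b \<and> lt b \<alpha>}"
proof -
  define nx where "nx x = (SOME c. lt x c \<and> lt c \<alpha>)" for x
  have nx: "lt x (nx x) \<and> lt (nx x) \<alpha>" if "lt x \<alpha>" for x
  proof -
    have "\<exists>c. lt x c \<and> lt c \<alpha>" using limit_between[OF al that] .
    hence "(\<lambda>c. lt x c \<and> lt c \<alpha>) (SOME c. lt x c \<and> lt c \<alpha>)" by (rule someI_ex[of "\<lambda>c. lt x c \<and> lt c \<alpha>"])
    hence "lt x (SOME c. lt x c \<and> lt c \<alpha>) \<and> lt (SOME c. lt x c \<and> lt c \<alpha>) \<alpha>" by (simp only:)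
    thus ?thesis by (simp only: nx_def)
  qed
  define sq where "sq = rec_nat (nx b') (\<lambda>n x. nx x)"
  have sq0: "sq 0 = nx b'" and sqS: "sq (Suc n) = nx (sq n)" for n unfolding sq_def by simp_all
  have sqa: "lt b' (sq n) \<and> lt (sq n) \<alpha>" for n
  proof (induction n)
    case 0 thus ?case using nx[OF b'] sq0 by simp
  next
    case (Suc n) thus ?case using nx[of "sq n"] sqS[of n] lt_trans by metis
  qed
  have inc: "lt (sq m) (sq n)" if "m < n" for m n
    using that
  proof (induction n)
    case 0 thus ?case by simp
  next
    case (Suc n)
    have step: "lt (sq n) (sq (Suc n))" using nx[of "sq n"] sqa[of n] sqS[of n] by simp
    show ?case
    proof (cases "m = n")
      case True thus ?thesis using step by simp
    next
      case False
      hence "m < n" using Suc.prems by simp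
      thus ?thesis using Suc.IH step lt_trans by blast
    qed
  qed
  have "inj sq"
  proof (rule injI)
    fix m n assume eq: "sq m = sq n"
    show "m = n"
    proof (rule ccontr)
      assume "m \<noteq> n"
      hence "m < n \<or> n < m" by arith
      thus False using inc eq lt_irrefl by metis
    qed
  qed
  hence "infinite (range sq)" using range_inj_infinite by blast
  moreover have "range sq \<subseteq> {b. lt b' b \<and> lt b \<alpha>}" using sqa by blast
  ultimately show ?thesis using infinite_super by blast
qed

lemma lim_case: assumes al: "is_limit_pt r \<alpha>" and e: "top1 \<alpha> e"
    and IH: "\<And>b g. lt b \<alpha> \<Longrightarrow> top1 b g \<Longrightarrow> \<exists>\<psi>. isoB g b \<psi>"
  shows "\<exists>\<psi>. isoB e \<alpha> \<psi>"
proof -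
  have aF: "\<alpha> \<in> Field r" and ei: "idem e" using e unfolding top1_def by auto
  have ec: "e \<in> carrier R" using idem_carr[OF ei] .
  have eS: "e \<notin> S \<alpha>" using top1_notS[OF e] .
  define I where "I = {b. lt b \<alpha>}"
  obtain b0 where b0: "lt b0 \<alpha>" using limit_has_below[OF al] by blast
  have Iinf: "infinite I" using above_infinite[OF al b0] infinite_super unfolding I_def
    by (metis (mono_tags, lifting) mem_Collect_eq subsetI)
  have Icnt: "countable I" unfolding I_def using cnt lt_Field countable_subset by (metis (mono_tags, lifting) mem_Collect_eq subsetI)
  define enumL where "enumL = from_nat_into I"
  have enum_range: "range enumL = I" unfolding enumL_def using range_from_nat_into[OF _ Icnt] b0 I_def by blast
  define stA where "stA m s = (let F = fst s; gf = fst (snd s); G = snd (snd s); b = enumL m in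
      if b \<in> F then s else (insert b F, gf(b := atomf b (e \<ominus> G)), G \<oplus> atomf b (e \<ominus> G)))"
    for m :: nat and s :: "'i set \<times> ('i \<Rightarrow> 'a) \<times> 'a"
  define chooseb where "chooseb F d = (SOME b. b \<notin> F \<and> lt b \<alpha> \<and> d \<in> S b)" for F d
  define stB where "stB m s = (let F = fst s; gf = fst (snd s); G = snd (snd s);
      d = useq \<alpha> m \<otimes> (e \<ominus> G); b = chooseb F d; v = d \<oplus> atomf b (e \<ominus> G \<ominus> d) in
      (insert b F, gf(b := v), G \<oplus> v))"
    for m :: nat and s :: "'i set \<times> ('i \<Rightarrow> 'a) \<times> 'a"
  define Inv' where "Inv' s = Inv e \<alpha> I id (fst s) (fst (snd s)) (snd (snd s))" for s :: "'i set \<times> ('i \<Rightarrow> 'a) \<times> 'a"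
  have propA: "Inv' (stA m s) \<and> fst s \<subseteq> fst (stA m s) \<and> (\<forall>j\<in>fst s. fst (snd (stA m s)) j = fst (snd s) j)
      \<and> enumL m \<in> fst (stA m s) \<and> (\<forall>X\<in>carrier R. X \<otimes> snd (snd s) = X \<longrightarrow> X \<otimes> snd (snd (stA m s)) = X)"
    if inv: "Inv' s" for m s
  proof -
    obtain F gf G where s: "s = (F, gf, G)" by (cases s)
    have invs: "Inv e \<alpha> I id F gf G" using inv unfolding Inv'_def s by simp
    have Gi: "idem G" and eG: "e \<otimes> G = G" and GS: "G \<in> S \<alpha>" using invs unfolding Inv_def by auto
    define b where "b = enumL m"
    have bI: "b \<in> I" unfolding b_def using enum_range by blast
    have bl: "lt b \<alpha>" using bI unfolding I_def by blast
    have bF: "b \<in> Field r" using lt_Field[OF bl] by blast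
    show ?thesis
    proof (cases "b \<in> F")
      case True
      have "stA m s = s" unfolding stA_def s b_def[symmetric] using True by (simp add: Let_def)
      thus ?thesis using inv True s unfolding b_def by simp
    next
      case False
      have st: "stA m s = (insert b F, gf(b := atomf b (e \<ominus> G)), G \<oplus> atomf b (e \<ominus> G))"
        unfolding stA_def s b_def[symmetric] using False by (simp add: Let_def)
      have f0i: "idem (e \<ominus> G)" using idem_minus[OF ei Gi eG] by blast
      have f0S: "e \<ominus> G \<notin> S b" using minus_notS[OF aF eS ec GS] S_mono[OF bl] by blast
      have w: "top1 b (atomf b (e \<ominus> G)) \<and> (e \<ominus> G) \<otimes> atomf b (e \<ominus> G) = atomf b (e \<ominus> G)"
        using atomf[OF bF f0i f0S] .
      have wS: "atomf b (e \<ominus> G) \<in> S \<alpha>" using w T_sub_S[OF bl] unfolding top1_def by blast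
      have i1: "Inv e \<alpha> I id (insert b F) (gf(b := atomf b (e \<ominus> G))) (G \<oplus> atomf b (e \<ominus> G))"
        using Inv_assign(1)[OF invs ei aF False bI _ _ wS] w by simp
      have i2: "\<forall>X\<in>carrier R. X \<otimes> G = X \<longrightarrow> X \<otimes> (G \<oplus> atomf b (e \<ominus> G)) = X"
        using Inv_assign(2)[OF invs ei aF False bI _ _ wS] w by simp
      show ?thesis unfolding Inv'_def st using i1 i2 False unfolding s b_def by auto
    qed
  qed
  have propB: "Inv' (stB m s) \<and> fst s \<subseteq> fst (stB m s) \<and> (\<forall>j\<in>fst s. fst (snd (stB m s)) j = fst (snd s) j)
      \<and> (\<forall>X\<in>carrier R. X \<otimes> snd (snd s) = X \<longrightarrow> X \<otimes> snd (snd (stB m s)) = X)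
      \<and> useq \<alpha> m \<otimes> e \<otimes> snd (snd (stB m s)) = useq \<alpha> m \<otimes> e"
    if inv: "Inv' s" for m s
  proof -
    obtain F gf G where s: "s = (F, gf, G)" by (cases s)
    have invs: "Inv e \<alpha> I id F gf G" using inv unfolding Inv'_def s by simp
    have Gi: "idem G" and eG: "e \<otimes> G = G" and GS: "G \<in> S \<alpha>" and finF: "finite F"
      using invs unfolding Inv_def by auto
    have Gc: "G \<in> carrier R" using idem_carr[OF Gi] .
    define f0 where "f0 = e \<ominus> G"
    have f0i: "idem f0" unfolding f0_def using idem_minus[OF ei Gi eG] by blast
    have f0c: "f0 \<in> carrier R" using idem_carr[OF f0i] .
    define c where "c = useq \<alpha> m"
    have ci: "idem c" using useq_props[OF aF] unfolding c_def by blast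
    have cc: "c \<in> carrier R" using idem_carr[OF ci] .
    have cS: "c \<in> S \<alpha>"
    proof -
      have "c = \<zero> \<or> (\<exists>b i. lt b \<alpha> \<and> i \<in> Lay b \<and> c = uu b i)" using useq_props[OF aF] unfolding c_def by blast
      thus ?thesis
      proof
        assume "c = \<zero>" thus ?thesis using S_zero_in[OF aF] by simp
      next
        assume "\<exists>b i. lt b \<alpha> \<and> i \<in> Lay b \<and> c = uu b i"
        then obtain b i where b: "lt b \<alpha>" "i \<in> Lay b" "c = uu b i" by blast
        thus ?thesis using uu[OF lt_Field[OF b(1), THEN conjunct1] b(2)] T_sub_S[OF b(1)] by blast
      qed
    qed
    define d where "d = c \<otimes> f0"
    have di: "idem d" unfolding d_def using idem_mult[OF ci f0i] .
    have dc: "d \<in> carrier R" using idem_carr[OF di] .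
    have dS: "d \<in> S \<alpha>" unfolding d_def using S_multr[OF aF cS f0c] .
    have f0d: "f0 \<otimes> d = d"
    proof -
      have "f0 \<otimes> d = c \<otimes> (f0 \<otimes> f0)" unfolding d_def using cc f0c by algebra
      thus ?thesis using idem_sq[OF f0i] unfolding d_def by simp
    qed
    have exb: "\<exists>b. b \<notin> F \<and> lt b \<alpha> \<and> d \<in> S b"
    proof -
      from S_below[OF aF dS] show ?thesis
      proof
        assume d0: "d = \<zero>"
        have "infinite (I - F)" using Diff_infinite_finite[OF finF Iinf] .
        then obtain b where "b \<in> I - F" by (metis finite.emptyI ex_in_conv)
        thus ?thesis using d0 S_zero_in lt_Field unfolding I_def by blast
      next
        assume "\<exists>b'. lt b' \<alpha> \<and> d \<in> T b'"
        then obtain b' where b': "lt b' \<alpha>" "d \<in> T b'" by blast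
        have "infinite ({b. lt b' b \<and> lt b \<alpha>} - F)" using Diff_infinite_finite[OF finF above_infinite[OF al b'(1)]] .
        then obtain b where b: "b \<in> {b. lt b' b \<and> lt b \<alpha>} - F" by (metis finite.emptyI ex_in_conv)
        thus ?thesis using T_sub_S b'(2) by blast
      qed
    qed
    define b where "b = chooseb F d"
    have bp: "b \<notin> F \<and> lt b \<alpha> \<and> d \<in> S b"
    proof -
      have "(SOME b. b \<notin> F \<and> lt b \<alpha> \<and> d \<in> S b) \<notin> F \<and> lt (SOME b. b \<notin> F \<and> lt b \<alpha> \<and> d \<in> S b) \<alpha> \<and> d \<in> S (SOME b. b \<notin> F \<and> lt b \<alpha> \<and> d \<in> S b)"
        using exb by (rule someI_ex[of "\<lambda>b. b \<notin> F \<and> lt b \<alpha> \<and> d \<in> S b"])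
      thus ?thesis unfolding b_def chooseb_def by assumption
    qed
    have bF': "b \<notin> F" and bl: "lt b \<alpha>" and dSb: "d \<in> S b" using bp by auto
    have bI: "b \<in> I" unfolding I_def using bl by blast
    have bF: "b \<in> Field r" using lt_Field[OF bl] by blast
    have f1i: "idem (f0 \<ominus> d)" using idem_minus[OF f0i di f0d] by blast
    have f1S: "f0 \<ominus> d \<notin> S b"
    proof
      assume "f0 \<ominus> d \<in> S b"
      hence "f0 \<ominus> d \<in> S \<alpha>" using S_mono[OF bl] by blast
      moreover have "f0 \<ominus> d = e \<ominus> (G \<oplus> d)" unfolding f0_def using ec Gc dc by algebra
      moreover have "G \<oplus> d \<in> S \<alpha>" using S_add[OF aF GS dS] .
      ultimately show False using minus_notS[OF aF eS ec] by metis
    qed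
    define v where "v = d \<oplus> atomf b (f0 \<ominus> d)"
    have w: "top1 b (atomf b (f0 \<ominus> d)) \<and> (f0 \<ominus> d) \<otimes> atomf b (f0 \<ominus> d) = atomf b (f0 \<ominus> d)"
      using atomf[OF bF f1i f1S] .
    have cb: "top1 b v" "f0 \<otimes> v = v" "v \<otimes> d = d"
      unfolding v_def using combine[OF bF f0i di f0d dSb] w by blast+
    have vS: "v \<in> S \<alpha>" using cb(1) T_sub_S[OF bl] unfolding top1_def by blast
    have vc: "v \<in> carrier R" using cb(1) idem_carr unfolding top1_def by blast
    have st: "stB m s = (insert b F, gf(b := v), G \<oplus> v)"
      unfolding stB_def s v_def b_def d_def c_def f0_def by (simp add: Let_def)
    have i1: "Inv e \<alpha> I id (insert b F) (gf(b := v)) (G \<oplus> v)"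
      using Inv_assign(1)[OF invs ei aF bF' bI _ _ vS] cb unfolding f0_def by simp
    have i2: "\<forall>X\<in>carrier R. X \<otimes> G = X \<longrightarrow> X \<otimes> (G \<oplus> v) = X"
      using Inv_assign(2)[OF invs ei aF bF' bI _ _ vS] cb unfolding f0_def by simp
    have i3: "c \<otimes> e \<otimes> (G \<oplus> v) = c \<otimes> e"
      using cover_step[OF invs ei cc vc] cb unfolding d_def f0_def by simp
    show ?thesis unfolding Inv'_def st using i1 i2 i3 bF' unfolding s c_def by auto
  qed
  define st where "st = rec_nat ({}, \<lambda>_. \<zero>, \<zero>) (\<lambda>m s. stB m (stA m s))"
  have st0: "st 0 = ({}, \<lambda>_. \<zero>, \<zero>)" and stS: "st (Suc m) = stB m (stA m (st m))" for m
    unfolding st_def by simp_all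
  have inv: "Inv' (st m)" for m
  proof (induction m)
    case 0 thus ?case unfolding Inv'_def st0 using Inv_init[OF ei aF] by simp
  next
    case (Suc m) thus ?case using propA propB stS by metis
  qed
  define FF where "FF m = fst (st m)" for m
  define gg where "gg m = fst (snd (st m))" for m
  define GG where "GG m = snd (snd (st m))" for m
  have cov: "useq \<alpha> k \<otimes> e \<otimes> GG m = useq \<alpha> k \<otimes> e" if "k < m" for k m
    using that
  proof (induction m arbitrary: k)
    case 0 thus ?case by simp
  next
    case (Suc m)
    have uc: "useq \<alpha> k \<otimes> e \<in> carrier R" using useq_carr[OF aF] ec by simp
    note pA = propA[OF inv[of m], of m]
    note pB = propB[OF pA[THEN conjunct1], of m]
    show ?case
    proof (cases "k < m")
      case True
      have "useq \<alpha> k \<otimes> e \<otimes> snd (snd (st m)) = useq \<alpha> k \<otimes> e" using Suc.IH[OF True] unfolding GG_def .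
      hence "useq \<alpha> k \<otimes> e \<otimes> snd (snd (stA m (st m))) = useq \<alpha> k \<otimes> e" using pA uc by blast
      hence "useq \<alpha> k \<otimes> e \<otimes> snd (snd (stB m (stA m (st m)))) = useq \<alpha> k \<otimes> e" using pB uc by blast
      thus ?thesis unfolding GG_def stS .
    next
      case False
      hence "k = m" using Suc.prems by simp
      thus ?thesis using pB unfolding GG_def stS by blast
    qed
  qed
  have "\<exists>\<Psi>. isoP e I id \<Psi>"
  proof (rule finish[OF e Iinf])
    show "Inv e \<alpha> I id (FF m) (gg m) (GG m)" for m using inv[of m] unfolding Inv'_def FF_def gg_def GG_def .
    show "FF m \<subseteq> FF (Suc m)" for m
      using propA[OF inv[of m], of m] propB[OF propA[OF inv[of m], of m, THEN conjunct1], of m]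
      unfolding FF_def stS by blast
    show "gg (Suc m) j = gg m j" if "j \<in> FF m" for m j
    proof -
      note pA = propA[OF inv[of m], of m]
      note pB = propB[OF pA[THEN conjunct1], of m]
      have "j \<in> fst (stA m (st m))" using that pA unfolding FF_def by blast
      hence "fst (snd (stB m (stA m (st m)))) j = fst (snd (stA m (st m))) j" using pB by blast
      also have "\<dots> = fst (snd (st m)) j" using pA that unfolding FF_def by blast
      finally show ?thesis unfolding gg_def stS .
    qed
    show "\<exists>m. j \<in> FF m" if jI: "j \<in> I" for j
    proof -
      obtain m where jm: "j = enumL m" using jI enum_range by (metis rangeE)
      note pA = propA[OF inv[of m], of m]
      note pB = propB[OF pA[THEN conjunct1], of m]
      have "j \<in> fst (stA m (st m))" using pA jm by blast
      hence "j \<in> FF (Suc m)" using pB unfolding FF_def stS by blast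
      thus ?thesis by blast
    qed
    show "useq \<alpha> k \<otimes> e \<otimes> GG m = useq \<alpha> k \<otimes> e" if "k < m" for k m using cov that .
    show "\<exists>\<psi>. isoB g (id j) \<psi>" if "j \<in> I" "top1 (id j) g" for j g using IH that unfolding I_def by simp
  qed
  then obtain \<Psi> where "isoP e I id \<Psi>" by blast
  thus ?thesis using isoP_lim[OF al] unfolding I_def by blast
qed

end


lemma fin_supp_card:
  fixes \<rho> :: "(nat \<Rightarrow> 'k::field) \<Rightarrow> (nat \<Rightarrow> 'k)"
  assumes inj: "inj_on \<rho> (fin_supp A)" and img: "\<rho> ` fin_supp A \<subseteq> fin_supp B"
    and mult: "\<And>z z'. z \<in> fin_supp A \<Longrightarrow> z' \<in> fin_supp A \<Longrightarrow> \<rho> (\<lambda>i. z i * z' i) = (\<lambda>i. \<rho> z i * \<rho> z' i)"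
    and add: "\<And>z z'. z \<in> fin_supp A \<Longrightarrow> z' \<in> fin_supp A \<Longrightarrow> \<rho> (\<lambda>i. z i + z' i) = (\<lambda>i. \<rho> z i + \<rho> z' i)"
    and finB: "finite B"
  shows "finite A \<and> card A \<le> card B"
proof -
  define ind where "ind i = (\<lambda>j. if j = i then (1::'k) else 0)" for i :: nat
  have z0: "(\<lambda>i. 0::'k) \<in> fin_supp A" unfolding fin_supp_def by simp
  have indA: "ind i \<in> fin_supp A" if "i \<in> A" for i
  proof -
    have "{j. ind i j \<noteq> 0} \<subseteq> {i}" unfolding ind_def by auto
    thus ?thesis unfolding fin_supp_def ind_def using that by (auto intro: finite_subset)
  qed
  have "\<rho> (\<lambda>i. 0) = (\<lambda>j. \<rho> (\<lambda>i. 0) j + \<rho> (\<lambda>i. 0) j)" using add[OF z0 z0] by simp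
  hence "\<rho> (\<lambda>i. 0) j + 0 = \<rho> (\<lambda>i. 0) j + \<rho> (\<lambda>i. 0) j" for j by (metis add.right_neutral)
  hence r0: "\<rho> (\<lambda>i. 0) = (\<lambda>j. 0)" using add_left_imp_eq by (metis ext)
  have nz: "\<exists>j. \<rho> (ind i) j \<noteq> 0" if iA: "i \<in> A" for i
  proof (rule ccontr)
    assume "\<not> ?thesis"
    hence "\<rho> (ind i) = \<rho> (\<lambda>i. 0)" using r0 by auto
    hence "ind i = (\<lambda>i. 0)" using inj_onD[OF inj _ indA[OF iA] z0] by blast
    thus False unfolding ind_def by (metis one_neq_zero)
  qed
  define f where "f i = (SOME j. \<rho> (ind i) j \<noteq> 0)" for i
  have fi: "\<rho> (ind i) (f i) \<noteq> 0" if "i \<in> A" for i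
    unfolding f_def using nz[OF that] by (rule someI_ex)
  have fB: "f i \<in> B" if iA: "i \<in> A" for i
  proof -
    have "\<rho> (ind i) \<in> fin_supp B" using img indA[OF iA] by blast
    thus ?thesis using fi[OF iA] unfolding fin_supp_def by blast
  qed
  have finj: "inj_on f A"
  proof (rule inj_onI)
    fix i i' assume iA: "i \<in> A" and i'A: "i' \<in> A" and eq: "f i = f i'"
    show "i = i'"
    proof (rule ccontr)
      assume ne: "i \<noteq> i'"
      have "(\<lambda>j. ind i j * ind i' j) = (\<lambda>j. 0)" unfolding ind_def using ne by auto
      hence "(\<lambda>j. \<rho> (ind i) j * \<rho> (ind i') j) = (\<lambda>j. 0)" using mult[OF indA[OF iA] indA[OF i'A]] r0 by simp
      hence "\<rho> (ind i) (f i) * \<rho> (ind i') (f i) = 0" by metis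
      thus False using fi[OF iA] fi[OF i'A] eq by simp
    qed
  qed
  have "f ` A \<subseteq> B" using fB by blast
  hence "finite (f ` A)" using finB finite_subset by blast
  hence fA: "finite A" using finite_imageD[OF _ finj] by blast
  have "card A \<le> card B" using card_inj_on_le[OF finj _ finB] fB by blast
  thus ?thesis using fA by blast
qed

context SA begin

definition liso_gen :: "'i \<Rightarrow> ('a set \<Rightarrow> nat \<Rightarrow> 'k) \<Rightarrow> nat set \<Rightarrow> bool" where
  "liso_gen a \<phi> L \<longleftrightarrow> bij_betw \<phi> {S a +> x | x. x \<in> T a} (fin_supp L) \<and>
     (\<forall>x\<in>T a. \<forall>y\<in>T a. \<phi> (S a +> (x \<oplus> y)) = (\<lambda>i. \<phi> (S a +> x) i + \<phi> (S a +> y) i)) \<and>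
     (\<forall>x\<in>T a. \<forall>y\<in>T a. \<phi> (S a +> (x \<otimes> y)) = (\<lambda>i. \<phi> (S a +> x) i * \<phi> (S a +> y) i)) \<and>
     (\<forall>c. \<forall>x\<in>T a. \<phi> (S a +> (sm c x)) = (\<lambda>i. c * \<phi> (S a +> x) i))"

lemma layer_iso_gen: "layer_iso R sm (S a) (T a) L \<longleftrightarrow> (\<exists>\<phi>. liso_gen a \<phi> L)"
  unfolding layer_iso_def liso_gen_def by (rule refl)

lemma two_layers: assumes aF: "a \<in> Field r" and P1: "liso_gen a \<phi>1 A" and P2: "liso_gen a \<phi>2 B" and finB: "finite B"
  shows "finite A \<and> card A \<le> card B"
proof -
  define D where "D = {S a +> x | x. x \<in> T a}"
  have b1: "bij_betw \<phi>1 D (fin_supp A)" and b2: "bij_betw \<phi>2 D (fin_supp B)"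
    using P1 P2 unfolding liso_gen_def D_def by auto
  define \<rho> where "\<rho> = \<phi>2 \<circ> inv_into D \<phi>1"
  have brho: "bij_betw \<rho> (fin_supp A) (fin_supp B)"
    unfolding \<rho>_def using bij_betw_trans[OF bij_betw_inv_into[OF b1] b2] .
  have rep: "\<exists>x\<in>T a. z = \<phi>1 (S a +> x) \<and> \<rho> z = \<phi>2 (S a +> x)" if zA: "z \<in> fin_supp A" for z
  proof -
    obtain d where dD: "d \<in> D" and zd: "z = \<phi>1 d" using zA b1 unfolding bij_betw_def by blast
    obtain x where xT: "x \<in> T a" and dx: "d = S a +> x" using dD unfolding D_def by blast
    have "inv_into D \<phi>1 z = d" using bij_betw_inv_into_left[OF b1 dD] zd by simp
    thus ?thesis using xT dx zd unfolding \<rho>_def by auto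
  qed
  have mult1: "\<phi>1 (S a +> (x \<otimes> y)) = (\<lambda>i. \<phi>1 (S a +> x) i * \<phi>1 (S a +> y) i)" if "x \<in> T a" "y \<in> T a" for x y
    using P1 that unfolding liso_gen_def by blast
  have mult2: "\<phi>2 (S a +> (x \<otimes> y)) = (\<lambda>i. \<phi>2 (S a +> x) i * \<phi>2 (S a +> y) i)" if "x \<in> T a" "y \<in> T a" for x y
    using P2 that unfolding liso_gen_def by blast
  have add1: "\<phi>1 (S a +> (x \<oplus> y)) = (\<lambda>i. \<phi>1 (S a +> x) i + \<phi>1 (S a +> y) i)" if "x \<in> T a" "y \<in> T a" for x y
    using P1 that unfolding liso_gen_def by blast
  have add2: "\<phi>2 (S a +> (x \<oplus> y)) = (\<lambda>i. \<phi>2 (S a +> x) i + \<phi>2 (S a +> y) i)" if "x \<in> T a" "y \<in> T a" for x y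
    using P2 that unfolding liso_gen_def by blast
  have rho_at: "\<rho> (\<phi>1 (S a +> x)) = \<phi>2 (S a +> x)" if xT: "x \<in> T a" for x
  proof -
    have "S a +> x \<in> D" unfolding D_def using xT by blast
    thus ?thesis unfolding \<rho>_def using bij_betw_inv_into_left[OF b1] by simp
  qed
  show ?thesis
  proof (rule fin_supp_card[OF bij_betw_imp_inj_on[OF brho] _ _ _ finB])
    show "\<rho> ` fin_supp A \<subseteq> fin_supp B" using brho unfolding bij_betw_def by blast
  next
    fix z z' :: "nat \<Rightarrow> 'k" assume zA: "z \<in> fin_supp A" and z'A: "z' \<in> fin_supp A"
    obtain x where xT: "x \<in> T a" and zx: "z = \<phi>1 (S a +> x)" using rep[OF zA] by blast
    obtain y where yT: "y \<in> T a" and zy: "z' = \<phi>1 (S a +> y)" using rep[OF z'A] by blast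
    have xyT: "x \<otimes> y \<in> T a" using T_multr[OF aF xT T_carrI[OF aF yT]] .
    have xpyT: "x \<oplus> y \<in> T a" using T_add[OF aF xT yT] .
    show "\<rho> (\<lambda>i. z i * z' i) = (\<lambda>i. \<rho> z i * \<rho> z' i)"
      using mult1[OF xT yT] mult2[OF xT yT] rho_at[OF xT] rho_at[OF yT] rho_at[OF xyT] zx zy by simp
    show "\<rho> (\<lambda>i. z i + z' i) = (\<lambda>i. \<rho> z i + \<rho> z' i)"
      using add1[OF xT yT] add2[OF xT yT] rho_at[OF xT] rho_at[OF yT] rho_at[OF xpyT] zx zy by simp
  qed
qed

lemma main_lemma: "a \<in> Field r \<Longrightarrow> top1 a e \<Longrightarrow> \<exists>\<psi>. isoB e a \<psi>"
proof -
  have "\<forall>e. a \<in> Field r \<longrightarrow> top1 a e \<longrightarrow> (\<exists>\<psi>. isoB e a \<psi>)"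
  proof (induction a rule: lt_induct)
    case (1 a)
    show ?case
    proof (intro allI impI)
      fix e assume aF: "a \<in> Field r" and e: "top1 a e"
      consider "is_zero_pt r a" | b where "is_succ_of r b a" | "is_limit_pt r a"
        using kinds[OF aF] by blast
      thus "\<exists>\<psi>. isoB e a \<psi>"
      proof cases
        case 1 thus ?thesis using base_iso e by blast
      next
        case (2 b)
        have lb: "lt b a" using succ_lt[OF 2] .
        show ?thesis
        proof (rule succ_case[OF 2 e])
          fix g assume "top1 b g"
          thus "\<exists>\<psi>. isoB g b \<psi>" using "1.IH"[OF lb] lt_Field[OF lb] by blast
        qed
      next
        case 3
        show ?thesis
        proof (rule lim_case[OF 3 e])
          fix b g assume lb: "lt b a" and "top1 b g"
          thus "\<exists>\<psi>. isoB g b \<psi>" using "1.IH"[OF lb] lt_Field[OF lb] by blast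
        qed
      qed
    qed
  qed
  thus "a \<in> Field r \<Longrightarrow> top1 a e \<Longrightarrow> \<exists>\<psi>. isoB e a \<psi>" by blast
qed

lemma T_top: "T \<sigma> = carrier R" using topsoc by simp

lemma card_Lay_top: fixes L :: "nat set" assumes L: "finite L" "layer_iso R sm (S \<sigma>) (T \<sigma>) L"
  shows "finite (Lay \<sigma>) \<and> card (Lay \<sigma>) = card L"
proof -
  obtain \<phi>2 where P2: "liso_gen \<sigma> \<phi>2 L" using L(2) layer_iso_gen by blast
  have P1: "liso_gen \<sigma> (phi \<sigma>) (Lay \<sigma>)" using phi_liso[OF top(1)] unfolding liso_def liso_gen_def .
  have A: "finite (Lay \<sigma>) \<and> card (Lay \<sigma>) \<le> card L" using two_layers[OF top(1) P1 P2 L(1)] .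
  have B: "card L \<le> card (Lay \<sigma>)" using two_layers[OF top(1) P2 P1] A by blast
  show ?thesis using A B by simp
qed

definition indS :: "nat set \<Rightarrow> nat \<Rightarrow> 'k" where "indS X = (\<lambda>i. if i \<in> X then 1 else 0)"

lemma Phi_one: "Phi \<sigma> \<one> = indS (Lay \<sigma>)"
proof
  fix i
  show "Phi \<sigma> \<one> i = indS (Lay \<sigma>) i"
  proof (cases "i \<in> Lay \<sigma>")
    case True
    have uT: "uu \<sigma> i \<in> T \<sigma>" and pu: "Phi \<sigma> (uu \<sigma> i) = ind i" using uu[OF top(1) True] by auto
    have oT: "\<one> \<in> T \<sigma>" using T_top by simp
    have "Phi \<sigma> (\<one> \<otimes> uu \<sigma> i) = (\<lambda>j. Phi \<sigma> \<one> j * Phi \<sigma> (uu \<sigma> i) j)" using Phi_mult[OF top(1) oT uT] .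
    hence "ind i = (\<lambda>j. Phi \<sigma> \<one> j * ind i j)" using pu uu_carr[OF top(1) True] by simp
    hence "ind i i = Phi \<sigma> \<one> i * ind i i" by metis
    thus ?thesis using True unfolding ind_def indS_def by simp
  next
    case False
    have "Phi \<sigma> \<one> \<in> fin_supp (Lay \<sigma>)" using Phi_fs[OF top(1)] T_top by simp
    thus ?thesis using False fin_supp_outside unfolding indS_def by force
  qed
qed

end


context SA begin

lemma decomp_one: assumes fin: "finite (Lay \<sigma>)" and cn: "card (Lay \<sigma>) = n" and n0: "0 < n"
  shows "\<exists>eps. (\<forall>k<n. top1 \<sigma> (eps k)) \<and> (\<forall>j<n. \<forall>j'<n. j \<noteq> j' \<longrightarrow> eps j \<otimes> eps j' = \<zero>) \<and>
    finsum R eps {..<n} = \<one>"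
proof -
  obtain en where en: "bij_betw en {0..<n} (Lay \<sigma>)" using ex_bij_betw_nat_finite[OF fin] cn by metis
  have eninj: "inj_on en {0..<n}" and enimg: "en ` {0..<n} = Lay \<sigma>" using en unfolding bij_betw_def by auto
  have enL: "k < n \<Longrightarrow> en k \<in> Lay \<sigma>" for k using enimg by auto
  define u where "u k = uu \<sigma> (en k)" for k
  have ui: "idem (u k)" and pu: "Phi \<sigma> (u k) = ind (en k)" if "k < n" for k
    using uu[OF top(1) enL[OF that]] unfolding u_def by auto
  have uc: "k < n \<Longrightarrow> u k \<in> carrier R" for k using ui idem_carr by blast
  define ee where "ee k X = (if Suc k = n then X else X \<otimes> u k)" for k X
  define RR where "RR = rec_nat \<one> (\<lambda>k X. X \<ominus> ee k X)"
  have RR0: "RR 0 = \<one>" and RRS: "RR (Suc k) = RR k \<ominus> ee k (RR k)" for k unfolding RR_def by simp_all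
  define eps where "eps k = ee k (RR k)" for k
  have allT: "x \<in> T \<sigma>" if "x \<in> carrier R" for x using T_top that by simp
  have I: "idem (RR k) \<and> RR k = \<one> \<ominus> finsum R eps {..<k} \<and> (\<forall>j<k. eps j \<otimes> RR k = \<zero>) \<and>
      (k < n \<longrightarrow> Phi \<sigma> (RR k) = indS (en ` {k..<n})) \<and> (\<forall>j<k. top1 \<sigma> (eps j)) \<and>
      (\<forall>j<k. \<forall>j'<k. j \<noteq> j' \<longrightarrow> eps j \<otimes> eps j' = \<zero>) \<and> (k = n \<longrightarrow> RR k = \<zero>)" if "k \<le> n" for k
    using that
  proof (induction k)
    case 0
    have "Phi \<sigma> \<one> = indS (en ` {0..<n})" using Phi_one enimg by simp
    thus ?case using RR0 n0 unfolding idem_def by (simp add: a_minus_def)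
  next
    case (Suc k)
    have kn: "k < n" using Suc.prems by simp
    have IH: "idem (RR k)" "RR k = \<one> \<ominus> finsum R eps {..<k}" "\<forall>j<k. eps j \<otimes> RR k = \<zero>"
      "Phi \<sigma> (RR k) = indS (en ` {k..<n})" "\<forall>j<k. top1 \<sigma> (eps j)"
      "\<forall>j<k. \<forall>j'<k. j \<noteq> j' \<longrightarrow> eps j \<otimes> eps j' = \<zero>"
      using Suc.IH Suc.prems kn by auto
    define X where "X = RR k"
    have Xi: "idem X" and Xc: "X \<in> carrier R" using IH(1) idem_carr unfolding X_def by auto
    have epsc: "eps j \<in> carrier R" if "j < k" for j using IH(5) that idem_carr unfolding top1_def by blast
    have fsc: "finsum R eps {..<k} \<in> carrier R" using finsum_closed epsc by (simp add: Pi_def)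
    have enk: "en k \<in> en ` {k..<n}" using kn by auto
    have ek: "idem (eps k) \<and> X \<otimes> eps k = eps k \<and> Phi \<sigma> (eps k) = ind (en k)"
    proof (cases "Suc k = n")
      case True
      have ekX: "eps k = X" unfolding eps_def ee_def X_def using True by simp
      have "{k..<n} = {k}" using True by auto
      hence "Phi \<sigma> X = ind (en k)" using IH(4) unfolding X_def indS_def ind_def by (auto simp: fun_eq_iff)
      thus ?thesis using ekX Xi idem_sq by auto
    next
      case False
      have ekX: "eps k = X \<otimes> u k" unfolding eps_def ee_def X_def using False by simp
      have "Phi \<sigma> (X \<otimes> u k) = (\<lambda>i. indS (en ` {k..<n}) i * ind (en k) i)"
        using Phi_mult[OF top(1) allT[OF Xc] allT[OF uc[OF kn]]] IH(4) pu[OF kn] unfolding X_def by simp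
      also have "\<dots> = ind (en k)" using enk unfolding indS_def ind_def by (auto simp: fun_eq_iff)
      finally show ?thesis using ekX idem_mult[OF Xi ui[OF kn]] idem_absorb[OF Xi uc[OF kn]] by simp
    qed
    have eki: "idem (eps k)" and Xek: "X \<otimes> eps k = eps k" and pek: "Phi \<sigma> (eps k) = ind (en k)" using ek by auto
    have ekc: "eps k \<in> carrier R" using idem_carr[OF eki] .
    have t1: "top1 \<sigma> (eps k)" using top1_ind[OF top(1) eki allT[OF ekc] pek] .
    have RRs: "RR (Suc k) = X \<ominus> eps k" using RRS unfolding eps_def X_def by simp
    have newi: "idem (RR (Suc k))" using idem_minus[OF Xi eki Xek] RRs by simp
    have "finsum R eps {..<Suc k} = eps k \<oplus> finsum R eps {..<k}"
    proof -
      have "{..<Suc k} = insert k {..<k}" by auto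
      thus ?thesis using finsum_insert[of "{..<k}" k eps] epsc ekc by (simp add: Pi_def)
    qed
    hence news: "RR (Suc k) = \<one> \<ominus> finsum R eps {..<Suc k}"
    proof -
      assume fs: "finsum R eps {..<Suc k} = eps k \<oplus> finsum R eps {..<k}"
      have "RR (Suc k) = (\<one> \<ominus> finsum R eps {..<k}) \<ominus> eps k" using RRs IH(2) unfolding X_def by simp
      also have "\<dots> = \<one> \<ominus> (eps k \<oplus> finsum R eps {..<k})" using ekc fsc by algebra
      finally show ?thesis using fs by simp
    qed
    have ortho_k: "eps j \<otimes> eps k = \<zero>" if jk: "j < k" for j
    proof -
      have "eps j \<otimes> eps k = eps j \<otimes> (X \<otimes> eps k)" using Xek by simp
      also have "\<dots> = (eps j \<otimes> X) \<otimes> eps k" using epsc[OF jk] Xc ekc by (simp add: m_assoc)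
      also have "\<dots> = \<zero>" using IH(3) jk ekc unfolding X_def by simp
      finally show ?thesis .
    qed
    have newann: "\<forall>j<Suc k. eps j \<otimes> RR (Suc k) = \<zero>"
    proof (intro allI impI)
      fix j assume "j < Suc k"
      hence "j < k \<or> j = k" by auto
      thus "eps j \<otimes> RR (Suc k) = \<zero>"
      proof
        assume jk: "j < k"
        have "eps j \<otimes> (X \<ominus> eps k) = eps j \<otimes> X \<ominus> eps j \<otimes> eps k" using epsc[OF jk] Xc ekc by algebra
        thus ?thesis using RRs IH(3) jk ortho_k[OF jk] unfolding X_def by (simp add: a_minus_def)
      next
        assume jk: "j = k"
        have "eps k \<otimes> (X \<ominus> eps k) = X \<otimes> eps k \<ominus> eps k \<otimes> eps k" using Xc ekc by algebra
        thus ?thesis using RRs jk Xek idem_sq[OF eki] ekc by (simp add: a_minus_def r_neg)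
      qed
    qed
    have newphi: "Suc k < n \<longrightarrow> Phi \<sigma> (RR (Suc k)) = indS (en ` {Suc k..<n})"
    proof
      assume skn: "Suc k < n"
      have "Phi \<sigma> (RR (Suc k)) = (\<lambda>i. indS (en ` {k..<n}) i - ind (en k) i)"
        using Phi_minus[OF top(1) allT[OF Xc] allT[OF ekc]] RRs IH(4) pek unfolding X_def by simp
      also have "\<dots> = indS (en ` {Suc k..<n})"
      proof
        fix i
        have "{k..<n} = insert k {Suc k..<n}" using kn by auto
        hence eq: "en ` {k..<n} = insert (en k) (en ` {Suc k..<n})" by simp
        have nin: "en k \<notin> en ` {Suc k..<n}"
        proof
          assume "en k \<in> en ` {Suc k..<n}"
          then obtain j where j: "j \<in> {Suc k..<n}" "en k = en j" by blast
          hence "k = j" using inj_onD[OF eninj] kn by auto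
          thus False using j by simp
        qed
        show "indS (en ` {k..<n}) i - ind (en k) i = indS (en ` {Suc k..<n}) i"
          unfolding indS_def ind_def eq using nin by auto
      qed
      finally show "Phi \<sigma> (RR (Suc k)) = indS (en ` {Suc k..<n})" .
    qed
    have newtop: "\<forall>j<Suc k. top1 \<sigma> (eps j)" using IH(5) t1 less_Suc_eq by auto
    have neworth: "\<forall>j<Suc k. \<forall>j'<Suc k. j \<noteq> j' \<longrightarrow> eps j \<otimes> eps j' = \<zero>"
    proof (intro allI impI)
      fix j j' assume j: "j < Suc k" and j': "j' < Suc k" and jj: "j \<noteq> j'"
      show "eps j \<otimes> eps j' = \<zero>"
      proof (cases "j = k")
        case True
        hence "j' < k" using j' jj by auto
        thus ?thesis using True ortho_k m_comm[OF ekc epsc] by simp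
      next
        case False
        hence jk: "j < k" using j by auto
        show ?thesis
        proof (cases "j' = k")
          case True thus ?thesis using ortho_k[OF jk] by simp
        next
          case False
          hence "j' < k" using j' by auto
          thus ?thesis using IH(6) jk jj by blast
        qed
      qed
    qed
    have newzero: "Suc k = n \<longrightarrow> RR (Suc k) = \<zero>"
    proof
      assume "Suc k = n"
      hence "eps k = X" unfolding eps_def ee_def X_def by simp
      thus "RR (Suc k) = \<zero>" using RRs Xc by (simp add: a_minus_def r_neg)
    qed
    show ?case using newi news newann newphi newtop neworth newzero by blast
  qed
  have In: "RR n = \<one> \<ominus> finsum R eps {..<n}" "RR n = \<zero>" "\<forall>j<n. top1 \<sigma> (eps j)"
    "\<forall>j<n. \<forall>j'<n. j \<noteq> j' \<longrightarrow> eps j \<otimes> eps j' = \<zero>" using I[of n] by auto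
  have epsc: "eps j \<in> carrier R" if "j < n" for j using In(3) that idem_carr unfolding top1_def by blast
  have fsc: "finsum R eps {..<n} \<in> carrier R" using finsum_closed epsc by (simp add: Pi_def)
  have "\<one> \<ominus> finsum R eps {..<n} = \<zero>" using In by simp
  moreover have "finsum R eps {..<n} = \<one> \<ominus> (\<one> \<ominus> finsum R eps {..<n})" using fsc by algebra
  ultimately have "finsum R eps {..<n} = \<one>" by (simp add: a_minus_def)
  thus ?thesis using In by blast
qed

lemma final_iso: assumes n0: "0 < n" and epsT: "\<forall>k<n. top1 \<sigma> (eps k)"
    and orth: "\<forall>j<n. \<forall>j'<n. j \<noteq> j' \<longrightarrow> eps j \<otimes> eps j' = \<zero>" and fs: "finsum R eps {..<n} = \<one>"
  shows "iso_to_Bn R sm r \<sigma> n"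
proof -
  define \<psi> where "\<psi> k = (SOME \<psi>. isoB (eps k) \<sigma> \<psi>)" for k
  have iso: "isoB (eps k) \<sigma> (\<psi> k)" if kn: "k < n" for k
  proof -
    have "\<exists>\<psi>. isoB (eps k) \<sigma> \<psi>" using main_lemma[OF top(1)] epsT kn by blast
    thus ?thesis unfolding \<psi>_def by (rule someI_ex[of "\<lambda>\<psi>. isoB (eps k) \<sigma> \<psi>"])
  qed
  note isoD = isoB_D[OF iso]
  have epsi: "idem (eps k)" if "k < n" for k using epsT that unfolding top1_def by blast
  have epsc: "eps k \<in> carrier R" if "k < n" for k using idem_carr[OF epsi[OF that]] .
  have cm: "eps k \<otimes> x \<in> corner (eps k)" if "k < n" "x \<in> carrier R" for k x
    using corner_mult[OF epsi[OF that(1)] that(2)] .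
  have epsPi: "eps \<in> {..<n} \<rightarrow> carrier R" using epsc by blast
  have dec: "x = finsum R (\<lambda>k. eps k \<otimes> x) {..<n}" if xc: "x \<in> carrier R" for x
  proof -
    have "x = finsum R eps {..<n} \<otimes> x" using fs xc by simp
    also have "\<dots> = finsum R (\<lambda>k. eps k \<otimes> x) {..<n}" using finsum_ldistr[OF _ xc epsPi] by simp
    finally show ?thesis .
  qed
  define \<phi> where "\<phi> x = (\<lambda>(k, p). if k < n then \<psi> k (eps k \<otimes> x) p else (0::'k))" for x
  have \<phi>k: "(\<lambda>p. \<phi> x (k, p)) = \<psi> k (eps k \<otimes> x)" if "k < n" for k x
    unfolding \<phi>_def using that by simp
  have inj: "inj_on \<phi> (carrier R)"
  proof (rule inj_onI)
    fix x y assume xc: "x \<in> carrier R" and yc: "y \<in> carrier R" and eq: "\<phi> x = \<phi> y"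
    have ek: "eps k \<otimes> x = eps k \<otimes> y" if kn: "k < n" for k
    proof -
      have "\<psi> k (eps k \<otimes> x) = \<psi> k (eps k \<otimes> y)" using \<phi>k[OF kn, of x] \<phi>k[OF kn, of y] eq by metis
      thus ?thesis using bij_betw_imp_inj_on[OF isoD(1)[OF kn]] cm[OF kn xc] cm[OF kn yc]
        by (simp add: inj_on_eq_iff)
    qed
    have "finsum R (\<lambda>k. eps k \<otimes> x) {..<n} = finsum R (\<lambda>k. eps k \<otimes> y) {..<n}"
      using ek yc epsc by (intro finsum_cong') auto
    thus "x = y" using dec[OF xc] dec[OF yc] by simp
  qed
  have into: "\<phi> x \<in> Bn_car r \<sigma> n" if xc: "x \<in> carrier R" for x
  proof -
    have "\<forall>k<n. Bcar r \<sigma> (\<lambda>p. \<phi> x (k, p))"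
      using \<phi>k bij_betw_apply[OF isoD(1) cm[OF _ xc]] by simp
    moreover have "\<forall>k p. n \<le> k \<longrightarrow> \<phi> x (k, p) = 0" unfolding \<phi>_def by simp
    ultimately show ?thesis unfolding Bn_car_def by blast
  qed
  have onto: "Bn_car r \<sigma> n \<subseteq> \<phi> ` carrier R"
  proof
    fix y :: "nat \<times> ('i + nat) list \<Rightarrow> 'k" assume yB: "y \<in> Bn_car r \<sigma> n"
    have yk: "Bcar r \<sigma> (\<lambda>p. y (k, p))" if "k < n" for k using yB that unfolding Bn_car_def by blast
    have y0: "y (k, p) = 0" if "n \<le> k" for k p using yB that unfolding Bn_car_def by blast
    define z where "z k = inv_into (corner (eps k)) (\<psi> k) (\<lambda>p. y (k, p))" for k
    have z: "z k \<in> corner (eps k) \<and> \<psi> k (z k) = (\<lambda>p. y (k, p))" if kn: "k < n" for k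
    proof -
      have "(\<lambda>p. y (k, p)) \<in> {z. Bcar r \<sigma> z}" using yk[OF kn] by simp
      thus ?thesis unfolding z_def using isoD(1)[OF kn]
        by (metis bij_betw_imp_surj_on inv_into_into bij_betw_inv_into_right)
    qed
    have zp: "\<And>k. k \<in> {..<n} \<Longrightarrow> z k \<in> carrier R \<and> eps k \<otimes> z k = z k" using z corner_D by blast
    define x where "x = finsum R z {..<n}"
    have xc: "x \<in> carrier R" unfolding x_def using finsum_closed zp by (simp add: Pi_def)
    have ex: "eps k \<otimes> x = z k" if kn: "k < n" for k
    proof -
      have "eps k \<otimes> x = (if k \<in> {..<n} then z k else \<zero>)"
        unfolding x_def by (rule orth_sum[of "{..<n}" "{..<n}"]) (use epsi orth zp kn in auto)
      thus ?thesis using kn by simp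
    qed
    have "\<phi> x = y"
    proof
      fix kp show "\<phi> x kp = y kp"
      proof (cases kp)
        case (Pair k p)
        show ?thesis
        proof (cases "k < n")
          case True thus ?thesis unfolding Pair \<phi>_def using ex[OF True] z[OF True] by (simp add: fun_eq_iff)
        next
          case False thus ?thesis unfolding Pair \<phi>_def using y0 by simp
        qed
      qed
    qed
    thus "y \<in> \<phi> ` carrier R" using xc by blast
  qed
  have bij: "bij_betw \<phi> (carrier R) (Bn_car r \<sigma> n)" unfolding bij_betw_def using inj into onto by blast
  have opadd: "\<phi> (x \<oplus> y) = (\<lambda>i. \<phi> x i + \<phi> y i)" if xc: "x \<in> carrier R" and yc: "y \<in> carrier R" for x y
  proof
    fix kp show "\<phi> (x \<oplus> y) kp = \<phi> x kp + \<phi> y kp"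
    proof (cases kp)
      case (Pair k p)
      show ?thesis
      proof (cases "k < n")
        case True
        have "eps k \<otimes> (x \<oplus> y) = eps k \<otimes> x \<oplus> eps k \<otimes> y" using r_distr[OF xc yc epsc[OF True]] .
        thus ?thesis unfolding Pair \<phi>_def using True isoD(2)[OF True cm[OF True xc] cm[OF True yc]] by simp
      qed (simp add: Pair \<phi>_def)
    qed
  qed
  have opmult: "\<phi> (x \<otimes> y) = (\<lambda>i. \<phi> x i * \<phi> y i)" if xc: "x \<in> carrier R" and yc: "y \<in> carrier R" for x y
  proof
    fix kp show "\<phi> (x \<otimes> y) kp = \<phi> x kp * \<phi> y kp"
    proof (cases kp)
      case (Pair k p)
      show ?thesis
      proof (cases "k < n")
        case True
        have "(eps k \<otimes> x) \<otimes> (eps k \<otimes> y) = (eps k \<otimes> eps k) \<otimes> (x \<otimes> y)" using xc yc epsc[OF True] by algebra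
        hence "eps k \<otimes> (x \<otimes> y) = (eps k \<otimes> x) \<otimes> (eps k \<otimes> y)" using idem_sq[OF epsi[OF True]] by simp
        thus ?thesis unfolding Pair \<phi>_def using True isoD(3)[OF True cm[OF True xc] cm[OF True yc]] by simp
      qed (simp add: Pair \<phi>_def)
    qed
  qed
  have opsm: "\<phi> (sm c x) = (\<lambda>i. c * \<phi> x i)" if xc: "x \<in> carrier R" for c x
  proof
    fix kp show "\<phi> (sm c x) kp = c * \<phi> x kp"
    proof (cases kp)
      case (Pair k p)
      show ?thesis
      proof (cases "k < n")
        case True
        have "eps k \<otimes> (km c \<otimes> x) = km c \<otimes> (eps k \<otimes> x)" using xc epsc[OF True] km_closed[of c] by algebra
        thus ?thesis unfolding Pair \<phi>_def sm_eq[OF xc] using True isoD(4)[OF True cm[OF True xc]] by simp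
      qed (simp add: Pair \<phi>_def)
    qed
  qed
  have opone: "\<phi> \<one> = Bn_one r \<sigma> n"
  proof
    fix kp show "\<phi> \<one> kp = Bn_one r \<sigma> n kp"
    proof (cases kp)
      case (Pair k p)
      show ?thesis
      proof (cases "k < n")
        case True
        have "eps k \<otimes> \<one> = eps k" using epsc[OF True] by simp
        thus ?thesis unfolding Pair \<phi>_def Bn_one_def using True isoD(5)[OF True] by simp
      qed (simp add: Pair \<phi>_def Bn_one_def)
    qed
  qed
  show ?thesis unfolding iso_to_Bn_def using bij opadd opmult opsm opone by blast
qed

end

theorem theorem7p1:
  fixes R :: "('a, 'b) ring_scheme"
    and sm :: "'k::field \<Rightarrow> 'a \<Rightarrow> 'a"
    and r :: "'i rel" and \<sigma> :: 'i and S :: "'i \<Rightarrow> 'a set" and n :: nat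
  assumes alg: "K_algebra R sm"
    and vnr: "von_Neumann_regular R"
    and wo: "Well_order r"
    and top: "\<sigma> \<in> Field r" "\<forall>a\<in>Field r. (a, \<sigma>) \<in> r"
    and soc: "socle_seq R r S"
    and loewy: "\<forall>a\<in>Field r. S a \<noteq> carrier R" "soc_over R (S \<sigma>) = carrier R"
    and countable_sigma: "countable (Field r)"
    and layers: "\<forall>a\<in>Field r. \<exists>L :: nat set. L \<noteq> {} \<and> layer_iso R sm (S a) (soc_over R (S a)) L"
    and top_dim: "\<exists>L :: nat set. finite L \<and> card L = n \<and> layer_iso R sm (S \<sigma>) (soc_over R (S \<sigma>)) L"
    and n_pos: "0 < n"
  shows "iso_to_Bn R sm r \<sigma> n"
proof -
  have cr: "cring R" using alg unfolding K_algebra_def by blast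
  have sa: "SA R sm r S \<sigma>"
    unfolding SA_def SA_axioms_def using cr alg vnr wo top soc loewy(2) countable_sigma layers by blast
  interpret SA R sm r S \<sigma> by (rule sa)
  obtain L :: "nat set" where L: "finite L" "card L = n" "layer_iso R sm (S \<sigma>) (soc_over R (S \<sigma>)) L"
    using top_dim by blast
  have cl: "finite (Lay \<sigma>) \<and> card (Lay \<sigma>) = card L" using card_Lay_top[OF L(1) L(3)] .
  obtain eps where eps: "\<forall>k<n. top1 \<sigma> (eps k)" "\<forall>j<n. \<forall>j'<n. j \<noteq> j' \<longrightarrow> eps j \<otimes>\<^bsub>R\<^esub> eps j' = \<zero>\<^bsub>R\<^esub>"
      "finsum R eps {..<n} = \<one>\<^bsub>R\<^esub>"
    using decomp_one[of n] cl L(2) n_pos by blast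
  show ?thesis using final_iso[OF n_pos eps] .
qed


end
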